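(* Let $H$ be a $k$-linear semi-Hopf category and $A$ an $H$-Galois category extension of $B=A^{{\rm co}H}$, and for $x,y\in X$ let $\gamma_{xy}:H_{xy}\to A_{yx}\otimes_{B_x}A_{xy}$, $\gamma_{xy}(h)=({\rm can}^y_{xy})^{-1}(1_y\otimes h)=\sum_i l_i(h)\otimes_{B_x}r_i(h)$. Then for all $x,y,z\in X$, $h\in H_{xy}$, $h'\in H_{yz}$: (a) $\gamma_{xy}(h)\in(A_{yx}\otimes_{B_x}A_{xy})^{B_y}=\{u\mid bu=ub\ \forall b\in B_y\}$; (b) $\gamma_{xz}(hh')=\sum_{i,j}l_i(h')l_j(h)\otimes_{B_x}r_j(h)r_i(h')$ (the right-hand side being the image of $\gamma_{yz}(h')\otimes\gamma_{xy}(h)$ under the map $(a'\otimes_{B_y}b')\otimes(a\otimes_{B_x}b)\mapsto a'a\otimes_{B_x}bb'$, well defined by (a)); (c) $\gamma_{xy}(h_{(1)})\otimes h_{(2)}=\sum_i l_i(h)\otimes_{B_x}r_i(h)_{[0]}\otimes r_i(h)_{[1]}$; (d) $\sum_i l_i(h)r_i(h)=\varepsilon_{xy}(h)1_y$; (e) if moreover $H$ is a Hopf category with antipode $S$, then $\gamma_{xy}(h_{(2)})\otimes S_{xy}(h_{(1)})=\sum_i l_i(h)_{[0]}\otimes_{B_x}r_i(h)\otimes l_i(h)_{[1]}$.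
   Context: Let $k$ be a commutative ring; unadorned $\otimes$ is over $k$. A $k$-linear category $A$ with class of objects $X$ consists of $k$-modules $A_{xy}$, associative compositions $A_{xy}\otimes A_{yz}\to A_{xz}$, $a\otimes b\mapsto ab$, and units $1_x\in A_{xx}$. A $k$-linear semi-Hopf category $H$ (objects $X$) is a $k$-linear category in which each $H_{xy}$ is a $k$-coalgebra with $\Delta_{xy}(h)=h_{(1)}\otimes h_{(2)}$ and counit $\varepsilon_{xy}$, such that $\Delta_{xz}(hh')=h_{(1)}h'_{(1)}\otimes h_{(2)}h'_{(2)}$, $\Delta_{xx}(1_x)=1_x\otimes1_x$, $\varepsilon_{xz}(hh')=\varepsilon_{xy}(h)\varepsilon_{yz}(h')$, $\varepsilon_{xx}(1_x)=1$. It is a Hopf category if there are $k$-linear maps $S_{xy}:H_{xy}\to H_{yx}$ with $h_{(1)}S_{xy}(h_{(2)})=\varepsilon_{xy}(h)1_x$ and $S_{xy}(h_{(1)})h_{(2)}=\varepsilon_{xy}(h)1_y$. A right $H$-comodule category is a $k$-linear category $A$ with objects $X$ such that each $A_{xy}$ is a right $H_{xy}$-comodule, $\rho_{xy}(a)=a_{[0]}\otimes a_{[1]}$, with $\rho_{xz}(ab)=a_{[0]}b_{[0]}\otimes a_{[1]}b_{[1]}$ and $\rho_{xx}(1_x)=1_x\otimes1_x$. Its coinvariants are $B_x=\{a\in A_{xx}\mid\rho_{xx}(a)=a\otimes1_x\}$. The canonical maps are ${\rm can}^z_{xy}:A_{zx}\otimes_{B_x}A_{xy}\to A_{zy}\otimes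 H_{xy}$, $a\otimes_{B_x}a'\mapsto aa'_{[0]}\otimes a'_{[1]}$; $A$ is an $H$-Galois category extension of $B$ if all ${\rm can}^z_{xy}$ are bijective. *)

theory Defs
  imports Main
begin

record ('k, 'a) kmod =
  kcarrier :: "'a set"
  kadd :: "'a \<Rightarrow> 'a \<Rightarrow> 'a"
  kzero :: "'a"
  ksmult :: "'k \<Rightarrow> 'a \<Rightarrow> 'a"

definition kmodule :: "('k::comm_ring_1, 'a) kmod \<Rightarrow> bool" where
  "kmodule M \<longleftrightarrow>
     kzero M \<in> kcarrier M \<and>
     (\<forall>a\<in>kcarrier M. \<forall>b\<in>kcarrier M. kadd M a b \<in> kcarrier M) \<and>
     (\<forall>c. \<forall>a\<in>kcarrier M. ksmult M c a \<in> kcarrier M) \<and>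
     (\<forall>a\<in>kcarrier M. \<forall>b\<in>kcarrier M. \<forall>d\<in>kcarrier M.
        kadd M (kadd M a b) d = kadd M a (kadd M b d)) \<and>
     (\<forall>a\<in>kcarrier M. \<forall>b\<in>kcarrier M. kadd M a b = kadd M b a) \<and>
     (\<forall>a\<in>kcarrier M. kadd M (kzero M) a = a) \<and>
     (\<forall>a\<in>kcarrier M. \<exists>b\<in>kcarrier M. kadd M a b = kzero M) \<and>
     (\<forall>c d. \<forall>a\<in>kcarrier M. ksmult M (c + d) a = kadd M (ksmult M c a) (ksmult M d a)) \<and>
     (\<forall>c. \<forall>a\<in>kcarrier M. \<forall>b\<in>kcarrier M.
        ksmult M c (kadd M a b) = kadd M (ksmult M c a) (ksmult M c b)) \<and>
     (\<forall>c d. \<forall>a\<in>kcarrier M. ksmult M (c * d) a = ksmult M c (ksmult M d a)) \<and>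
     (\<forall>a\<in>kcarrier M. ksmult M 1 a = a)"

definition klin :: "('k::comm_ring_1, 'a) kmod \<Rightarrow> ('k, 'b) kmod \<Rightarrow> ('a \<Rightarrow> 'b) \<Rightarrow> bool" where
  "klin M N f \<longleftrightarrow>
     (\<forall>a\<in>kcarrier M. f a \<in> kcarrier N) \<and>
     (\<forall>a\<in>kcarrier M. \<forall>b\<in>kcarrier M. f (kadd M a b) = kadd N (f a) (f b)) \<and>
     (\<forall>c. \<forall>a\<in>kcarrier M. f (ksmult M c a) = ksmult N c (f a))"

definition klin_scalar :: "('k::comm_ring_1, 'a) kmod \<Rightarrow> ('a \<Rightarrow> 'k) \<Rightarrow> bool" where
  "klin_scalar M f \<longleftrightarrow>
     (\<forall>a\<in>kcarrier M. \<forall>b\<in>kcarrier M. f (kadd M a b) = f a + f b) \<and>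
     (\<forall>c. \<forall>a\<in>kcarrier M. f (ksmult M c a) = c * f a)"

definition kbilin :: "('k::comm_ring_1, 'a) kmod \<Rightarrow> ('k, 'b) kmod \<Rightarrow> ('k, 'c) kmod
    \<Rightarrow> ('a \<Rightarrow> 'b \<Rightarrow> 'c) \<Rightarrow> bool" where
  "kbilin M N P f \<longleftrightarrow>
     (\<forall>a\<in>kcarrier M. klin N P (f a)) \<and> (\<forall>b\<in>kcarrier N. klin M P (\<lambda>a. f a b))"

definition kmsum :: "('k, 'a) kmod \<Rightarrow> ('i \<Rightarrow> 'a) \<Rightarrow> 'i set \<Rightarrow> 'a" where
  "kmsum P g A = Finite_Set.fold (\<lambda>i acc. kadd P (g i) acc) (kzero P) A"

section \<open>Tensor products (balanced w.r.t. a set of relations), as quotients of free modules\<close>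

definition fsupp :: "('p \<Rightarrow> 'k::zero) \<Rightarrow> 'p set" where
  "fsupp f = {p. f p \<noteq> 0}"

definition free_el :: "('k::comm_ring_1, 'm) kmod \<Rightarrow> ('k, 'n) kmod \<Rightarrow> ('m \<times> 'n \<Rightarrow> 'k) set" where
  "free_el M N = {f. finite (fsupp f) \<and> fsupp f \<subseteq> kcarrier M \<times> kcarrier N}"

definition gen :: "'m \<Rightarrow> 'n \<Rightarrow> ('m \<times> 'n \<Rightarrow> 'k::comm_ring_1)" where
  "gen m n = (\<lambda>p. if p = (m, n) then 1 else 0)"

text \<open>The submodule of relations: k-bilinearity, plus the balancing relations
  [p] - [q] for (p,q) \<in> Bal.\<close>
inductive_set tensor_rel :: "('k::comm_ring_1, 'm) kmod \<Rightarrow> ('k, 'n) kmod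
    \<Rightarrow> (('m \<times> 'n) \<times> ('m \<times> 'n)) set \<Rightarrow> ('m \<times> 'n \<Rightarrow> 'k) set"
  for M N Bal where
  rzero: "(\<lambda>_. 0) \<in> tensor_rel M N Bal"
| radd: "f \<in> tensor_rel M N Bal \<Longrightarrow> g \<in> tensor_rel M N Bal
          \<Longrightarrow> (\<lambda>p. f p + g p) \<in> tensor_rel M N Bal"
| rsmult: "f \<in> tensor_rel M N Bal \<Longrightarrow> (\<lambda>p. c * f p) \<in> tensor_rel M N Bal"
| raddl: "m \<in> kcarrier M \<Longrightarrow> m' \<in> kcarrier M \<Longrightarrow> n \<in> kcarrier N \<Longrightarrow>
          (\<lambda>p. gen (kadd M m m') n p - gen m n p - gen m' n p) \<in> tensor_rel M N Bal"
| raddr: "m \<in> kcarrier M \<Longrightarrow> n \<in> kcarrier N \<Longrightarrow> n' \<in> kcarrier N \<Longrightarrow>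
          (\<lambda>p. gen m (kadd N n n') p - gen m n p - gen m n' p) \<in> tensor_rel M N Bal"
| rsmultl: "m \<in> kcarrier M \<Longrightarrow> n \<in> kcarrier N \<Longrightarrow>
          (\<lambda>p. gen (ksmult M c m) n p - c * gen m n p) \<in> tensor_rel M N Bal"
| rsmultr: "m \<in> kcarrier M \<Longrightarrow> n \<in> kcarrier N \<Longrightarrow>
          (\<lambda>p. gen m (ksmult N c n) p - c * gen m n p) \<in> tensor_rel M N Bal"
| rbal: "(p, q) \<in> Bal \<Longrightarrow> p \<in> kcarrier M \<times> kcarrier N \<Longrightarrow> q \<in> kcarrier M \<times> kcarrier N \<Longrightarrow>
          (\<lambda>r. gen (fst p) (snd p) r - gen (fst q) (snd q) r) \<in> tensor_rel M N Bal"

definition tclass :: "('k::comm_ring_1, 'm) kmod \<Rightarrow> ('k, 'n) kmod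
    \<Rightarrow> (('m \<times> 'n) \<times> ('m \<times> 'n)) set \<Rightarrow> ('m \<times> 'n \<Rightarrow> 'k) \<Rightarrow> ('m \<times> 'n \<Rightarrow> 'k) set" where
  "tclass M N Bal f = {g \<in> free_el M N. (\<lambda>p. g p - f p) \<in> tensor_rel M N Bal}"

definition tensor :: "('k::comm_ring_1, 'm) kmod \<Rightarrow> ('k, 'n) kmod
    \<Rightarrow> (('m \<times> 'n) \<times> ('m \<times> 'n)) set \<Rightarrow> ('k, ('m \<times> 'n \<Rightarrow> 'k) set) kmod" where
  "tensor M N Bal =
     \<lparr> kcarrier = tclass M N Bal ` free_el M N,
       kadd = (\<lambda>X Y. tclass M N Bal (\<lambda>p. (SOME f. f \<in> X) p + (SOME g. g \<in> Y) p)),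
       kzero = tclass M N Bal (\<lambda>_. 0),
       ksmult = (\<lambda>c X. tclass M N Bal (\<lambda>p. c * (SOME f. f \<in> X) p)) \<rparr>"

definition tmk :: "('k::comm_ring_1, 'm) kmod \<Rightarrow> ('k, 'n) kmod
    \<Rightarrow> (('m \<times> 'n) \<times> ('m \<times> 'n)) set \<Rightarrow> 'm \<Rightarrow> 'n \<Rightarrow> ('m \<times> 'n \<Rightarrow> 'k) set" where
  "tmk M N Bal m n = tclass M N Bal (gen m n)"

text \<open>The map induced on the tensor product by a (bilinear, balanced) map phi into P:
  sum c_i (m_i tensor n_i) maps to sum c_i phi m_i n_i, computed on a representative.\<close>
definition tlift :: "('k::comm_ring_1, 'p) kmod \<Rightarrow> ('m \<Rightarrow> 'n \<Rightarrow> 'p)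
    \<Rightarrow> ('m \<times> 'n \<Rightarrow> 'k) set \<Rightarrow> 'p" where
  "tlift P phi X = (let f = (SOME f. f \<in> X) in
      kmsum P (\<lambda>q. ksmult P (f q) (phi (fst q) (snd q))) (fsupp f))"

abbreviation kt :: "('k::comm_ring_1, 'm) kmod \<Rightarrow> ('k, 'n) kmod \<Rightarrow> ('k, ('m \<times> 'n \<Rightarrow> 'k) set) kmod" where
  "kt M N \<equiv> tensor M N {}"

abbreviation ktmk :: "('k::comm_ring_1, 'm) kmod \<Rightarrow> ('k, 'n) kmod \<Rightarrow> 'm \<Rightarrow> 'n \<Rightarrow> ('m \<times> 'n \<Rightarrow> 'k) set" where
  "ktmk M N m n \<equiv> tmk M N {} m n"

text \<open>Objects are the elements of the type 'x; cmp C x y z a b is the composite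
  ab of a \<in> A_xy, b \<in> A_yz; idm C x = 1_x.\<close>
record ('x, 'k, 'a) klcat =
  homs :: "'x \<Rightarrow> 'x \<Rightarrow> ('k, 'a) kmod"
  cmp :: "'x \<Rightarrow> 'x \<Rightarrow> 'x \<Rightarrow> 'a \<Rightarrow> 'a \<Rightarrow> 'a"
  idm :: "'x \<Rightarrow> 'a"

definition klincat :: "('x, 'k::comm_ring_1, 'a, 'z) klcat_scheme \<Rightarrow> bool" where
  "klincat C \<longleftrightarrow>
     (\<forall>x y. kmodule (homs C x y)) \<and>
     (\<forall>x y z. kbilin (homs C x y) (homs C y z) (homs C x z) (cmp C x y z)) \<and>
     (\<forall>x y z w a b c. a \<in> kcarrier (homs C x y) \<longrightarrow> b \<in> kcarrier (homs C y z) \<longrightarrow>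
        c \<in> kcarrier (homs C z w) \<longrightarrow>
        cmp C x z w (cmp C x y z a b) c = cmp C x y w a (cmp C y z w b c)) \<and>
     (\<forall>x. idm C x \<in> kcarrier (homs C x x)) \<and>
     (\<forall>x y a. a \<in> kcarrier (homs C x y) \<longrightarrow>
        cmp C x x y (idm C x) a = a \<and> cmp C x y y a (idm C y) = a)"

record ('x, 'k, 'h) shcat = "('x, 'k, 'h) klcat" +
  cop :: "'x \<Rightarrow> 'x \<Rightarrow> 'h \<Rightarrow> ('h \<times> 'h \<Rightarrow> 'k) set"
  cou :: "'x \<Rightarrow> 'x \<Rightarrow> 'h \<Rightarrow> 'k"

definition kcoalgebra :: "('k::comm_ring_1, 'h) kmod \<Rightarrow> ('h \<Rightarrow> ('h \<times> 'h \<Rightarrow> 'k) set)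
    \<Rightarrow> ('h \<Rightarrow> 'k) \<Rightarrow> bool" where
  "kcoalgebra M D e \<longleftrightarrow>
     klin M (kt M M) D \<and> klin_scalar M e \<and>
     (\<forall>h\<in>kcarrier M.
        tlift (kt (kt M M) M) (\<lambda>a b. ktmk (kt M M) M (D a) b) (D h) =
        tlift (kt (kt M M) M)
          (\<lambda>a b. tlift (kt (kt M M) M) (\<lambda>c d. ktmk (kt M M) M (ktmk M M a c) d) (D b)) (D h)) \<and>
     (\<forall>h\<in>kcarrier M. tlift M (\<lambda>a b. ksmult M (e a) b) (D h) = h) \<and>
     (\<forall>h\<in>kcarrier M. tlift M (\<lambda>a b. ksmult M (e b) a) (D h) = h)"

definition semi_hopf_cat :: "('x, 'k::comm_ring_1, 'h, 'z) shcat_scheme \<Rightarrow> bool" where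
  "semi_hopf_cat H \<longleftrightarrow>
     klincat H \<and>
     (\<forall>x y. kcoalgebra (homs H x y) (cop H x y) (cou H x y)) \<and>
     (\<forall>x y z h h'. h \<in> kcarrier (homs H x y) \<longrightarrow> h' \<in> kcarrier (homs H y z) \<longrightarrow>
        cop H x z (cmp H x y z h h') =
          tlift (kt (homs H x z) (homs H x z))
            (\<lambda>a b. tlift (kt (homs H x z) (homs H x z))
               (\<lambda>c d. ktmk (homs H x z) (homs H x z) (cmp H x y z a c) (cmp H x y z b d))
               (cop H y z h'))
            (cop H x y h)) \<and>
     (\<forall>x. cop H x x (idm H x) = ktmk (homs H x x) (homs H x x) (idm H x) (idm H x)) \<and>
     (\<forall>x y z h h'. h \<in> kcarrier (homs H x y) \<longrightarrow> h' \<in> kcarrier (homs H y z) \<longrightarrow>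
        cou H x z (cmp H x y z h h') = cou H x y h * cou H y z h') \<and>
     (\<forall>x. cou H x x (idm H x) = 1)"

definition hopf_antipode :: "('x, 'k::comm_ring_1, 'h, 'z) shcat_scheme
    \<Rightarrow> ('x \<Rightarrow> 'x \<Rightarrow> 'h \<Rightarrow> 'h) \<Rightarrow> bool" where
  "hopf_antipode H S \<longleftrightarrow>
     (\<forall>x y. klin (homs H x y) (homs H y x) (S x y)) \<and>
     (\<forall>x y h. h \<in> kcarrier (homs H x y) \<longrightarrow>
        tlift (homs H x x) (\<lambda>a b. cmp H x y x a (S x y b)) (cop H x y h) =
          ksmult (homs H x x) (cou H x y h) (idm H x) \<and>
        tlift (homs H y y) (\<lambda>a b. cmp H y x y (S x y a) b) (cop H x y h) =
          ksmult (homs H y y) (cou H x y h) (idm H y))"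

record ('x, 'k, 'a, 'h) comcat = "('x, 'k, 'a) klcat" +
  coact :: "'x \<Rightarrow> 'x \<Rightarrow> 'a \<Rightarrow> ('a \<times> 'h \<Rightarrow> 'k) set"

definition comodule_cat :: "('x, 'k::comm_ring_1, 'h, 'z) shcat_scheme
    \<Rightarrow> ('x, 'k, 'a, 'h, 'w) comcat_scheme \<Rightarrow> bool" where
  "comodule_cat H A \<longleftrightarrow>
     klincat A \<and>
     (\<forall>x y. klin (homs A x y) (kt (homs A x y) (homs H x y)) (coact A x y)) \<and>
     (\<forall>x y a. a \<in> kcarrier (homs A x y) \<longrightarrow>
        tlift (kt (kt (homs A x y) (homs H x y)) (homs H x y))
          (\<lambda>b g. ktmk (kt (homs A x y) (homs H x y)) (homs H x y) (coact A x y b) g)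
          (coact A x y a) =
        tlift (kt (kt (homs A x y) (homs H x y)) (homs H x y))
          (\<lambda>b g. tlift (kt (kt (homs A x y) (homs H x y)) (homs H x y))
             (\<lambda>g1 g2. ktmk (kt (homs A x y) (homs H x y)) (homs H x y)
                         (ktmk (homs A x y) (homs H x y) b g1) g2)
             (cop H x y g))
          (coact A x y a)) \<and>
     (\<forall>x y a. a \<in> kcarrier (homs A x y) \<longrightarrow>
        tlift (homs A x y) (\<lambda>b g. ksmult (homs A x y) (cou H x y g) b) (coact A x y a) = a) \<and>
     (\<forall>x y z a b. a \<in> kcarrier (homs A x y) \<longrightarrow> b \<in> kcarrier (homs A y z) \<longrightarrow>
        coact A x z (cmp A x y z a b) =
          tlift (kt (homs A x z) (homs H x z))
            (\<lambda>a0 a1. tlift (kt (homs A x z) (homs H x z))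
               (\<lambda>b0 b1. ktmk (homs A x z) (homs H x z) (cmp A x y z a0 b0) (cmp H x y z a1 b1))
               (coact A y z b))
            (coact A x y a)) \<and>
     (\<forall>x. coact A x x (idm A x) = ktmk (homs A x x) (homs H x x) (idm A x) (idm H x))"

definition coinv :: "('x, 'k::comm_ring_1, 'h, 'z) shcat_scheme
    \<Rightarrow> ('x, 'k, 'a, 'h, 'w) comcat_scheme \<Rightarrow> 'x \<Rightarrow> 'a set" where
  "coinv H A x = {a \<in> kcarrier (homs A x x).
      coact A x x a = ktmk (homs A x x) (homs H x x) a (idm H x)}"

text \<open>Balancing relations for A_zx \<otimes>_{B_x} A_xy.\<close>
definition bbal :: "('x, 'k::comm_ring_1, 'h, 'z) shcat_scheme
    \<Rightarrow> ('x, 'k, 'a, 'h, 'w) comcat_scheme \<Rightarrow> 'x \<Rightarrow> 'x \<Rightarrow> 'x \<Rightarrow> (('a \<times> 'a) \<times> ('a \<times> 'a)) set" where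
  "bbal H A z x y = {((cmp A z x x a b, c), (a, cmp A x x y b c)) | a b c.
      a \<in> kcarrier (homs A z x) \<and> b \<in> coinv H A x \<and> c \<in> kcarrier (homs A x y)}"

definition btens :: "('x, 'k::comm_ring_1, 'h, 'z) shcat_scheme
    \<Rightarrow> ('x, 'k, 'a, 'h, 'w) comcat_scheme \<Rightarrow> 'x \<Rightarrow> 'x \<Rightarrow> 'x \<Rightarrow> ('k, ('a \<times> 'a \<Rightarrow> 'k) set) kmod" where
  "btens H A z x y = tensor (homs A z x) (homs A x y) (bbal H A z x y)"

definition btmk :: "('x, 'k::comm_ring_1, 'h, 'z) shcat_scheme
    \<Rightarrow> ('x, 'k, 'a, 'h, 'w) comcat_scheme \<Rightarrow> 'x \<Rightarrow> 'x \<Rightarrow> 'x \<Rightarrow> 'a \<Rightarrow> 'a \<Rightarrow> ('a \<times> 'a \<Rightarrow> 'k) set" where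
  "btmk H A z x y a b = tmk (homs A z x) (homs A x y) (bbal H A z x y) a b"

text \<open>The canonical map can^z_xy : A_zx \<otimes>_{B_x} A_xy \<rightarrow> A_zy \<otimes> H_xy.\<close>
definition can :: "('x, 'k::comm_ring_1, 'h, 'z) shcat_scheme
    \<Rightarrow> ('x, 'k, 'a, 'h, 'w) comcat_scheme \<Rightarrow> 'x \<Rightarrow> 'x \<Rightarrow> 'x
    \<Rightarrow> ('a \<times> 'a \<Rightarrow> 'k) set \<Rightarrow> ('a \<times> 'h \<Rightarrow> 'k) set" where
  "can H A z x y = tlift (kt (homs A z y) (homs H x y))
     (\<lambda>a a'. tlift (kt (homs A z y) (homs H x y))
        (\<lambda>c g. ktmk (homs A z y) (homs H x y) (cmp A z x y a c) g) (coact A x y a'))"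

definition galois_ext :: "('x, 'k::comm_ring_1, 'h, 'z) shcat_scheme
    \<Rightarrow> ('x, 'k, 'a, 'h, 'w) comcat_scheme \<Rightarrow> bool" where
  "galois_ext H A \<longleftrightarrow> (\<forall>x y z. bij_betw (can H A z x y)
      (kcarrier (btens H A z x y)) (kcarrier (kt (homs A z y) (homs H x y))))"

definition gam :: "('x, 'k::comm_ring_1, 'h, 'z) shcat_scheme
    \<Rightarrow> ('x, 'k, 'a, 'h, 'w) comcat_scheme \<Rightarrow> 'x \<Rightarrow> 'x \<Rightarrow> 'h \<Rightarrow> ('a \<times> 'a \<Rightarrow> 'k) set" where
  "gam H A x y h = inv_into (kcarrier (btens H A y x y)) (can H A y x y)
      (ktmk (homs A y y) (homs H x y) (idm A y) h)"

end

theory Submission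
  imports Defs
begin

section \<open>Module basics\<close>

lemma km_zero: "kmodule M \<Longrightarrow> kzero M \<in> kcarrier M"
  unfolding kmodule_def by (elim conjE) blast
lemma km_add: "kmodule M \<Longrightarrow> a \<in> kcarrier M \<Longrightarrow> b \<in> kcarrier M \<Longrightarrow> kadd M a b \<in> kcarrier M"
  unfolding kmodule_def by (elim conjE) blast
lemma km_smult: "kmodule M \<Longrightarrow> a \<in> kcarrier M \<Longrightarrow> ksmult M c a \<in> kcarrier M"
  unfolding kmodule_def by (elim conjE) blast
lemma km_assoc: "kmodule M \<Longrightarrow> a \<in> kcarrier M \<Longrightarrow> b \<in> kcarrier M \<Longrightarrow> d \<in> kcarrier M \<Longrightarrow>
    kadd M (kadd M a b) d = kadd M a (kadd M b d)"
  unfolding kmodule_def by (elim conjE) blast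
lemma km_comm: "kmodule M \<Longrightarrow> a \<in> kcarrier M \<Longrightarrow> b \<in> kcarrier M \<Longrightarrow> kadd M a b = kadd M b a"
  unfolding kmodule_def by (elim conjE) blast
lemma km_lzero: "kmodule M \<Longrightarrow> a \<in> kcarrier M \<Longrightarrow> kadd M (kzero M) a = a"
  unfolding kmodule_def by (elim conjE) blast
lemma km_rzero: "kmodule M \<Longrightarrow> a \<in> kcarrier M \<Longrightarrow> kadd M a (kzero M) = a"
  using km_lzero km_comm km_zero by metis
lemma km_neg: "kmodule M \<Longrightarrow> a \<in> kcarrier M \<Longrightarrow> \<exists>b\<in>kcarrier M. kadd M a b = kzero M"
  unfolding kmodule_def by (elim conjE) blast
lemma km_sadd: "kmodule M \<Longrightarrow> a \<in> kcarrier M \<Longrightarrow> ksmult M (c + d) a = kadd M (ksmult M c a) (ksmult M d a)"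
  unfolding kmodule_def by (elim conjE) blast
lemma km_addsm: "kmodule M \<Longrightarrow> a \<in> kcarrier M \<Longrightarrow> b \<in> kcarrier M \<Longrightarrow>
    ksmult M c (kadd M a b) = kadd M (ksmult M c a) (ksmult M c b)"
  unfolding kmodule_def by (elim conjE) blast
lemma km_smsm: "kmodule M \<Longrightarrow> a \<in> kcarrier M \<Longrightarrow> ksmult M (c * d) a = ksmult M c (ksmult M d a)"
  unfolding kmodule_def by (elim conjE) blast
lemma km_one: "kmodule M \<Longrightarrow> a \<in> kcarrier M \<Longrightarrow> ksmult M 1 a = a"
  unfolding kmodule_def by (elim conjE) auto

lemma km_cancel:
  assumes M: "kmodule M" and C: "a \<in> kcarrier M" "b \<in> kcarrier M" "c \<in> kcarrier M"
    and e: "kadd M a b = kadd M a c"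
  shows "b = c"
proof -
  obtain n where n: "n \<in> kcarrier M" "kadd M a n = kzero M" using km_neg[OF M C(1)] by blast
  have "b = kadd M (kadd M n a) b" using n C M km_comm km_lzero by metis
  also have "\<dots> = kadd M n (kadd M a b)" using km_assoc[OF M] n C by metis
  also have "\<dots> = kadd M n (kadd M a c)" using e by simp
  also have "\<dots> = kadd M (kadd M n a) c" using km_assoc[OF M] n C by metis
  also have "\<dots> = c" using n C M km_comm km_lzero by metis
  finally show ?thesis .
qed

lemma km_self_zero:
  assumes M: "kmodule M" and C: "a \<in> kcarrier M" and e: "kadd M a a = a"
  shows "a = kzero M"
  using km_cancel[OF M C C km_zero[OF M]] e km_rzero[OF M C] by simp

lemma km_smult_0: assumes M: "kmodule M" and C: "a \<in> kcarrier M" shows "ksmult M 0 a = kzero M"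
  using km_self_zero[OF M km_smult[OF M C]] km_sadd[OF M C, of 0 0] by simp

lemma km_smult_zero: assumes M: "kmodule M" shows "ksmult M c (kzero M) = kzero M"
  using km_self_zero[OF M km_smult[OF M km_zero[OF M]]] km_addsm[OF M km_zero[OF M] km_zero[OF M], of c]
    km_lzero[OF M km_zero[OF M]] by simp

lemma km_neg_cancel: assumes M: "kmodule M" and C: "a \<in> kcarrier M"
  shows "kadd M a (ksmult M (-1) a) = kzero M"
proof -
  have "kadd M a (ksmult M (-1) a) = kadd M (ksmult M 1 a) (ksmult M (-1) a)" using km_one[OF M C] by simp
  also have "\<dots> = ksmult M (1 + -1) a" using km_sadd[OF M C, of 1 "-1"] by simp
  finally show ?thesis using km_smult_0[OF M C] by simp
qed

lemma km_eq_diff: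
  assumes M: "kmodule M" and C: "a \<in> kcarrier M" "b \<in> kcarrier M"
    and e: "kadd M a (ksmult M (-1) b) = kzero M"
  shows "a = b"
proof -
  have "kadd M (ksmult M (-1) b) a = kadd M (ksmult M (-1) b) b"
    using e km_neg_cancel[OF M C(2)] km_comm[OF M] C km_smult[OF M] by metis
  thus ?thesis using km_cancel[OF M km_smult[OF M C(2)] C] by blast
qed

section \<open>Finite sums\<close>

lemma kmsum_empty[simp]: "kmsum P g {} = kzero P"
  unfolding kmsum_def by simp

lemma kmsum_fold':
  assumes P: "kmodule P" and fin: "finite A" and g: "\<And>i. i \<in> A \<Longrightarrow> g i \<in> kcarrier P"
  shows "kmsum P g A = Finite_Set.fold (\<lambda>i acc. kadd P (g i) (if acc \<in> kcarrier P then acc else kzero P)) (kzero P) A"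
  unfolding kmsum_def
  by (rule fold_closed_eq[where B="kcarrier P"]) (auto simp: g km_add[OF P] km_zero[OF P])

lemma kmsum_cfc:
  assumes P: "kmodule P"
  shows "comp_fun_commute_on {i. g i \<in> kcarrier P} (\<lambda>i acc. kadd P (g i) (if acc \<in> kcarrier P then acc else kzero P))"
proof
  fix i j assume i: "i \<in> {i. g i \<in> kcarrier P}" and j: "j \<in> {i. g i \<in> kcarrier P}"
  show "(\<lambda>acc. kadd P (g j) (if acc \<in> kcarrier P then acc else kzero P)) \<circ>
        (\<lambda>acc. kadd P (g i) (if acc \<in> kcarrier P then acc else kzero P)) =
        (\<lambda>acc. kadd P (g i) (if acc \<in> kcarrier P then acc else kzero P)) \<circ>
        (\<lambda>acc. kadd P (g j) (if acc \<in> kcarrier P then acc else kzero P))"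
  proof
    fix acc
    define a where "a = (if acc \<in> kcarrier P then acc else kzero P)"
    have a: "a \<in> kcarrier P" unfolding a_def using km_zero[OF P] by auto
    have gi: "g i \<in> kcarrier P" and gj: "g j \<in> kcarrier P" using i j by auto
    have "kadd P (g j) (kadd P (g i) a) = kadd P (g i) (kadd P (g j) a)"
      by (metis P a gi gj km_assoc km_comm)
    thus "((\<lambda>acc. kadd P (g j) (if acc \<in> kcarrier P then acc else kzero P)) \<circ>
        (\<lambda>acc. kadd P (g i) (if acc \<in> kcarrier P then acc else kzero P))) acc =
        ((\<lambda>acc. kadd P (g i) (if acc \<in> kcarrier P then acc else kzero P)) \<circ>
        (\<lambda>acc. kadd P (g j) (if acc \<in> kcarrier P then acc else kzero P))) acc"
      using km_add[OF P gi a] km_add[OF P gj a] by (simp add: a_def[symmetric])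
  qed
qed

lemma kmsum_ins0:
  assumes P: "kmodule P" and fin: "finite A" and a: "a \<notin> A"
    and g: "\<And>i. i \<in> insert a A \<Longrightarrow> g i \<in> kcarrier P"
  shows "kmsum P g (insert a A) = kadd P (g a) (if kmsum P g A \<in> kcarrier P then kmsum P g A else kzero P)"
proof -
  let ?F = "\<lambda>i acc. kadd P (g i) (if acc \<in> kcarrier P then acc else kzero P)"
  interpret cf: comp_fun_commute_on "{i. g i \<in> kcarrier P}" ?F by (rule kmsum_cfc[OF P])
  have s: "insert a A \<subseteq> {i. g i \<in> kcarrier P}" using g by auto
  have "kmsum P g (insert a A) = Finite_Set.fold ?F (kzero P) (insert a A)"
    by (rule kmsum_fold'[OF P]) (use fin g in auto)
  also have "\<dots> = ?F a (Finite_Set.fold ?F (kzero P) A)" by (rule cf.fold_insert[OF s fin a])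
  finally have e1: "kmsum P g (insert a A) = ?F a (Finite_Set.fold ?F (kzero P) A)" .
  have e2: "kmsum P g A = Finite_Set.fold ?F (kzero P) A"
    by (rule kmsum_fold'[OF P fin]) (use g in auto)
  show ?thesis unfolding e1 e2 ..
qed

lemma kmsum_closed:
  assumes P: "kmodule P" and g: "\<And>i. i \<in> A \<Longrightarrow> g i \<in> kcarrier P"
  shows "kmsum P g A \<in> kcarrier P"
proof (cases "finite A \<and> A \<noteq> {}")
  case True
  then obtain a where "a \<in> A" by blast
  define A' where "A' = A - {a}"
  have A: "A = insert a A'" "a \<notin> A'" "finite A'" using True \<open>a \<in> A\<close> unfolding A'_def by auto
  have gi: "\<And>i. i \<in> insert a A' \<Longrightarrow> g i \<in> kcarrier P" using g A(1) by auto
  have "kmsum P g (insert a A') \<in> kcarrier P"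
    using kmsum_ins0[OF P A(3) A(2) gi] gi[of a] km_zero[OF P] km_add[OF P] by simp
  thus ?thesis using A(1) by simp
next
  case False
  thus ?thesis by (auto simp: kmsum_def km_zero[OF P])
qed

lemma kmsum_insert:
  assumes P: "kmodule P" and fin: "finite A" and a: "a \<notin> A"
    and g: "\<And>i. i \<in> insert a A \<Longrightarrow> g i \<in> kcarrier P"
  shows "kmsum P g (insert a A) = kadd P (g a) (kmsum P g A)"
  using kmsum_ins0[OF P fin a g] kmsum_closed[OF P, of A g] g by simp

lemma kmsum_cong:
  assumes "A = B" "\<And>i. i \<in> B \<Longrightarrow> g i = h i" shows "kmsum P g A = kmsum P h B"
  unfolding kmsum_def assms(1) by (rule fold_closed_eq[where B=UNIV]) (auto simp: assms(2))

lemma klin_carrier: "klin M N f \<Longrightarrow> a \<in> kcarrier M \<Longrightarrow> f a \<in> kcarrier N"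
  unfolding klin_def by blast
lemma klin_add: "klin M N f \<Longrightarrow> a \<in> kcarrier M \<Longrightarrow> b \<in> kcarrier M \<Longrightarrow> f (kadd M a b) = kadd N (f a) (f b)"
  unfolding klin_def by blast
lemma klin_smult: "klin M N f \<Longrightarrow> a \<in> kcarrier M \<Longrightarrow> f (ksmult M c a) = ksmult N c (f a)"
  unfolding klin_def by blast
lemma klinI:
  assumes "\<And>a. a \<in> kcarrier M \<Longrightarrow> f a \<in> kcarrier N"
    "\<And>a b. a \<in> kcarrier M \<Longrightarrow> b \<in> kcarrier M \<Longrightarrow> f (kadd M a b) = kadd N (f a) (f b)"
    "\<And>c a. a \<in> kcarrier M \<Longrightarrow> f (ksmult M c a) = ksmult N c (f a)"
  shows "klin M N f"
  unfolding klin_def using assms by blast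

lemma klin_zero:
  assumes M: "kmodule M" and N: "kmodule N" and f: "klin M N f"
  shows "f (kzero M) = kzero N"
proof -
  have "f (kzero M) = f (ksmult M 0 (kzero M))" using km_smult_0[OF M km_zero[OF M]] by simp
  also have "\<dots> = ksmult N 0 (f (kzero M))" using klin_smult[OF f km_zero[OF M]] .
  also have "\<dots> = kzero N" using km_smult_0[OF N klin_carrier[OF f km_zero[OF M]]] .
  finally show ?thesis .
qed

lemma klin_comp: "klin M N f \<Longrightarrow> klin N P g \<Longrightarrow> klin M P (\<lambda>a. g (f a))"
  unfolding klin_def by simp

lemma klin_cong:
  assumes M: "kmodule M" and f: "klin M N f" and e: "\<And>a. a \<in> kcarrier M \<Longrightarrow> f a = g a"
  shows "klin M N g"
proof (rule klinI)
  fix a assume a: "a \<in> kcarrier M" thus "g a \<in> kcarrier N" using e klin_carrier[OF f] by metis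
next
  fix a b assume a: "a \<in> kcarrier M" and b: "b \<in> kcarrier M"
  thus "g (kadd M a b) = kadd N (g a) (g b)" using e[OF km_add[OF M a b]] e[OF a] e[OF b] klin_add[OF f a b] by simp
next
  fix c a assume a: "a \<in> kcarrier M"
  thus "g (ksmult M c a) = ksmult N c (g a)" using e[OF km_smult[OF M a]] e[OF a] klin_smult[OF f a] by simp
qed

lemma klin_smult_map: "kmodule M \<Longrightarrow> klin M M (ksmult M c)"
  by (rule klinI) (auto simp: km_smult km_addsm, metis km_smsm mult.commute)

lemma klin_add_map:
  assumes M: "kmodule M" and N: "kmodule N" and f: "klin M N f" and g: "klin M N g"
  shows "klin M N (\<lambda>a. kadd N (f a) (g a))"
proof (rule klinI)
  fix a assume a: "a \<in> kcarrier M"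
  show "kadd N (f a) (g a) \<in> kcarrier N" using a f g km_add[OF N] klin_carrier by metis
next
  fix a b assume a: "a \<in> kcarrier M" and b: "b \<in> kcarrier M"
  have C: "f a \<in> kcarrier N" "f b \<in> kcarrier N" "g a \<in> kcarrier N" "g b \<in> kcarrier N"
    using a b f g klin_carrier by metis+
  show "kadd N (f (kadd M a b)) (g (kadd M a b)) = kadd N (kadd N (f a) (g a)) (kadd N (f b) (g b))"
    using klin_add[OF f a b] klin_add[OF g a b] C
    by (metis N km_add km_assoc km_comm)
next
  fix c a assume a: "a \<in> kcarrier M"
  show "kadd N (f (ksmult M c a)) (g (ksmult M c a)) = ksmult N c (kadd N (f a) (g a))"
    using klin_smult[OF f a] klin_smult[OF g a] km_addsm[OF N] klin_carrier[OF f a] klin_carrier[OF g a] by simp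
qed

lemma kmsum_add:
  assumes P: "kmodule P" and fin: "finite A"
    and g: "\<And>i. i \<in> A \<Longrightarrow> g i \<in> kcarrier P" and h: "\<And>i. i \<in> A \<Longrightarrow> h i \<in> kcarrier P"
  shows "kmsum P (\<lambda>i. kadd P (g i) (h i)) A = kadd P (kmsum P g A) (kmsum P h A)"
  using fin g h
proof (induction A rule: finite_induct)
  case empty
  then show ?case using km_lzero[OF P km_zero[OF P]] by simp
next
  case (insert a A)
  have g': "\<And>i. i \<in> A \<Longrightarrow> g i \<in> kcarrier P" and h': "\<And>i. i \<in> A \<Longrightarrow> h i \<in> kcarrier P"
    using insert by auto
  have ga: "g a \<in> kcarrier P" and ha: "h a \<in> kcarrier P" using insert by auto
  have sg: "kmsum P g A \<in> kcarrier P" by (rule kmsum_closed[OF P g'])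
  have sh: "kmsum P h A \<in> kcarrier P" by (rule kmsum_closed[OF P h'])
  have "kmsum P (\<lambda>i. kadd P (g i) (h i)) (insert a A) =
        kadd P (kadd P (g a) (h a)) (kmsum P (\<lambda>i. kadd P (g i) (h i)) A)"
    by (rule kmsum_insert[OF P insert(1,2)]) (use insert km_add[OF P] in auto)
  also have "\<dots> = kadd P (kadd P (g a) (h a)) (kadd P (kmsum P g A) (kmsum P h A))"
    using insert.IH[OF g' h'] by simp
  also have "\<dots> = kadd P (kadd P (g a) (kmsum P g A)) (kadd P (h a) (kmsum P h A))"
    by (metis P ga ha sg sh km_add km_assoc km_comm)
  also have "\<dots> = kadd P (kmsum P g (insert a A)) (kmsum P h (insert a A))"
    using kmsum_insert[OF P insert(1,2), of g] kmsum_insert[OF P insert(1,2), of h] insert by simp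
  finally show ?case .
qed

lemma kmsum_lin:
  assumes P: "kmodule P" and Q: "kmodule Q" and F: "klin P Q F" and fin: "finite A"
    and g: "\<And>i. i \<in> A \<Longrightarrow> g i \<in> kcarrier P"
  shows "F (kmsum P g A) = kmsum Q (\<lambda>i. F (g i)) A"
  using fin g
proof (induction A rule: finite_induct)
  case empty
  then show ?case using klin_zero[OF P Q F] by simp
next
  case (insert a A)
  have g': "\<And>i. i \<in> A \<Longrightarrow> g i \<in> kcarrier P" using insert by auto
  have "F (kmsum P g (insert a A)) = F (kadd P (g a) (kmsum P g A))"
    using kmsum_insert[OF P insert(1,2), of g] insert by simp
  also have "\<dots> = kadd Q (F (g a)) (F (kmsum P g A))"
    by (rule klin_add[OF F]) (use insert kmsum_closed[OF P g'] in auto)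
  also have "\<dots> = kmsum Q (\<lambda>i. F (g i)) (insert a A)"
    using insert.IH[OF g'] kmsum_insert[OF Q insert(1,2), of "\<lambda>i. F (g i)"] insert klin_carrier[OF F] by simp
  finally show ?case .
qed

lemma kmsum_smult:
  assumes P: "kmodule P" and fin: "finite A" and g: "\<And>i. i \<in> A \<Longrightarrow> g i \<in> kcarrier P"
  shows "ksmult P c (kmsum P g A) = kmsum P (\<lambda>i. ksmult P c (g i)) A"
  using kmsum_lin[OF P P klin_smult_map[OF P] fin g] .

lemma kmsum_zeros:
  assumes P: "kmodule P" and fin: "finite D" "finite A" and dis: "D \<inter> A = {}"
    and g: "\<And>i. i \<in> A \<Longrightarrow> g i \<in> kcarrier P" and z: "\<And>i. i \<in> D \<Longrightarrow> g i = kzero P"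
  shows "kmsum P g (A \<union> D) = kmsum P g A"
  using fin(1) dis z
proof (induction D rule: finite_induct)
  case empty
  then show ?case by simp
next
  case (insert d D)
  have gg: "\<And>i. i \<in> insert d (A \<union> D) \<Longrightarrow> g i \<in> kcarrier P" using g insert km_zero[OF P] by auto
  have "kmsum P g (A \<union> insert d D) = kmsum P g (insert d (A \<union> D))" by simp
  also have "\<dots> = kadd P (g d) (kmsum P g (A \<union> D))"
    by (rule kmsum_insert[OF P]) (use insert fin gg in auto)
  also have "\<dots> = kmsum P g (A \<union> D)"
    using insert km_lzero[OF P] kmsum_closed[OF P, of "A \<union> D" g] gg by simp
  finally show ?case using insert by simp
qed

lemma kmsum_superset:
  assumes P: "kmodule P" and fin: "finite B" and sub: "A \<subseteq> B"
    and g: "\<And>i. i \<in> A \<Longrightarrow> g i \<in> kcarrier P" and z: "\<And>i. i \<in> B - A \<Longrightarrow> g i = kzero P"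
  shows "kmsum P g B = kmsum P g A"
proof -
  have "B = A \<union> (B - A)" using sub by auto
  moreover have "kmsum P g (A \<union> (B - A)) = kmsum P g A"
    by (rule kmsum_zeros[OF P _ _ _ g z]) (use fin sub finite_subset in auto)
  ultimately show ?thesis by simp
qed

definition Lsum :: "('k::comm_ring_1, 'p) kmod \<Rightarrow> ('m \<Rightarrow> 'n \<Rightarrow> 'p) \<Rightarrow> ('m \<times> 'n \<Rightarrow> 'k) \<Rightarrow> 'p" where
  "Lsum P phi f = kmsum P (\<lambda>q. ksmult P (f q) (phi (fst q) (snd q))) (fsupp f)"

definition balanced :: "(('m \<times> 'n) \<times> ('m \<times> 'n)) set \<Rightarrow> ('m \<Rightarrow> 'n \<Rightarrow> 'p) \<Rightarrow> bool" where
  "balanced Bal phi \<longleftrightarrow> (\<forall>(p, q) \<in> Bal. phi (fst p) (snd p) = phi (fst q) (snd q))"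

lemma tlift_Lsum: "tlift P phi X = Lsum P phi (SOME f. f \<in> X)"
  unfolding tlift_def Lsum_def Let_def ..

lemma km_diff3:
  assumes P: "kmodule P" and C: "a \<in> kcarrier P" "b \<in> kcarrier P"
  shows "kadd P (kadd P (kadd P a b) (ksmult P (-1) a)) (ksmult P (-1) b) = kzero P"
proof -
  have na: "ksmult P (-1) a \<in> kcarrier P" and nb: "ksmult P (-1) b \<in> kcarrier P" using C km_smult[OF P] by auto
  have "kadd P (kadd P (kadd P a b) (ksmult P (-1) a)) (ksmult P (-1) b)
      = kadd P (kadd P a (ksmult P (-1) a)) (kadd P b (ksmult P (-1) b))"
    by (metis P C na nb km_add km_assoc km_comm)
  thus ?thesis using km_neg_cancel[OF P C(1)] km_neg_cancel[OF P C(2)] km_lzero[OF P km_zero[OF P]] by simp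
qed

locale tens =
  fixes M :: "('k::comm_ring_1, 'm) kmod" and N :: "('k, 'n) kmod"
    and Bal :: "(('m \<times> 'n) \<times> ('m \<times> 'n)) set"
  assumes M: "kmodule M" and N: "kmodule N"
    and Bal: "Bal \<subseteq> (kcarrier M \<times> kcarrier N) \<times> (kcarrier M \<times> kcarrier N)"
begin

abbreviation "FE \<equiv> free_el M N"
abbreviation "REL \<equiv> tensor_rel M N Bal"
abbreviation "T \<equiv> tensor M N Bal"
abbreviation "CL \<equiv> tclass M N Bal"

lemma free_zero: "(\<lambda>_. 0) \<in> FE"
  unfolding free_el_def fsupp_def by simp

lemma fsupp_add: fixes f g :: "'m \<times> 'n \<Rightarrow> 'k" shows "fsupp (\<lambda>p. f p + g p) \<subseteq> fsupp f \<union> fsupp g"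
  unfolding fsupp_def by auto

lemma fsupp_smult: fixes f g :: "'m \<times> 'n \<Rightarrow> 'k" shows "fsupp (\<lambda>p. c * f p) \<subseteq> fsupp f"
  unfolding fsupp_def by auto

lemma fsupp_diff: fixes f g :: "'m \<times> 'n \<Rightarrow> 'k" shows "fsupp (\<lambda>p. f p - g p) \<subseteq> fsupp f \<union> fsupp g"
  unfolding fsupp_def by auto

lemma free_add: "f \<in> FE \<Longrightarrow> g \<in> FE \<Longrightarrow> (\<lambda>p. f p + g p) \<in> FE"
  unfolding free_el_def using fsupp_add[of f g] finite_subset by blast

lemma free_diff: "f \<in> FE \<Longrightarrow> g \<in> FE \<Longrightarrow> (\<lambda>p. f p - g p) \<in> FE"
  unfolding free_el_def using fsupp_diff[of f g] finite_subset by blast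

lemma free_smult: "f \<in> FE \<Longrightarrow> (\<lambda>p. c * f p) \<in> FE"
  unfolding free_el_def using fsupp_smult[of c f] finite_subset by blast

lemma fsupp_gen: "fsupp (gen m n) \<subseteq> {(m, n)}"
  unfolding fsupp_def gen_def by auto

lemma free_gen: "m \<in> kcarrier M \<Longrightarrow> n \<in> kcarrier N \<Longrightarrow> gen m n \<in> FE"
  unfolding free_el_def using fsupp_gen[of m n] finite_subset by blast

lemma rel_free: "r \<in> REL \<Longrightarrow> r \<in> FE"
proof (induction rule: tensor_rel.induct)
  case rzero then show ?case by (rule free_zero)
next
  case (radd f g) then show ?case by (simp add: free_add)
next
  case (rsmult f c) then show ?case by (simp add: free_smult)
next
  case (raddl m m' n) then show ?case
    by (intro free_diff free_gen km_add[OF M])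
next
  case (raddr m n n') then show ?case
    by (intro free_diff free_gen km_add[OF N])
next
  case (rsmultl m n c) then show ?case
    using free_smult[OF free_gen] by (intro free_diff free_gen km_smult[OF M]) auto
next
  case (rsmultr m n c) then show ?case
    using free_smult[OF free_gen] by (intro free_diff free_gen km_smult[OF N]) auto
next
  case (rbal p q) then show ?case
    by (intro free_diff free_gen) auto
qed

context
  fixes P :: "('k, 'p) kmod" and phi :: "'m \<Rightarrow> 'n \<Rightarrow> 'p"
  assumes P: "kmodule P" and phic: "\<And>m n. m \<in> kcarrier M \<Longrightarrow> n \<in> kcarrier N \<Longrightarrow> phi m n \<in> kcarrier P"
begin

lemma Lsum_superset:
  assumes f: "f \<in> FE" and S: "finite S" "fsupp f \<subseteq> S" "S \<subseteq> kcarrier M \<times> kcarrier N"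
  shows "Lsum P phi f = kmsum P (\<lambda>q. ksmult P (f q) (phi (fst q) (snd q))) S"
  unfolding Lsum_def
proof (rule kmsum_superset[OF P S(1,2), symmetric])
  fix q assume "q \<in> fsupp f" thus "ksmult P (f q) (phi (fst q) (snd q)) \<in> kcarrier P"
    using S phic km_smult[OF P] by (metis mem_Times_iff subsetD)
next
  fix q assume q: "q \<in> S - fsupp f"
  hence "f q = 0" unfolding fsupp_def by auto
  thus "ksmult P (f q) (phi (fst q) (snd q)) = kzero P"
    using q S phic km_smult_0[OF P] by (metis Diff_iff mem_Times_iff subsetD)
qed

lemma Lsum_closed: "f \<in> FE \<Longrightarrow> Lsum P phi f \<in> kcarrier P"
  unfolding Lsum_def free_el_def
  by (rule kmsum_closed[OF P]) (use phic km_smult[OF P] in \<open>auto simp: mem_Times_iff\<close>)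

lemma Lsum_add:
  assumes f: "f \<in> FE" and g: "g \<in> FE"
  shows "Lsum P phi (\<lambda>p. f p + g p) = kadd P (Lsum P phi f) (Lsum P phi g)"
proof -
  let ?S = "fsupp f \<union> fsupp g"
  have S: "finite ?S" "?S \<subseteq> kcarrier M \<times> kcarrier N" using f g unfolding free_el_def by auto
  have tc: "\<And>h q. q \<in> ?S \<Longrightarrow> ksmult P h (phi (fst q) (snd q)) \<in> kcarrier P"
    using S phic km_smult[OF P] by (metis mem_Times_iff subsetD)
  have "Lsum P phi (\<lambda>p. f p + g p) = kmsum P (\<lambda>q. ksmult P (f q + g q) (phi (fst q) (snd q))) ?S"
    by (rule Lsum_superset) (use free_add[OF f g] fsupp_add[of f g] S in auto)
  also have "\<dots> = kmsum P (\<lambda>q. kadd P (ksmult P (f q) (phi (fst q) (snd q))) (ksmult P (g q) (phi (fst q) (snd q)))) ?S"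
    by (rule kmsum_cong) (use S phic km_sadd[OF P] in \<open>auto simp: mem_Times_iff\<close>)
  also have "\<dots> = kadd P (kmsum P (\<lambda>q. ksmult P (f q) (phi (fst q) (snd q))) ?S) (kmsum P (\<lambda>q. ksmult P (g q) (phi (fst q) (snd q))) ?S)"
    by (rule kmsum_add[OF P S(1)]) (use tc in auto)
  also have "\<dots> = kadd P (Lsum P phi f) (Lsum P phi g)"
    using Lsum_superset[OF f S(1) _ S(2)] Lsum_superset[OF g S(1) _ S(2)] by simp
  finally show ?thesis .
qed

lemma Lsum_smult:
  assumes f: "f \<in> FE"
  shows "Lsum P phi (\<lambda>p. c * f p) = ksmult P c (Lsum P phi f)"
proof -
  have S: "finite (fsupp f)" "fsupp f \<subseteq> kcarrier M \<times> kcarrier N" using f unfolding free_el_def by auto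
  have tc: "\<And>h q. q \<in> fsupp f \<Longrightarrow> phi (fst q) (snd q) \<in> kcarrier P"
    using S phic by (metis mem_Times_iff subsetD)
  have "Lsum P phi (\<lambda>p. c * f p) = kmsum P (\<lambda>q. ksmult P (c * f q) (phi (fst q) (snd q))) (fsupp f)"
    by (rule Lsum_superset) (use free_smult[OF f] fsupp_smult[of c f] S in auto)
  also have "\<dots> = kmsum P (\<lambda>q. ksmult P c (ksmult P (f q) (phi (fst q) (snd q)))) (fsupp f)"
    by (rule kmsum_cong) (use tc km_smsm[OF P] in auto)
  also have "\<dots> = ksmult P c (Lsum P phi f)"
    unfolding Lsum_def by (rule kmsum_smult[OF P S(1), symmetric]) (use tc km_smult[OF P] in auto)
  finally show ?thesis .
qed

lemma Lsum_zero: "Lsum P phi (\<lambda>_. 0) = kzero P"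
  unfolding Lsum_def fsupp_def by simp

lemma Lsum_gen:
  assumes m: "m \<in> kcarrier M" and n: "n \<in> kcarrier N"
  shows "Lsum P phi (gen m n) = phi m n"
proof -
  have "Lsum P phi (gen m n) = kmsum P (\<lambda>q. ksmult P (gen m n q) (phi (fst q) (snd q))) {(m, n)}"
    by (rule Lsum_superset) (use free_gen[OF m n] fsupp_gen[of m n] m n in auto)
  also have "\<dots> = kadd P (ksmult P 1 (phi m n)) (kzero P)"
    using kmsum_insert[OF P, of "{}" "(m, n)"] phic[OF m n] km_smult[OF P] by (simp add: gen_def)
  also have "\<dots> = phi m n" using km_one[OF P phic[OF m n]] km_rzero[OF P phic[OF m n]] by simp
  finally show ?thesis .
qed

lemma Lsum_diff:
  assumes f: "f \<in> FE" and g: "g \<in> FE"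
  shows "Lsum P phi (\<lambda>p. f p - g p) = kadd P (Lsum P phi f) (ksmult P (-1) (Lsum P phi g))"
proof -
  have "(\<lambda>p. f p - g p) = (\<lambda>p. f p + (\<lambda>p. (-1) * g p) p)" by auto
  hence "Lsum P phi (\<lambda>p. f p - g p) = Lsum P phi (\<lambda>p. f p + (\<lambda>p. (-1) * g p) p)" by simp
  also have "\<dots> = kadd P (Lsum P phi f) (Lsum P phi (\<lambda>p. (-1) * g p))" by (rule Lsum_add[OF f free_smult[OF g]])
  finally show ?thesis using Lsum_smult[OF g, of "-1"] by simp
qed

lemma Lsum_rel:
  assumes bil: "kbilin M N P phi" and bal: "balanced Bal phi" and r: "r \<in> REL"
  shows "Lsum P phi r = kzero P"
  using r
proof (induction rule: tensor_rel.induct)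
  case rzero then show ?case by (rule Lsum_zero)
next
  case (radd f g) then show ?case
    using Lsum_add[OF rel_free rel_free] km_lzero[OF P km_zero[OF P]] by simp
next
  case (rsmult f c) then show ?case
    using Lsum_smult[OF rel_free] km_smult_zero[OF P] by simp
next
  case (raddl m m' n)
  have e: "phi (kadd M m m') n = kadd P (phi m n) (phi m' n)"
    using bil raddl unfolding kbilin_def klin_def by blast
  show ?case
    using raddl Lsum_diff[OF free_diff free_gen, of "gen (kadd M m m') n" "gen m n" m' n]
      Lsum_diff[of "gen (kadd M m m') n" "gen m n"] free_gen km_add[OF M] Lsum_gen e
      km_diff3[OF P phic phic] by simp
next
  case (raddr m n n')
  have e: "phi m (kadd N n n') = kadd P (phi m n) (phi m n')"
    using bil raddr unfolding kbilin_def klin_def by blast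
  show ?case
    using raddr Lsum_diff[OF free_diff free_gen, of "gen m (kadd N n n')" "gen m n" m n']
      Lsum_diff[of "gen m (kadd N n n')" "gen m n"] free_gen km_add[OF N] Lsum_gen e
      km_diff3[OF P phic phic] by simp
next
  case (rsmultl m n c)
  have e: "phi (ksmult M c m) n = ksmult P c (phi m n)"
    using bil rsmultl unfolding kbilin_def klin_def by blast
  have "Lsum P phi (\<lambda>p. gen (ksmult M c m) n p - c * gen m n p)
      = kadd P (phi (ksmult M c m) n) (ksmult P (-1) (ksmult P c (phi m n)))"
    using Lsum_diff[OF free_gen free_smult[OF free_gen]] Lsum_smult[OF free_gen] Lsum_gen
      rsmultl km_smult[OF M] by simp
  then show ?case using e km_neg_cancel[OF P km_smult[OF P phic]] rsmultl by simp
next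
  case (rsmultr m n c)
  have e: "phi m (ksmult N c n) = ksmult P c (phi m n)"
    using bil rsmultr unfolding kbilin_def klin_def by blast
  have "Lsum P phi (\<lambda>p. gen m (ksmult N c n) p - c * gen m n p)
      = kadd P (phi m (ksmult N c n)) (ksmult P (-1) (ksmult P c (phi m n)))"
    using Lsum_diff[OF free_gen free_smult[OF free_gen]] Lsum_smult[OF free_gen] Lsum_gen
      rsmultr km_smult[OF N] by simp
  then show ?case using e km_neg_cancel[OF P km_smult[OF P phic]] rsmultr by simp
next
  case (rbal p q)
  have e: "phi (fst p) (snd p) = phi (fst q) (snd q)" using bal rbal unfolding balanced_def by auto
  have "Lsum P phi (\<lambda>r. gen (fst p) (snd p) r - gen (fst q) (snd q) r)
      = kadd P (phi (fst p) (snd p)) (ksmult P (-1) (phi (fst q) (snd q)))"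
    using Lsum_diff[OF free_gen free_gen] Lsum_gen rbal by (auto simp: mem_Times_iff)
  then show ?case using e km_neg_cancel[OF P phic] rbal by (auto simp: mem_Times_iff)
qed

end

end

context tens
begin

lemma rel_neg: "a \<in> REL \<Longrightarrow> (\<lambda>p. - a p) \<in> REL"
  using tensor_rel.rsmult[of a M N Bal "-1"] by simp

lemma rel_trans: "(\<lambda>p. f p - g p) \<in> REL \<Longrightarrow> (\<lambda>p. g p - h p) \<in> REL \<Longrightarrow> (\<lambda>p. f p - h p) \<in> REL"
  using tensor_rel.radd[of "\<lambda>p. f p - g p" M N Bal "\<lambda>p. g p - h p"] by simp

lemma rel_sym: "(\<lambda>p. f p - g p) \<in> REL \<Longrightarrow> (\<lambda>p. g p - f p) \<in> REL"
  using rel_neg[of "\<lambda>p. f p - g p"] by simp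

lemma rel_refl: "(\<lambda>p. f p - f p) \<in> REL"
  using tensor_rel.rzero by simp

lemma tclass_mem: "f \<in> FE \<Longrightarrow> f \<in> CL f"
  unfolding tclass_def using rel_refl by simp

lemma tclass_eq: assumes "f \<in> FE" "g \<in> FE" "(\<lambda>p. f p - g p) \<in> REL" shows "CL f = CL g"
proof -
  have fg: "(\<lambda>p. g p - f p) \<in> REL" by (rule rel_sym[OF assms(3)])
  have "(\<lambda>p. h p - f p) \<in> REL \<longleftrightarrow> (\<lambda>p. h p - g p) \<in> REL" for h
    using rel_trans[of h f g, OF _ assms(3)] rel_trans[of h g f, OF _ fg] by blast
  thus ?thesis unfolding tclass_def by blast
qed

lemma tclass_some: assumes "f \<in> FE"
  shows "(SOME g. g \<in> CL f) \<in> FE" "(\<lambda>p. (SOME g. g \<in> CL f) p - f p) \<in> REL"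
  using someI[of "\<lambda>g. g \<in> CL f" f] tclass_mem[OF assms] unfolding tclass_def by auto

lemma T_carrier: "kcarrier T = CL ` FE"
  unfolding tensor_def by simp

lemma T_carrierE: assumes "X \<in> kcarrier T" obtains f where "f \<in> FE" "X = CL f"
  using assms T_carrier by auto

lemma T_carrierI: "f \<in> FE \<Longrightarrow> CL f \<in> kcarrier T"
  using T_carrier by auto

lemma T_add: assumes f: "f \<in> FE" and g: "g \<in> FE"
  shows "kadd T (CL f) (CL g) = CL (\<lambda>p. f p + g p)"
proof -
  let ?f = "SOME h. h \<in> CL f" and ?g = "SOME h. h \<in> CL g"
  have "kadd T (CL f) (CL g) = CL (\<lambda>p. ?f p + ?g p)" unfolding tensor_def by simp
  also have "\<dots> = CL (\<lambda>p. f p + g p)"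
  proof (rule tclass_eq)
    show "(\<lambda>p. ?f p + ?g p) \<in> FE" using tclass_some f g free_add by blast
    show "(\<lambda>p. f p + g p) \<in> FE" using f g free_add by blast
    show "(\<lambda>p. (?f p + ?g p) - (f p + g p)) \<in> REL"
      using tensor_rel.radd[OF tclass_some(2)[OF f] tclass_some(2)[OF g]] by (simp add: algebra_simps)
  qed
  finally show ?thesis .
qed

lemma T_smult: assumes f: "f \<in> FE"
  shows "ksmult T c (CL f) = CL (\<lambda>p. c * f p)"
proof -
  let ?f = "SOME h. h \<in> CL f"
  have "ksmult T c (CL f) = CL (\<lambda>p. c * ?f p)" unfolding tensor_def by simp
  also have "\<dots> = CL (\<lambda>p. c * f p)"
  proof (rule tclass_eq)
    show "(\<lambda>p. c * ?f p) \<in> FE" using tclass_some f free_smult by blast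
    show "(\<lambda>p. c * f p) \<in> FE" using f free_smult by blast
    show "(\<lambda>p. c * ?f p - c * f p) \<in> REL"
      using tensor_rel.rsmult[OF tclass_some(2)[OF f], of c] by (simp add: algebra_simps)
  qed
  finally show ?thesis .
qed

lemma T_zero: "kzero T = CL (\<lambda>_. 0)"
  unfolding tensor_def by simp

lemma T_tmk: "tmk M N Bal m n = CL (gen m n)"
  unfolding tmk_def ..

lemma T_module: "kmodule T"
  unfolding kmodule_def
proof (intro conjI ballI allI)
  show "kzero T \<in> kcarrier T" using T_zero T_carrierI free_zero by simp
next
  fix a b assume "a \<in> kcarrier T" "b \<in> kcarrier T"
  then obtain f g where "f \<in> FE" "g \<in> FE" "a = CL f" "b = CL g" by (metis T_carrierE)
  thus "kadd T a b \<in> kcarrier T" using T_add T_carrierI free_add by simp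
next
  fix c a assume "a \<in> kcarrier T"
  then obtain f where "f \<in> FE" "a = CL f" by (metis T_carrierE)
  thus "ksmult T c a \<in> kcarrier T" using T_smult T_carrierI free_smult by simp
next
  fix a b d assume "a \<in> kcarrier T" "b \<in> kcarrier T" "d \<in> kcarrier T"
  then obtain f g h where "f \<in> FE" "g \<in> FE" "h \<in> FE" "a = CL f" "b = CL g" "d = CL h" by (metis T_carrierE)
  thus "kadd T (kadd T a b) d = kadd T a (kadd T b d)" using T_add free_add by (simp add: add.assoc)
next
  fix a b assume "a \<in> kcarrier T" "b \<in> kcarrier T"
  then obtain f g where "f \<in> FE" "g \<in> FE" "a = CL f" "b = CL g" by (metis T_carrierE)
  thus "kadd T a b = kadd T b a" using T_add by (simp add: add.commute)
next
  fix a assume "a \<in> kcarrier T"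
  then obtain f where "f \<in> FE" "a = CL f" by (metis T_carrierE)
  thus "kadd T (kzero T) a = a" using T_add T_zero free_zero by simp
next
  fix a assume "a \<in> kcarrier T"
  then obtain f where f: "f \<in> FE" "a = CL f" by (metis T_carrierE)
  have "kadd T a (CL (\<lambda>p. - f p)) = kzero T"
    using T_add[OF f(1) free_smult[OF f(1), of "-1"]] T_zero f by simp
  thus "\<exists>b\<in>kcarrier T. kadd T a b = kzero T"
    using T_carrierI[OF free_smult[OF f(1), of "-1"]] by (intro bexI) auto
next
  fix c d a assume "a \<in> kcarrier T"
  then obtain f where "f \<in> FE" "a = CL f" by (metis T_carrierE)
  thus "ksmult T (c + d) a = kadd T (ksmult T c a) (ksmult T d a)"
    using T_smult T_add free_smult by (simp add: algebra_simps)
next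
  fix c a b assume "a \<in> kcarrier T" "b \<in> kcarrier T"
  then obtain f g where "f \<in> FE" "g \<in> FE" "a = CL f" "b = CL g" by (metis T_carrierE)
  thus "ksmult T c (kadd T a b) = kadd T (ksmult T c a) (ksmult T c b)"
    using T_smult T_add free_smult free_add by (simp add: algebra_simps)
next
  fix c d a assume "a \<in> kcarrier T"
  then obtain f where "f \<in> FE" "a = CL f" by (metis T_carrierE)
  thus "ksmult T (c * d) a = ksmult T c (ksmult T d a)"
    using T_smult free_smult by (simp add: algebra_simps)
next
  fix a assume "a \<in> kcarrier T"
  then obtain f where "f \<in> FE" "a = CL f" by (metis T_carrierE)
  thus "ksmult T 1 a = a" using T_smult by simp
qed

lemma tmk_closed: "m \<in> kcarrier M \<Longrightarrow> n \<in> kcarrier N \<Longrightarrow> tmk M N Bal m n \<in> kcarrier T"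
  using T_tmk T_carrierI free_gen by simp

lemma tmk_bilin: "kbilin M N T (tmk M N Bal)"
  unfolding kbilin_def
proof (intro conjI ballI)
  fix m assume m: "m \<in> kcarrier M"
  show "klin N T (tmk M N Bal m)"
  proof (rule klinI)
    fix n assume "n \<in> kcarrier N" thus "tmk M N Bal m n \<in> kcarrier T" using tmk_closed m by simp
  next
    fix n n' assume n: "n \<in> kcarrier N" and n': "n' \<in> kcarrier N"
    show "tmk M N Bal m (kadd N n n') = kadd T (tmk M N Bal m n) (tmk M N Bal m n')"
      unfolding T_tmk T_add[OF free_gen[OF m n] free_gen[OF m n']]
      by (rule tclass_eq) (use m n n' free_gen free_add km_add[OF N] tensor_rel.raddr[of m M n N n' Bal] in
          \<open>auto simp: algebra_simps\<close>)
  next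
    fix c n assume n: "n \<in> kcarrier N"
    show "tmk M N Bal m (ksmult N c n) = ksmult T c (tmk M N Bal m n)"
      unfolding T_tmk T_smult[OF free_gen[OF m n]]
      by (rule tclass_eq) (use m n free_gen free_smult km_smult[OF N] tensor_rel.rsmultr[of m M n N c Bal] in auto)
  qed
next
  fix n assume n: "n \<in> kcarrier N"
  show "klin M T (\<lambda>m. tmk M N Bal m n)"
  proof (rule klinI)
    fix m assume "m \<in> kcarrier M" thus "tmk M N Bal m n \<in> kcarrier T" using tmk_closed n by simp
  next
    fix m m' assume m: "m \<in> kcarrier M" and m': "m' \<in> kcarrier M"
    show "tmk M N Bal (kadd M m m') n = kadd T (tmk M N Bal m n) (tmk M N Bal m' n)"
      unfolding T_tmk T_add[OF free_gen[OF m n] free_gen[OF m' n]]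
      by (rule tclass_eq) (use m m' n free_gen free_add km_add[OF M] tensor_rel.raddl[of m M m' n N Bal] in
          \<open>auto simp: algebra_simps\<close>)
  next
    fix c m assume m: "m \<in> kcarrier M"
    show "tmk M N Bal (ksmult M c m) n = ksmult T c (tmk M N Bal m n)"
      unfolding T_tmk T_smult[OF free_gen[OF m n]]
      by (rule tclass_eq) (use m n free_gen free_smult km_smult[OF M] tensor_rel.rsmultl[of m M n N c Bal] in auto)
  qed
qed

lemma tmk_bal: "(p, q) \<in> Bal \<Longrightarrow> tmk M N Bal (fst p) (snd p) = tmk M N Bal (fst q) (snd q)"
  unfolding T_tmk using Bal
  by (intro tclass_eq free_gen tensor_rel.rbal) (auto simp: mem_Times_iff)

lemma tmk_balanced: "balanced Bal (tmk M N Bal)"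
  unfolding balanced_def using tmk_bal by auto

lemma bilin_closed: "kbilin M N P phi \<Longrightarrow> m \<in> kcarrier M \<Longrightarrow> n \<in> kcarrier N \<Longrightarrow> phi m n \<in> kcarrier P"
  unfolding kbilin_def klin_def by blast

lemma tlift_CL:
  assumes P: "kmodule P" and bil: "kbilin M N P phi" and bal: "balanced Bal phi" and f: "f \<in> FE"
  shows "tlift P phi (CL f) = Lsum P phi f"
proof -
  let ?g = "SOME g. g \<in> CL f"
  note phic = bilin_closed[OF bil]
  have "tlift P phi (CL f) = Lsum P phi ?g" by (rule tlift_Lsum)
  also have "?g = (\<lambda>p. f p + (?g p - f p))" by auto
  also have "Lsum P phi \<dots> = kadd P (Lsum P phi f) (Lsum P phi (\<lambda>p. ?g p - f p))"
    by (rule Lsum_add[OF P phic f rel_free[OF tclass_some(2)[OF f]]])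
  also have "\<dots> = Lsum P phi f"
    using Lsum_rel[OF P phic bil bal tclass_some(2)[OF f]] km_rzero[OF P Lsum_closed[OF P phic f]] by simp
  finally show ?thesis .
qed

lemma tlift_closed:
  assumes P: "kmodule P" and phic: "\<And>m n. m \<in> kcarrier M \<Longrightarrow> n \<in> kcarrier N \<Longrightarrow> phi m n \<in> kcarrier P"
    and X: "X \<in> kcarrier T"
  shows "tlift P phi X \<in> kcarrier P"
proof -
  obtain f where f: "f \<in> FE" "X = CL f" using X by (rule T_carrierE)
  show ?thesis unfolding tlift_Lsum using Lsum_closed[OF P phic tclass_some(1)[OF f(1)]] f(2) by simp
qed

lemma tlift_tmk:
  assumes P: "kmodule P" and bil: "kbilin M N P phi" and bal: "balanced Bal phi"
    and m: "m \<in> kcarrier M" and n: "n \<in> kcarrier N"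
  shows "tlift P phi (tmk M N Bal m n) = phi m n"
  unfolding T_tmk tlift_CL[OF P bil bal free_gen[OF m n]] by (rule Lsum_gen[OF P bilin_closed[OF bil] m n])

lemma tlift_lin:
  assumes P: "kmodule P" and bil: "kbilin M N P phi" and bal: "balanced Bal phi"
  shows "klin T P (tlift P phi)"
proof (rule klinI)
  fix a assume a: "a \<in> kcarrier T" show "tlift P phi a \<in> kcarrier P"
    using tlift_closed[OF P _ a, of phi] bilin_closed[OF bil] by blast
next
  fix a b assume "a \<in> kcarrier T" "b \<in> kcarrier T"
  then obtain f g where "f \<in> FE" "g \<in> FE" "a = CL f" "b = CL g" by (metis T_carrierE)
  thus "tlift P phi (kadd T a b) = kadd P (tlift P phi a) (tlift P phi b)"
    using T_add tlift_CL[OF P bil bal] free_add Lsum_add[OF P bilin_closed[OF bil]] by simp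
next
  fix c a assume "a \<in> kcarrier T"
  then obtain f where "f \<in> FE" "a = CL f" by (metis T_carrierE)
  thus "tlift P phi (ksmult T c a) = ksmult P c (tlift P phi a)"
    using T_smult tlift_CL[OF P bil bal] free_smult Lsum_smult[OF P bilin_closed[OF bil]] by simp
qed

lemma tlift_cong:
  assumes X: "X \<in> kcarrier T"
    and e: "\<And>m n. m \<in> kcarrier M \<Longrightarrow> n \<in> kcarrier N \<Longrightarrow> phi m n = psi m n"
  shows "tlift P phi X = tlift P psi X"
proof -
  obtain f where f: "f \<in> FE" "X = CL f" using X by (rule T_carrierE)
  have g: "(SOME g. g \<in> X) \<in> FE" using tclass_some(1)[OF f(1)] f(2) by simp
  show ?thesis unfolding tlift_Lsum Lsum_def
    by (rule kmsum_cong) (use g e in \<open>auto simp: free_el_def mem_Times_iff\<close>)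
qed

lemma tens_induct:
  assumes X: "X \<in> kcarrier T"
    and z: "Q (kzero T)"
    and a: "\<And>X Y. X \<in> kcarrier T \<Longrightarrow> Y \<in> kcarrier T \<Longrightarrow> Q X \<Longrightarrow> Q Y \<Longrightarrow> Q (kadd T X Y)"
    and t: "\<And>m n. m \<in> kcarrier M \<Longrightarrow> n \<in> kcarrier N \<Longrightarrow> Q (tmk M N Bal m n)"
  shows "Q X"
proof -
  have main: "\<forall>f. f \<in> FE \<and> fsupp f \<subseteq> S \<longrightarrow> Q (CL f)" if S: "finite S" for S
    using S
  proof (induction S rule: finite_induct)
    case empty
    have "\<And>f. fsupp f \<subseteq> {} \<Longrightarrow> f = (\<lambda>_. 0)" unfolding fsupp_def by auto
    thus ?case using z T_zero by auto
  next
    case (insert q S)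
    show ?case
    proof (intro allI impI)
      fix f assume f: "f \<in> FE \<and> fsupp f \<subseteq> insert q S"
      define f' where "f' = f(q := 0)"
      have f'S: "fsupp f' \<subseteq> S" using f unfolding f'_def fsupp_def by auto
      have f'F: "f' \<in> FE" using f unfolding f'_def free_el_def fsupp_def
        by (auto elim: finite_subset[rotated])
      have Qf': "Q (CL f')" using insert.IH f'S f'F by blast
      show "Q (CL f)"
      proof (cases "f q = 0")
        case True
        hence "f = f'" unfolding f'_def by auto
        thus ?thesis using Qf' by simp
      next
        case False
        hence qc: "q \<in> kcarrier M \<times> kcarrier N" using f unfolding free_el_def fsupp_def by auto
        obtain m n where q: "q = (m, n)" "m \<in> kcarrier M" "n \<in> kcarrier N" using qc by auto
        have ff: "f = (\<lambda>p. f' p + (\<lambda>p. f q * gen m n p) p)"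
          unfolding f'_def gen_def q by auto
        have "tmk M N Bal (ksmult M (f q) m) n = ksmult T (f q) (tmk M N Bal m n)"
          using tmk_bilin q(2,3) unfolding kbilin_def klin_def by blast
        hence e2: "CL (\<lambda>p. f q * gen m n p) = tmk M N Bal (ksmult M (f q) m) n"
          unfolding T_tmk T_smult[OF free_gen[OF q(2,3)]] by simp
        have "CL f = kadd T (CL f') (tmk M N Bal (ksmult M (f q) m) n)"
          using T_add[OF f'F free_smult[OF free_gen[OF q(2,3)]], of "f q"] e2 ff by metis
        thus ?thesis
          using a[OF T_carrierI[OF f'F] tmk_closed[OF km_smult[OF M q(2)] q(3)] Qf' t[OF km_smult[OF M q(2)] q(3)]]
          by simp
      qed
    qed
  qed
  obtain f where f: "f \<in> FE" "X = CL f" using X by (rule T_carrierE)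
  thus ?thesis using main[of "fsupp f"] f unfolding free_el_def by auto
qed

lemma lin_unique:
  assumes P: "kmodule P" and F: "klin T P F" and G: "klin T P G"
    and e: "\<And>m n. m \<in> kcarrier M \<Longrightarrow> n \<in> kcarrier N \<Longrightarrow> F (tmk M N Bal m n) = G (tmk M N Bal m n)"
    and X: "X \<in> kcarrier T"
  shows "F X = G X"
  using X
proof (rule tens_induct)
  show "F (kzero T) = G (kzero T)" using klin_zero[OF T_module P F] klin_zero[OF T_module P G] by simp
next
  fix X Y assume "X \<in> kcarrier T" "Y \<in> kcarrier T" "F X = G X" "F Y = G Y"
  thus "F (kadd T X Y) = G (kadd T X Y)" using klin_add[OF F] klin_add[OF G] by simp
qed (rule e)

lemma tlift_param_lin:
  assumes Q: "kmodule Q" and P: "kmodule P" and X: "X \<in> kcarrier T"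
    and L: "\<And>m n. m \<in> kcarrier M \<Longrightarrow> n \<in> kcarrier N \<Longrightarrow> klin Q P (\<lambda>t. phi t m n)"
  shows "klin Q P (\<lambda>t. tlift P (phi t) X)"
proof -
  obtain f0 where f0: "f0 \<in> FE" "X = CL f0" using X by (rule T_carrierE)
  define f where "f = (SOME g. g \<in> X)"
  have f: "f \<in> FE" unfolding f_def f0(2) by (rule tclass_some(1)[OF f0(1)])
  have S: "finite (fsupp f)" "fsupp f \<subseteq> kcarrier M \<times> kcarrier N" using f unfolding free_el_def by auto
  have qc: "\<And>q. q \<in> fsupp f \<Longrightarrow> fst q \<in> kcarrier M \<and> snd q \<in> kcarrier N" using S(2) by auto
  have pc: "\<And>t q. t \<in> kcarrier Q \<Longrightarrow> q \<in> fsupp f \<Longrightarrow> phi t (fst q) (snd q) \<in> kcarrier P"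
  proof -
    fix t q assume t: "t \<in> kcarrier Q" and q: "q \<in> fsupp f"
    show "phi t (fst q) (snd q) \<in> kcarrier P" using klin_carrier[OF L t] qc[OF q] by blast
  qed
  show ?thesis unfolding tlift_Lsum f_def[symmetric] Lsum_def
  proof (rule klinI)
    fix t assume "t \<in> kcarrier Q" thus "kmsum P (\<lambda>q. ksmult P (f q) (phi t (fst q) (snd q))) (fsupp f) \<in> kcarrier P"
      using pc km_smult[OF P] by (intro kmsum_closed[OF P]) auto
  next
    fix t t' assume t: "t \<in> kcarrier Q" and t': "t' \<in> kcarrier Q"
    have "kmsum P (\<lambda>q. ksmult P (f q) (phi (kadd Q t t') (fst q) (snd q))) (fsupp f)
       = kmsum P (\<lambda>q. kadd P (ksmult P (f q) (phi t (fst q) (snd q))) (ksmult P (f q) (phi t' (fst q) (snd q)))) (fsupp f)"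
    proof (rule kmsum_cong)
      fix q assume q: "q \<in> fsupp f"
      have "phi (kadd Q t t') (fst q) (snd q) = kadd P (phi t (fst q) (snd q)) (phi t' (fst q) (snd q))"
        using klin_add[OF L t t'] qc[OF q] by blast
      thus "ksmult P (f q) (phi (kadd Q t t') (fst q) (snd q)) = kadd P (ksmult P (f q) (phi t (fst q) (snd q))) (ksmult P (f q) (phi t' (fst q) (snd q)))"
        using km_addsm[OF P pc[OF t q] pc[OF t' q]] by simp
    qed simp
    also have "\<dots> = kadd P (kmsum P (\<lambda>q. ksmult P (f q) (phi t (fst q) (snd q))) (fsupp f)) (kmsum P (\<lambda>q. ksmult P (f q) (phi t' (fst q) (snd q))) (fsupp f))"
      by (rule kmsum_add[OF P S(1)]) (use pc t t' km_smult[OF P] in auto)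
    finally show "kmsum P (\<lambda>q. ksmult P (f q) (phi (kadd Q t t') (fst q) (snd q))) (fsupp f) = kadd P (kmsum P (\<lambda>q. ksmult P (f q) (phi t (fst q) (snd q))) (fsupp f)) (kmsum P (\<lambda>q. ksmult P (f q) (phi t' (fst q) (snd q))) (fsupp f))" .
  next
    fix c t assume t: "t \<in> kcarrier Q"
    have "kmsum P (\<lambda>q. ksmult P (f q) (phi (ksmult Q c t) (fst q) (snd q))) (fsupp f)
       = kmsum P (\<lambda>q. ksmult P c (ksmult P (f q) (phi t (fst q) (snd q)))) (fsupp f)"
    proof (rule kmsum_cong)
      fix q assume q: "q \<in> fsupp f"
      have "phi (ksmult Q c t) (fst q) (snd q) = ksmult P c (phi t (fst q) (snd q))"
        using klin_smult[OF L t] qc[OF q] by blast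
      thus "ksmult P (f q) (phi (ksmult Q c t) (fst q) (snd q)) = ksmult P c (ksmult P (f q) (phi t (fst q) (snd q)))"
        using km_smsm[OF P pc[OF t q], of "f q" c] km_smsm[OF P pc[OF t q], of c "f q"] by (simp add: mult.commute)
    qed simp
    also have "\<dots> = ksmult P c (kmsum P (\<lambda>q. ksmult P (f q) (phi t (fst q) (snd q))) (fsupp f))"
      by (rule kmsum_smult[OF P S(1), symmetric]) (use pc t km_smult[OF P] in auto)
    finally show "kmsum P (\<lambda>q. ksmult P (f q) (phi (ksmult Q c t) (fst q) (snd q))) (fsupp f) = ksmult P c (kmsum P (\<lambda>q. ksmult P (f q) (phi t (fst q) (snd q))) (fsupp f))" .
  qed
qed

end

lemma tens_kt: "kmodule M \<Longrightarrow> kmodule N \<Longrightarrow> tens M N {}"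
  unfolding tens_def by simp

lemma balanced_empty[simp]: "balanced {} phi"
  unfolding balanced_def by simp

lemma kbilinI:
  assumes "\<And>m. m \<in> kcarrier M \<Longrightarrow> klin N P (\<lambda>n. phi m n)"
    and "\<And>n. n \<in> kcarrier N \<Longrightarrow> klin M P (\<lambda>m. phi m n)"
  shows "kbilin M N P phi"
  unfolding kbilin_def using assms by simp

lemma kbilin_l: "kbilin M N P phi \<Longrightarrow> n \<in> kcarrier N \<Longrightarrow> klin M P (\<lambda>m. phi m n)"
  unfolding kbilin_def by simp
lemma kbilin_r: "kbilin M N P phi \<Longrightarrow> m \<in> kcarrier M \<Longrightarrow> klin N P (\<lambda>n. phi m n)"
  unfolding kbilin_def by simp

lemma klin_id: "klin M M (\<lambda>t. t)"
  unfolding klin_def by simp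

lemma klin_bilin_l: "kbilin M N P phi \<Longrightarrow> klin U M F \<Longrightarrow> n \<in> kcarrier N \<Longrightarrow> klin U P (\<lambda>t. phi (F t) n)"
  using klin_comp kbilin_l by fast
lemma klin_bilin_r: "kbilin M N P phi \<Longrightarrow> klin U N F \<Longrightarrow> m \<in> kcarrier M \<Longrightarrow> klin U P (\<lambda>t. phi m (F t))"
  using klin_comp kbilin_r by fast

context tens begin

lemma tlift_comp:
  assumes P: "kmodule P" and Q: "kmodule Q" and g: "klin P Q g"
    and bil: "kbilin M N P phi" and bal: "balanced Bal phi" and X: "X \<in> kcarrier T"
  shows "g (tlift P phi X) = tlift Q (\<lambda>m n. g (phi m n)) X"
proof (rule lin_unique[OF Q _ _ _ X])
  show "klin T Q (\<lambda>X. g (tlift P phi X))" by (rule klin_comp[OF tlift_lin[OF P bil bal] g])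
  have bil2: "kbilin M N Q (\<lambda>m n. g (phi m n))"
    by (rule kbilinI) (use klin_comp kbilin_l[OF bil] kbilin_r[OF bil] g in fast)+
  have bal2: "balanced Bal (\<lambda>m n. g (phi m n))" using bal unfolding balanced_def by auto
  show "klin T Q (tlift Q (\<lambda>m n. g (phi m n)))" by (rule tlift_lin[OF Q bil2 bal2])
  fix m n assume m: "m \<in> kcarrier M" and n: "n \<in> kcarrier N"
  show "g (tlift P phi (tmk M N Bal m n)) = tlift Q (\<lambda>m n. g (phi m n)) (tmk M N Bal m n)"
    using tlift_tmk[OF P bil bal m n] tlift_tmk[OF Q bil2 bal2 m n] by simp
qed

lemma tlift_bilin:
  assumes U: "kmodule U" and V: "kmodule V" and P: "kmodule P" and X: "X \<in> kcarrier T"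
    and B: "\<And>m n. m \<in> kcarrier M \<Longrightarrow> n \<in> kcarrier N \<Longrightarrow> kbilin U V P (\<lambda>u v. psi u v m n)"
  shows "kbilin U V P (\<lambda>u v. tlift P (psi u v) X)"
proof (rule kbilinI)
  fix u assume u: "u \<in> kcarrier U"
  show "klin V P (\<lambda>v. tlift P (psi u v) X)"
    by (rule tlift_param_lin[OF V P X]) (use kbilin_r[OF B u] in auto)
next
  fix v assume v: "v \<in> kcarrier V"
  show "klin U P (\<lambda>u. tlift P (psi u v) X)"
    by (rule tlift_param_lin[OF U P X]) (use kbilin_l[OF B v] in auto)
qed

end

lemma tlift_fubini:
  assumes T1: "tens M N Bal" and T2: "tens M' N' Bal'" and P: "kmodule P"
    and X: "X \<in> kcarrier (tensor M N Bal)" and Y: "Y \<in> kcarrier (tensor M' N' Bal')"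
    and B1: "\<And>p q. p \<in> kcarrier M' \<Longrightarrow> q \<in> kcarrier N' \<Longrightarrow> kbilin M N P (\<lambda>m n. psi m n p q)"
    and b1: "\<And>p q. p \<in> kcarrier M' \<Longrightarrow> q \<in> kcarrier N' \<Longrightarrow> balanced Bal (\<lambda>m n. psi m n p q)"
    and B2: "\<And>m n. m \<in> kcarrier M \<Longrightarrow> n \<in> kcarrier N \<Longrightarrow> kbilin M' N' P (psi m n)"
    and b2: "\<And>m n. m \<in> kcarrier M \<Longrightarrow> n \<in> kcarrier N \<Longrightarrow> balanced Bal' (psi m n)"
  shows "tlift P (\<lambda>m n. tlift P (psi m n) Y) X = tlift P (\<lambda>p q. tlift P (\<lambda>m n. psi m n p q) X) Y"
proof -
  interpret t1: tens M N Bal by (rule T1)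
  interpret t2: tens M' N' Bal' by (rule T2)
  have bilA: "kbilin M N P (\<lambda>m n. tlift P (psi m n) Y)"
    by (rule t2.tlift_bilin[OF t1.M t1.N P Y B1])
  have balA: "balanced Bal (\<lambda>m n. tlift P (psi m n) Y)"
    unfolding balanced_def
  proof (clarify)
    fix a b c d assume ab: "((a, b), (c, d)) \<in> Bal"
    hence C: "a \<in> kcarrier M" "b \<in> kcarrier N" "c \<in> kcarrier M" "d \<in> kcarrier N" using t1.Bal by auto
    show "tlift P (psi (fst (a, b)) (snd (a, b))) Y = tlift P (psi (fst (c, d)) (snd (c, d))) Y"
    proof (simp, rule t2.tlift_cong[OF Y])
      fix p q assume "p \<in> kcarrier M'" "q \<in> kcarrier N'"
      thus "psi a b p q = psi c d p q" using b1[of p q] ab unfolding balanced_def by fastforce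
    qed
  qed
  show ?thesis
  proof (rule t1.lin_unique[OF P t1.tlift_lin[OF P bilA balA] _ _ X])
    show "klin (tensor M N Bal) P (\<lambda>X. tlift P (\<lambda>p q. tlift P (\<lambda>m n. psi m n p q) X) Y)"
      by (rule t2.tlift_param_lin[OF t1.T_module P Y]) (rule t1.tlift_lin[OF P B1 b1])
    fix m n assume m: "m \<in> kcarrier M" and n: "n \<in> kcarrier N"
    show "tlift P (\<lambda>m n. tlift P (psi m n) Y) (tmk M N Bal m n) =
          tlift P (\<lambda>p q. tlift P (\<lambda>m n. psi m n p q) (tmk M N Bal m n)) Y"
      unfolding t1.tlift_tmk[OF P bilA balA m n]
      by (rule t2.tlift_cong[OF Y], rule t1.tlift_tmk[OF P B1 b1 m n, symmetric]) auto
  qed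
qed

locale gctx =
  fixes H :: "('x, 'k::comm_ring_1, 'h) shcat" and A :: "('x, 'k, 'a, 'h) comcat"
  assumes SH: "semi_hopf_cat H" and CA: "comodule_cat H A"
begin

abbreviation "HM \<equiv> homs H"
abbreviation "AM \<equiv> homs A"

lemma Hcat: "klincat H" using SH unfolding semi_hopf_cat_def by (elim conjE) blast
lemma Acat: "klincat A" using CA unfolding comodule_cat_def by (elim conjE) blast

lemma HMmod[simp,intro]: "kmodule (HM x y)" using Hcat unfolding klincat_def by (elim conjE) blast
lemma AMmod[simp,intro]: "kmodule (AM x y)" using Acat unfolding klincat_def by (elim conjE) blast

lemma Hcmp_bil: "kbilin (HM x y) (HM y z) (HM x z) (cmp H x y z)" using Hcat unfolding klincat_def by (elim conjE) blast
lemma Acmp_bil: "kbilin (AM x y) (AM y z) (AM x z) (cmp A x y z)" using Acat unfolding klincat_def by (elim conjE) blast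

lemma Hcmp_closed[intro]: "a \<in> kcarrier (HM x y) \<Longrightarrow> b \<in> kcarrier (HM y z) \<Longrightarrow> cmp H x y z a b \<in> kcarrier (HM x z)"
  using Hcmp_bil unfolding kbilin_def klin_def by blast
lemma Acmp_closed[intro]: "a \<in> kcarrier (AM x y) \<Longrightarrow> b \<in> kcarrier (AM y z) \<Longrightarrow> cmp A x y z a b \<in> kcarrier (AM x z)"
  using Acmp_bil unfolding kbilin_def klin_def by blast

lemma Hassoc: "a \<in> kcarrier (HM x y) \<Longrightarrow> b \<in> kcarrier (HM y z) \<Longrightarrow> c \<in> kcarrier (HM z w) \<Longrightarrow>
    cmp H x z w (cmp H x y z a b) c = cmp H x y w a (cmp H y z w b c)"
  using Hcat unfolding klincat_def by (elim conjE) blast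
lemma Aassoc: "a \<in> kcarrier (AM x y) \<Longrightarrow> b \<in> kcarrier (AM y z) \<Longrightarrow> c \<in> kcarrier (AM z w) \<Longrightarrow>
    cmp A x z w (cmp A x y z a b) c = cmp A x y w a (cmp A y z w b c)"
  using Acat unfolding klincat_def by (elim conjE) blast

lemma Hid[intro]: "idm H x \<in> kcarrier (HM x x)" using Hcat unfolding klincat_def by (elim conjE) blast
lemma Aid[intro]: "idm A x \<in> kcarrier (AM x x)" using Acat unfolding klincat_def by (elim conjE) blast

lemma Hidl[simp]: "a \<in> kcarrier (HM x y) \<Longrightarrow> cmp H x x y (idm H x) a = a" using Hcat unfolding klincat_def by (elim conjE) blast
lemma Hidr[simp]: "a \<in> kcarrier (HM x y) \<Longrightarrow> cmp H x y y a (idm H y) = a" using Hcat unfolding klincat_def by (elim conjE) blast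
lemma Aidl[simp]: "a \<in> kcarrier (AM x y) \<Longrightarrow> cmp A x x y (idm A x) a = a" using Acat unfolding klincat_def by (elim conjE) blast
lemma Aidr[simp]: "a \<in> kcarrier (AM x y) \<Longrightarrow> cmp A x y y a (idm A y) = a" using Acat unfolding klincat_def by (elim conjE) blast

lemma coalg: "kcoalgebra (HM x y) (cop H x y) (cou H x y)" using SH unfolding semi_hopf_cat_def by (elim conjE) blast
lemma cop_lin: "klin (HM x y) (kt (HM x y) (HM x y)) (cop H x y)" using coalg[of x y] unfolding kcoalgebra_def by (elim conjE) blast
lemma cou_scal: "klin_scalar (HM x y) (cou H x y)" using coalg[of x y] unfolding kcoalgebra_def by (elim conjE) blast
lemma cop_coassoc: "h \<in> kcarrier (HM x y) \<Longrightarrow>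
        tlift (kt (kt (HM x y) (HM x y)) (HM x y)) (\<lambda>a b. ktmk (kt (HM x y) (HM x y)) (HM x y) (cop H x y a) b) (cop H x y h) =
        tlift (kt (kt (HM x y) (HM x y)) (HM x y))
          (\<lambda>a b. tlift (kt (kt (HM x y) (HM x y)) (HM x y)) (\<lambda>c d. ktmk (kt (HM x y) (HM x y)) (HM x y) (ktmk (HM x y) (HM x y) a c) d) (cop H x y b)) (cop H x y h)"
  using coalg[of x y] unfolding kcoalgebra_def by (elim conjE) blast
lemma cop_counit_l: "h \<in> kcarrier (HM x y) \<Longrightarrow> tlift (HM x y) (\<lambda>a b. ksmult (HM x y) (cou H x y a) b) (cop H x y h) = h"
  using coalg[of x y] unfolding kcoalgebra_def by (elim conjE) blast
lemma cop_counit_r: "h \<in> kcarrier (HM x y) \<Longrightarrow> tlift (HM x y) (\<lambda>a b. ksmult (HM x y) (cou H x y b) a) (cop H x y h) = h"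
  using coalg[of x y] unfolding kcoalgebra_def by (elim conjE) blast
lemma cop_mult: "h \<in> kcarrier (HM x y) \<Longrightarrow> h' \<in> kcarrier (HM y z) \<Longrightarrow>
        cop H x z (cmp H x y z h h') =
          tlift (kt (HM x z) (HM x z))
            (\<lambda>a b. tlift (kt (HM x z) (HM x z))
               (\<lambda>c d. ktmk (HM x z) (HM x z) (cmp H x y z a c) (cmp H x y z b d))
               (cop H y z h'))
            (cop H x y h)"
  using SH unfolding semi_hopf_cat_def by (elim conjE) blast
lemma cop_id: "cop H x x (idm H x) = ktmk (HM x x) (HM x x) (idm H x) (idm H x)"
  using SH unfolding semi_hopf_cat_def by (elim conjE) blast
lemma cou_mult: "h \<in> kcarrier (HM x y) \<Longrightarrow> h' \<in> kcarrier (HM y z) \<Longrightarrow>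
        cou H x z (cmp H x y z h h') = cou H x y h * cou H y z h'"
  using SH unfolding semi_hopf_cat_def by (elim conjE) blast
lemma cou_id: "cou H x x (idm H x) = 1"
  using SH unfolding semi_hopf_cat_def by (elim conjE) blast

lemma coact_lin: "klin (AM x y) (kt (AM x y) (HM x y)) (coact A x y)"
  using CA[unfolded comodule_cat_def, THEN conjunct2, THEN conjunct1] by blast
lemma coact_coassoc: "a \<in> kcarrier (AM x y) \<Longrightarrow>
        tlift (kt (kt (AM x y) (HM x y)) (HM x y))
          (\<lambda>b g. ktmk (kt (AM x y) (HM x y)) (HM x y) (coact A x y b) g)
          (coact A x y a) =
        tlift (kt (kt (AM x y) (HM x y)) (HM x y))
          (\<lambda>b g. tlift (kt (kt (AM x y) (HM x y)) (HM x y))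
             (\<lambda>g1 g2. ktmk (kt (AM x y) (HM x y)) (HM x y)
                         (ktmk (AM x y) (HM x y) b g1) g2)
             (cop H x y g))
          (coact A x y a)"
  using CA[unfolded comodule_cat_def, THEN conjunct2, THEN conjunct2, THEN conjunct1] by blast
lemma coact_counit: "a \<in> kcarrier (AM x y) \<Longrightarrow>
        tlift (AM x y) (\<lambda>b g. ksmult (AM x y) (cou H x y g) b) (coact A x y a) = a"
  using CA[unfolded comodule_cat_def, THEN conjunct2, THEN conjunct2, THEN conjunct2, THEN conjunct1] by blast
lemma coact_mult: "a \<in> kcarrier (AM x y) \<Longrightarrow> b \<in> kcarrier (AM y z) \<Longrightarrow>
        coact A x z (cmp A x y z a b) =
          tlift (kt (AM x z) (HM x z))
            (\<lambda>a0 a1. tlift (kt (AM x z) (HM x z))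
               (\<lambda>b0 b1. ktmk (AM x z) (HM x z) (cmp A x y z a0 b0) (cmp H x y z a1 b1))
               (coact A y z b))
            (coact A x y a)"
  using CA[unfolded comodule_cat_def, THEN conjunct2, THEN conjunct2, THEN conjunct2, THEN conjunct2, THEN conjunct1] by blast
lemma coact_id: "coact A x x (idm A x) = ktmk (AM x x) (HM x x) (idm A x) (idm H x)"
  using CA[unfolded comodule_cat_def, THEN conjunct2, THEN conjunct2, THEN conjunct2, THEN conjunct2, THEN conjunct2] by blast

end

lemma kt_mod[intro]: "kmodule M \<Longrightarrow> kmodule N \<Longrightarrow> kmodule (tensor M N {})"
  by (rule tens.T_module[OF tens_kt])

lemma L_tlift_param:
  "X \<in> kcarrier (tensor M N Bal) \<Longrightarrow> tens M N Bal \<Longrightarrow> kmodule U \<Longrightarrow> kmodule P \<Longrightarrow>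
   (\<And>m n. m \<in> kcarrier M \<Longrightarrow> n \<in> kcarrier N \<Longrightarrow> klin U P (\<lambda>t. phi t m n)) \<Longrightarrow>
   klin U P (\<lambda>t. tlift P (phi t) X)"
  by (rule tens.tlift_param_lin)

lemma L_tlift_arg:
  "klin U (tensor M N Bal) F \<Longrightarrow> tens M N Bal \<Longrightarrow> kmodule P \<Longrightarrow> kbilin M N P phi \<Longrightarrow> balanced Bal phi \<Longrightarrow>
   klin U P (\<lambda>t. tlift P phi (F t))"
  by (rule klin_comp, assumption, rule tens.tlift_lin)

lemma L_tmk_l:
  "tens M N Bal \<Longrightarrow> klin U M F \<Longrightarrow> n \<in> kcarrier N \<Longrightarrow> klin U (tensor M N Bal) (\<lambda>t. tmk M N Bal (F t) n)"
  by (rule klin_bilin_l[OF tens.tmk_bilin])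

lemma L_tmk_r:
  "tens M N Bal \<Longrightarrow> klin U N F \<Longrightarrow> m \<in> kcarrier M \<Longrightarrow> klin U (tensor M N Bal) (\<lambda>t. tmk M N Bal m (F t))"
  by (rule klin_bilin_r[OF tens.tmk_bilin])

lemma C_tlift:
  "X \<in> kcarrier (tensor M N Bal) \<Longrightarrow> tens M N Bal \<Longrightarrow> kmodule P \<Longrightarrow>
   (\<And>m n. m \<in> kcarrier M \<Longrightarrow> n \<in> kcarrier N \<Longrightarrow> phi m n \<in> kcarrier P) \<Longrightarrow>
   tlift P phi X \<in> kcarrier P"
  by (rule tens.tlift_closed)

lemma C_tmk: "tens M N Bal \<Longrightarrow> m \<in> kcarrier M \<Longrightarrow> n \<in> kcarrier N \<Longrightarrow> tmk M N Bal m n \<in> kcarrier (tensor M N Bal)"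
  by (rule tens.tmk_closed)

lemma L_smult_arg: "kmodule P \<Longrightarrow> klin U P F \<Longrightarrow> klin U P (\<lambda>t. ksmult P c (F t))"
  by (rule klin_comp[OF _ klin_smult_map])

lemma C_smult: "kmodule P \<Longrightarrow> a \<in> kcarrier P \<Longrightarrow> ksmult P c a \<in> kcarrier P"
  by (rule km_smult)

context gctx begin

lemma L_cmpA_l: "klin U (AM x y) F \<Longrightarrow> b \<in> kcarrier (AM y z) \<Longrightarrow> klin U (AM x z) (\<lambda>t. cmp A x y z (F t) b)"
  by (rule klin_bilin_l[OF Acmp_bil])
lemma L_cmpA_r: "klin U (AM y z) F \<Longrightarrow> a \<in> kcarrier (AM x y) \<Longrightarrow> klin U (AM x z) (\<lambda>t. cmp A x y z a (F t))"
  by (rule klin_bilin_r[OF Acmp_bil])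
lemma L_cmpH_l: "klin U (HM x y) F \<Longrightarrow> b \<in> kcarrier (HM y z) \<Longrightarrow> klin U (HM x z) (\<lambda>t. cmp H x y z (F t) b)"
  by (rule klin_bilin_l[OF Hcmp_bil])
lemma L_cmpH_r: "klin U (HM y z) F \<Longrightarrow> a \<in> kcarrier (HM x y) \<Longrightarrow> klin U (HM x z) (\<lambda>t. cmp H x y z a (F t))"
  by (rule klin_bilin_r[OF Hcmp_bil])
lemma L_coact: "klin U (AM x y) F \<Longrightarrow> klin U (kt (AM x y) (HM x y)) (\<lambda>t. coact A x y (F t))"
  by (rule klin_comp[OF _ coact_lin])
lemma L_cop: "klin U (HM x y) F \<Longrightarrow> klin U (kt (HM x y) (HM x y)) (\<lambda>t. cop H x y (F t))"
  by (rule klin_comp[OF _ cop_lin])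
lemma C_coact: "a \<in> kcarrier (AM x y) \<Longrightarrow> coact A x y a \<in> kcarrier (kt (AM x y) (HM x y))"
  by (rule klin_carrier[OF coact_lin])
lemma C_cop: "a \<in> kcarrier (HM x y) \<Longrightarrow> cop H x y a \<in> kcarrier (kt (HM x y) (HM x y))"
  by (rule klin_carrier[OF cop_lin])

lemma L_cou:
  assumes P: "kmodule P" and F: "klin U (HM x y) F" and a: "a \<in> kcarrier P"
  shows "klin U P (\<lambda>t. ksmult P (cou H x y (F t)) a)"
proof (rule klinI)
  fix t assume "t \<in> kcarrier U" thus "ksmult P (cou H x y (F t)) a \<in> kcarrier P" using km_smult[OF P a] by simp
next
  fix t t' assume t: "t \<in> kcarrier U" and t': "t' \<in> kcarrier U"
  have "cou H x y (F (kadd U t t')) = cou H x y (F t) + cou H x y (F t')"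
    using klin_add[OF F t t'] cou_scal klin_carrier[OF F] t t' unfolding klin_scalar_def by simp
  thus "ksmult P (cou H x y (F (kadd U t t'))) a = kadd P (ksmult P (cou H x y (F t)) a) (ksmult P (cou H x y (F t')) a)"
    using km_sadd[OF P a] by simp
next
  fix c t assume t: "t \<in> kcarrier U"
  have "cou H x y (F (ksmult U c t)) = c * cou H x y (F t)"
    using klin_smult[OF F t] cou_scal klin_carrier[OF F] t unfolding klin_scalar_def by simp
  thus "ksmult P (cou H x y (F (ksmult U c t))) a = ksmult P c (ksmult P (cou H x y (F t)) a)"
    using km_smsm[OF P a] by simp
qed

lemma tens_bb: "tens (AM z x) (AM x y) (bbal H A z x y)"
  unfolding tens_def bbal_def coinv_def by auto

lemmas Lrules = kbilinI L_tlift_param L_tlift_arg L_tmk_l L_tmk_r L_smult_arg L_cmpA_l L_cmpA_r L_cmpH_l L_cmpH_r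
  L_coact L_cop L_cou klin_id coact_lin cop_lin
lemmas Crules = C_tlift C_tmk C_smult Acmp_closed Hcmp_closed Aid Hid C_coact C_cop tens_kt tens_bb kt_mod
  AMmod HMmod balanced_empty

end

lemma kt_tmk: "kmodule M \<Longrightarrow> kmodule N \<Longrightarrow> kmodule P \<Longrightarrow> kbilin M N P phi \<Longrightarrow>
  m \<in> kcarrier M \<Longrightarrow> n \<in> kcarrier N \<Longrightarrow> tlift P phi (ktmk M N m n) = phi m n"
  by (rule tens.tlift_tmk[OF tens_kt]) auto

lemma t_tmk: "tens M N Bal \<Longrightarrow> kmodule P \<Longrightarrow> kbilin M N P phi \<Longrightarrow> balanced Bal phi \<Longrightarrow>
  m \<in> kcarrier M \<Longrightarrow> n \<in> kcarrier N \<Longrightarrow> tlift P phi (tmk M N Bal m n) = phi m n"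
  by (rule tens.tlift_tmk)

lemma t_comp: "X \<in> kcarrier (tensor M N Bal) \<Longrightarrow> tens M N Bal \<Longrightarrow> kmodule P \<Longrightarrow> kmodule Q \<Longrightarrow> klin P Q g \<Longrightarrow>
  kbilin M N P phi \<Longrightarrow> balanced Bal phi \<Longrightarrow> g (tlift P phi X) = tlift Q (\<lambda>m n. g (phi m n)) X"
  by (rule tens.tlift_comp)

lemma t_cong: "X \<in> kcarrier (tensor M N Bal) \<Longrightarrow> tens M N Bal \<Longrightarrow>
  (\<And>m n. m \<in> kcarrier M \<Longrightarrow> n \<in> kcarrier N \<Longrightarrow> phi m n = psi m n) \<Longrightarrow> tlift P phi X = tlift P psi X"
  by (rule tens.tlift_cong)

lemma t_unique: "X \<in> kcarrier (tensor M N Bal) \<Longrightarrow> tens M N Bal \<Longrightarrow> kmodule P \<Longrightarrow>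
  klin (tensor M N Bal) P F \<Longrightarrow> klin (tensor M N Bal) P G \<Longrightarrow>
  (\<And>m n. m \<in> kcarrier M \<Longrightarrow> n \<in> kcarrier N \<Longrightarrow> F (tmk M N Bal m n) = G (tmk M N Bal m n)) \<Longrightarrow> F X = G X"
  by (rule tens.lin_unique)

lemma t_lin: "tens M N Bal \<Longrightarrow> kmodule P \<Longrightarrow> kbilin M N P phi \<Longrightarrow> balanced Bal phi \<Longrightarrow>
  klin (tensor M N Bal) P (tlift P phi)"
  by (rule tens.tlift_lin)

context gctx begin

lemma balanced_bbalI:
  assumes "\<And>a c r. a \<in> kcarrier (AM z x) \<Longrightarrow> c \<in> coinv H A x \<Longrightarrow> r \<in> kcarrier (AM x y) \<Longrightarrow>
     phi (cmp A z x x a c) r = phi a (cmp A x x y c r)"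
  shows "balanced (bbal H A z x y) phi"
  unfolding balanced_def bbal_def using assms by auto

lemma coinvD: "c \<in> coinv H A x \<Longrightarrow> c \<in> kcarrier (AM x x)"
  "c \<in> coinv H A x \<Longrightarrow> coact A x x c = ktmk (AM x x) (HM x x) c (idm H x)"
  unfolding coinv_def by auto

lemma tmk_bb: "a \<in> kcarrier (AM z x) \<Longrightarrow> c \<in> coinv H A x \<Longrightarrow> r \<in> kcarrier (AM x y) \<Longrightarrow>
  tmk (AM z x) (AM x y) (bbal H A z x y) (cmp A z x x a c) r = tmk (AM z x) (AM x y) (bbal H A z x y) a (cmp A x x y c r)"
  using tens.tmk_bal[OF tens_bb, of "(cmp A z x x a c, r)" "(a, cmp A x x y c r)" z x y]
  unfolding bbal_def by auto

lemma coact_coinv_l: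
  assumes c: "c \<in> coinv H A x" and r: "r \<in> kcarrier (AM x y)"
  shows "coact A x y (cmp A x x y c r) = tlift (kt (AM x y) (HM x y)) (\<lambda>b0 b1. ktmk (AM x y) (HM x y) (cmp A x x y c b0) b1) (coact A x y r)"
proof -
  have cc: "c \<in> kcarrier (AM x x)" by (rule coinvD(1)[OF c])
  have "coact A x y (cmp A x x y c r) = tlift (kt (AM x y) (HM x y))
            (\<lambda>a0 a1. tlift (kt (AM x y) (HM x y))
               (\<lambda>b0 b1. ktmk (AM x y) (HM x y) (cmp A x x y a0 b0) (cmp H x x y a1 b1))
               (coact A x y r)) (ktmk (AM x x) (HM x x) c (idm H x))"
    using coact_mult[OF cc r] coinvD(2)[OF c] by simp
  also have "\<dots> = tlift (kt (AM x y) (HM x y))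
               (\<lambda>b0 b1. ktmk (AM x y) (HM x y) (cmp A x x y c b0) (cmp H x x y (idm H x) b1))
               (coact A x y r)"
    by (rule kt_tmk; (rule Lrules Crules cc r | assumption)+)
  also have "\<dots> = tlift (kt (AM x y) (HM x y)) (\<lambda>b0 b1. ktmk (AM x y) (HM x y) (cmp A x x y c b0) b1) (coact A x y r)"
    by (rule t_cong, (rule Crules r | assumption)+) simp
  finally show ?thesis .
qed

lemma coact_coinv_r:
  assumes c: "c \<in> coinv H A y" and r: "r \<in> kcarrier (AM x y)"
  shows "coact A x y (cmp A x y y r c) = tlift (kt (AM x y) (HM x y)) (\<lambda>a0 a1. ktmk (AM x y) (HM x y) (cmp A x y y a0 c) a1) (coact A x y r)"
proof -
  have cc: "c \<in> kcarrier (AM y y)" by (rule coinvD(1)[OF c])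
  have "coact A x y (cmp A x y y r c) = tlift (kt (AM x y) (HM x y))
            (\<lambda>a0 a1. tlift (kt (AM x y) (HM x y))
               (\<lambda>b0 b1. ktmk (AM x y) (HM x y) (cmp A x y y a0 b0) (cmp H x y y a1 b1))
               (ktmk (AM y y) (HM y y) c (idm H y))) (coact A x y r)"
    using coact_mult[OF r cc] coinvD(2)[OF c] by simp
  also have "\<dots> = tlift (kt (AM x y) (HM x y)) (\<lambda>a0 a1. ktmk (AM x y) (HM x y) (cmp A x y y a0 c) a1) (coact A x y r)"
  proof (rule t_cong, (rule Crules r | assumption)+)
    fix a0 a1 assume a0: "a0 \<in> kcarrier (AM x y)" and a1: "a1 \<in> kcarrier (HM x y)"
    have "tlift (kt (AM x y) (HM x y))
               (\<lambda>b0 b1. ktmk (AM x y) (HM x y) (cmp A x y y a0 b0) (cmp H x y y a1 b1))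
               (ktmk (AM y y) (HM y y) c (idm H y)) = ktmk (AM x y) (HM x y) (cmp A x y y a0 c) (cmp H x y y a1 (idm H y))"
      by (rule kt_tmk; (rule Lrules Crules cc a0 a1 | assumption)+)
    thus "tlift (kt (AM x y) (HM x y))
               (\<lambda>b0 b1. ktmk (AM x y) (HM x y) (cmp A x y y a0 b0) (cmp H x y y a1 b1))
               (ktmk (AM y y) (HM y y) c (idm H y)) = ktmk (AM x y) (HM x y) (cmp A x y y a0 c) a1"
      using a1 by simp
  qed
  finally show ?thesis .
qed

end

context gctx begin

abbreviation "BT z x y \<equiv> tensor (AM z x) (AM x y) (bbal H A z x y)"

lemma btens_eq: "btens H A z x y = BT z x y" unfolding btens_def ..
lemma btmk_eq: "btmk H A z x y = tmk (AM z x) (AM x y) (bbal H A z x y)" unfolding btmk_def by (rule ext)+ simp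

lemma BT_mod[intro]: "kmodule (BT z x y)" by (rule tens.T_module[OF tens_bb])

definition "Pcan z x y a a' = tlift (kt (AM z y) (HM x y))
        (\<lambda>c g. ktmk (AM z y) (HM x y) (cmp A z x y a c) g) (coact A x y a')"

lemma Pcan_bil: "kbilin (AM z x) (AM x y) (kt (AM z y) (HM x y)) (Pcan z x y)"
  unfolding Pcan_def by (rule Lrules Crules | assumption)+

lemma Pcan_closed[intro]: "a \<in> kcarrier (AM z x) \<Longrightarrow> a' \<in> kcarrier (AM x y) \<Longrightarrow> Pcan z x y a a' \<in> kcarrier (kt (AM z y) (HM x y))"
  using Pcan_bil unfolding kbilin_def klin_def by blast

lemma Pcan_bal: "balanced (bbal H A z x y) (Pcan z x y)"
proof (rule balanced_bbalI)
  fix a c r assume a: "a \<in> kcarrier (AM z x)" and c: "c \<in> coinv H A x" and r: "r \<in> kcarrier (AM x y)"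
  have cc: "c \<in> kcarrier (AM x x)" by (rule coinvD(1)[OF c])
  let ?G = "tlift (kt (AM z y) (HM x y)) (\<lambda>c' g. ktmk (AM z y) (HM x y) (cmp A z x y a c') g)"
  have "Pcan z x y a (cmp A x x y c r) = ?G (tlift (kt (AM x y) (HM x y)) (\<lambda>b0 b1. ktmk (AM x y) (HM x y) (cmp A x x y c b0) b1) (coact A x y r))"
    unfolding Pcan_def coact_coinv_l[OF c r] ..
  also have "\<dots> = tlift (kt (AM z y) (HM x y)) (\<lambda>b0 b1. ?G (ktmk (AM x y) (HM x y) (cmp A x x y c b0) b1)) (coact A x y r)"
    by (rule t_comp; (rule Lrules Crules tens.tlift_lin cc r a | assumption)+)
  also have "\<dots> = tlift (kt (AM z y) (HM x y)) (\<lambda>b0 b1. ktmk (AM z y) (HM x y) (cmp A z x y a (cmp A x x y c b0)) b1) (coact A x y r)"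
  proof (rule t_cong, (rule Crules r | assumption)+)
    fix b0 b1 assume b0: "b0 \<in> kcarrier (AM x y)" and b1: "b1 \<in> kcarrier (HM x y)"
    show "?G (ktmk (AM x y) (HM x y) (cmp A x x y c b0) b1) = ktmk (AM z y) (HM x y) (cmp A z x y a (cmp A x x y c b0)) b1"
      by (rule kt_tmk; (rule Lrules Crules cc a b0 b1 | assumption)+)
  qed
  also have "\<dots> = Pcan z x y (cmp A z x x a c) r"
    unfolding Pcan_def by (rule t_cong, (rule Crules r | assumption)+) (simp add: Aassoc[OF a cc])
  finally show "Pcan z x y (cmp A z x x a c) r = Pcan z x y a (cmp A x x y c r)" ..
qed

lemma can_eq: "can H A z x y = tlift (kt (AM z y) (HM x y)) (Pcan z x y)"
  unfolding can_def Pcan_def ..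

lemma can_lin: "klin (BT z x y) (kt (AM z y) (HM x y)) (can H A z x y)"
  unfolding can_eq by (rule t_lin[OF tens_bb kt_mod[OF AMmod HMmod] Pcan_bil Pcan_bal])

lemma can_tmk: "a \<in> kcarrier (AM z x) \<Longrightarrow> a' \<in> kcarrier (AM x y) \<Longrightarrow>
   can H A z x y (tmk (AM z x) (AM x y) (bbal H A z x y) a a') = Pcan z x y a a'"
  unfolding can_eq by (rule t_tmk[OF tens_bb kt_mod[OF AMmod HMmod] Pcan_bil Pcan_bal])

lemma cmp_bal: "balanced (bbal H A z x y) (cmp A z x y)"
  by (rule balanced_bbalI) (simp add: Aassoc coinvD)

lemma cmp_tlift_lin: "klin (BT z x y) (AM z y) (tlift (AM z y) (cmp A z x y))"
  by (rule t_lin[OF tens_bb AMmod Acmp_bil cmp_bal])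

definition "Ecou x y = tlift (AM y y) (\<lambda>a g. ksmult (AM y y) (cou H x y g) a)"

lemma Ecou_bil: "kbilin (AM y y) (HM x y) (AM y y) (\<lambda>a g. ksmult (AM y y) (cou H x y g) a)"
  by (rule Lrules Crules | assumption)+

lemma Ecou_lin: "klin (kt (AM y y) (HM x y)) (AM y y) (Ecou x y)"
  unfolding Ecou_def by (rule t_lin; (rule Lrules Crules Ecou_bil | assumption)+)

lemma Ecou_tmk: "a \<in> kcarrier (AM y y) \<Longrightarrow> g \<in> kcarrier (HM x y) \<Longrightarrow> Ecou x y (ktmk (AM y y) (HM x y) a g) = ksmult (AM y y) (cou H x y g) a"
  unfolding Ecou_def by (rule kt_tmk[OF _ _ _ Ecou_bil]) auto

lemma Ecou_can: assumes X: "X \<in> kcarrier (BT y x y)"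
  shows "Ecou x y (can H A y x y X) = tlift (AM y y) (cmp A y x y) X"
proof (rule t_unique[OF X tens_bb AMmod klin_comp[OF can_lin Ecou_lin] cmp_tlift_lin])
  fix l r assume l: "l \<in> kcarrier (AM y x)" and r: "r \<in> kcarrier (AM x y)"
  have "Ecou x y (can H A y x y (tmk (AM y x) (AM x y) (bbal H A y x y) l r)) = Ecou x y (Pcan y x y l r)"
    using can_tmk[OF l r] by simp
  also have "\<dots> = tlift (AM y y) (\<lambda>c g. Ecou x y (ktmk (AM y y) (HM x y) (cmp A y x y l c) g)) (coact A x y r)"
    unfolding Pcan_def by (rule t_comp; (rule Lrules Crules Ecou_lin l r | assumption)+)
  also have "\<dots> = tlift (AM y y) (\<lambda>c g. cmp A y x y l (ksmult (AM x y) (cou H x y g) c)) (coact A x y r)"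
  proof (rule t_cong, (rule Crules r | assumption)+)
    fix c g assume c: "c \<in> kcarrier (AM x y)" and g: "g \<in> kcarrier (HM x y)"
    show "Ecou x y (ktmk (AM y y) (HM x y) (cmp A y x y l c) g) = cmp A y x y l (ksmult (AM x y) (cou H x y g) c)"
      using Ecou_tmk[OF Acmp_closed[OF l c] g] klin_smult[OF kbilin_r[OF Acmp_bil l] c] by simp
  qed
  also have "\<dots> = cmp A y x y l (tlift (AM x y) (\<lambda>c g. ksmult (AM x y) (cou H x y g) c) (coact A x y r))"
    by (rule t_comp[symmetric]; (rule Lrules Crules kbilin_r[OF Acmp_bil] l r | assumption)+)
  also have "\<dots> = cmp A y x y l r" using coact_counit[OF r] by simp
  also have "\<dots> = tlift (AM y y) (cmp A y x y) (tmk (AM y x) (AM x y) (bbal H A y x y) l r)"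
    by (rule t_tmk[OF tens_bb AMmod Acmp_bil cmp_bal l r, symmetric])
  finally show "Ecou x y (can H A y x y (tmk (AM y x) (AM x y) (bbal H A y x y) l r)) =
      tlift (AM y y) (cmp A y x y) (tmk (AM y x) (AM x y) (bbal H A y x y) l r)" .
qed

end

locale gal = gctx +
  assumes GAL: "galois_ext H A"
begin

lemma can_bij: "bij_betw (can H A z x y) (kcarrier (BT z x y)) (kcarrier (kt (AM z y) (HM x y)))"
  using GAL unfolding galois_ext_def btens_eq by blast

lemma can_inj: "X \<in> kcarrier (BT z x y) \<Longrightarrow> Y \<in> kcarrier (BT z x y) \<Longrightarrow> can H A z x y X = can H A z x y Y \<Longrightarrow> X = Y"
  using can_bij[of z x y] unfolding bij_betw_def inj_on_def by blast

lemma gam_closed[intro]: "h \<in> kcarrier (HM x y) \<Longrightarrow> gam H A x y h \<in> kcarrier (BT y x y)"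
  unfolding gam_def btens_eq using can_bij[of y x y]
  by (intro inv_into_into) (auto simp: bij_betw_def intro: C_tmk tens_kt)

lemma can_gam: "h \<in> kcarrier (HM x y) \<Longrightarrow> can H A y x y (gam H A x y h) = ktmk (AM y y) (HM x y) (idm A y) h"
  unfolding gam_def btens_eq using can_bij[of y x y]
  by (intro f_inv_into_f) (auto simp: bij_betw_def intro: C_tmk tens_kt)

lemma gam_lin: "klin (HM x y) (BT y x y) (gam H A x y)"
proof (rule klinI)
  fix h assume "h \<in> kcarrier (HM x y)" thus "gam H A x y h \<in> kcarrier (BT y x y)" by auto
next
  fix h h' assume h: "h \<in> kcarrier (HM x y)" and h': "h' \<in> kcarrier (HM x y)"
  show "gam H A x y (kadd (HM x y) h h') = kadd (BT y x y) (gam H A x y h) (gam H A x y h')"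
  proof (rule can_inj)
    show "gam H A x y (kadd (HM x y) h h') \<in> kcarrier (BT y x y)" using km_add[OF HMmod h h'] by auto
    show "kadd (BT y x y) (gam H A x y h) (gam H A x y h') \<in> kcarrier (BT y x y)"
      using h h' by (intro km_add[OF BT_mod]) auto
    show "can H A y x y (gam H A x y (kadd (HM x y) h h')) = can H A y x y (kadd (BT y x y) (gam H A x y h) (gam H A x y h'))"
      unfolding klin_add[OF can_lin gam_closed[OF h] gam_closed[OF h']] can_gam[OF h] can_gam[OF h']
        can_gam[OF km_add[OF HMmod h h']]
      by (rule klin_add[OF L_tmk_r[OF tens_kt klin_id]]) (auto simp: h h')
  qed
next
  fix c h assume h: "h \<in> kcarrier (HM x y)"
  show "gam H A x y (ksmult (HM x y) c h) = ksmult (BT y x y) c (gam H A x y h)"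
  proof (rule can_inj)
    show "gam H A x y (ksmult (HM x y) c h) \<in> kcarrier (BT y x y)" using km_smult[OF HMmod h] by auto
    show "ksmult (BT y x y) c (gam H A x y h) \<in> kcarrier (BT y x y)"
      using h by (intro km_smult[OF BT_mod]) auto
    show "can H A y x y (gam H A x y (ksmult (HM x y) c h)) = can H A y x y (ksmult (BT y x y) c (gam H A x y h))"
      unfolding klin_smult[OF can_lin gam_closed[OF h]] can_gam[OF h] can_gam[OF km_smult[OF HMmod h]]
      by (rule klin_smult[OF L_tmk_r[OF tens_kt klin_id]]) (auto simp: h)
  qed
qed

lemma part_d: assumes h: "h \<in> kcarrier (HM x y)"
  shows "tlift (AM y y) (cmp A y x y) (gam H A x y h) = ksmult (AM y y) (cou H x y h) (idm A y)"
  using Ecou_can[OF gam_closed[OF h]] can_gam[OF h] Ecou_tmk[OF Aid h] by simp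

end

context gal begin

abbreviation "TB z x y \<equiv> tmk (AM z x) (AM x y) (bbal H A z x y)"

lemma coinv_cl: "b \<in> coinv H A x \<Longrightarrow> b \<in> kcarrier (AM x x)" by (rule coinvD(1))

lemma F1_bil: "b \<in> kcarrier (AM y y) \<Longrightarrow> kbilin (AM y x) (AM x y) (BT y x y) (\<lambda>l r. TB y x y (cmp A y y x b l) r)"
  by (rule Lrules Crules | assumption)+
lemma F2_bil: "b \<in> kcarrier (AM y y) \<Longrightarrow> kbilin (AM y x) (AM x y) (BT y x y) (\<lambda>l r. TB y x y l (cmp A x y y r b))"
  by (rule Lrules Crules | assumption)+

lemma F1_bal: "b \<in> kcarrier (AM y y) \<Longrightarrow> balanced (bbal H A y x y) (\<lambda>l r. TB y x y (cmp A y y x b l) r)"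
proof (rule balanced_bbalI)
  fix l c r assume b: "b \<in> kcarrier (AM y y)" and l: "l \<in> kcarrier (AM y x)" and c: "c \<in> coinv H A x" and r: "r \<in> kcarrier (AM x y)"
  have cc: "c \<in> kcarrier (AM x x)" by (rule coinv_cl[OF c])
  show "TB y x y (cmp A y y x b (cmp A y x x l c)) r = TB y x y (cmp A y y x b l) (cmp A x x y c r)"
    using Aassoc[OF b l cc] tmk_bb[OF Acmp_closed[OF b l] c r] by simp
qed

lemma F2_bal: "b \<in> kcarrier (AM y y) \<Longrightarrow> balanced (bbal H A y x y) (\<lambda>l r. TB y x y l (cmp A x y y r b))"
proof (rule balanced_bbalI)
  fix l c r assume b: "b \<in> kcarrier (AM y y)" and l: "l \<in> kcarrier (AM y x)" and c: "c \<in> coinv H A x" and r: "r \<in> kcarrier (AM x y)"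
  have cc: "c \<in> kcarrier (AM x x)" by (rule coinv_cl[OF c])
  show "TB y x y (cmp A y x x l c) (cmp A x y y r b) = TB y x y l (cmp A x y y (cmp A x x y c r) b)"
    using Aassoc[OF cc r b] tmk_bb[OF l c Acmp_closed[OF r b]] by simp
qed

lemma Mb_bil: "b \<in> kcarrier (AM y y) \<Longrightarrow> kbilin (AM y y) (HM x y) (kt (AM y y) (HM x y)) (\<lambda>a g. ktmk (AM y y) (HM x y) (cmp A y y y b a) g)"
  by (rule Lrules Crules | assumption)+
lemma Rb_bil: "b \<in> kcarrier (AM y y) \<Longrightarrow> kbilin (AM y y) (HM x y) (kt (AM y y) (HM x y)) (\<lambda>a g. ktmk (AM y y) (HM x y) (cmp A y y y a b) g)"
  by (rule Lrules Crules | assumption)+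

lemma can_F1:
  assumes b: "b \<in> kcarrier (AM y y)" and X: "X \<in> kcarrier (BT y x y)"
  shows "can H A y x y (tlift (BT y x y) (\<lambda>l r. TB y x y (cmp A y y x b l) r) X) =
         tlift (kt (AM y y) (HM x y)) (\<lambda>a g. ktmk (AM y y) (HM x y) (cmp A y y y b a) g) (can H A y x y X)"
proof (rule t_unique[OF X tens_bb kt_mod[OF AMmod HMmod]])
  show "klin (BT y x y) (kt (AM y y) (HM x y)) (\<lambda>X. can H A y x y (tlift (BT y x y) (\<lambda>l r. TB y x y (cmp A y y x b l) r) X))"
    by (rule klin_comp[OF t_lin[OF tens_bb BT_mod F1_bil[OF b] F1_bal[OF b]] can_lin])
  show "klin (BT y x y) (kt (AM y y) (HM x y)) (\<lambda>X. tlift (kt (AM y y) (HM x y)) (\<lambda>a g. ktmk (AM y y) (HM x y) (cmp A y y y b a) g) (can H A y x y X))"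
    by (rule klin_comp[OF can_lin t_lin[OF tens_kt[OF AMmod HMmod] kt_mod[OF AMmod HMmod] Mb_bil[OF b] balanced_empty]])
  fix l r assume l: "l \<in> kcarrier (AM y x)" and r: "r \<in> kcarrier (AM x y)"
  have "can H A y x y (tlift (BT y x y) (\<lambda>l r. TB y x y (cmp A y y x b l) r) (TB y x y l r)) = Pcan y x y (cmp A y y x b l) r"
    using t_tmk[OF tens_bb BT_mod F1_bil[OF b] F1_bal[OF b] l r] can_tmk[OF Acmp_closed[OF b l] r] by simp
  also have "\<dots> = tlift (kt (AM y y) (HM x y)) (\<lambda>c g. tlift (kt (AM y y) (HM x y)) (\<lambda>a g. ktmk (AM y y) (HM x y) (cmp A y y y b a) g) (ktmk (AM y y) (HM x y) (cmp A y x y l c) g)) (coact A x y r)"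
    unfolding Pcan_def
  proof (rule t_cong, (rule Crules r | assumption)+)
    fix c g assume c: "c \<in> kcarrier (AM x y)" and g: "g \<in> kcarrier (HM x y)"
    show "ktmk (AM y y) (HM x y) (cmp A y x y (cmp A y y x b l) c) g =
          tlift (kt (AM y y) (HM x y)) (\<lambda>a g. ktmk (AM y y) (HM x y) (cmp A y y y b a) g) (ktmk (AM y y) (HM x y) (cmp A y x y l c) g)"
      using kt_tmk[OF AMmod HMmod kt_mod[OF AMmod HMmod] Mb_bil[OF b] Acmp_closed[OF l c] g] Aassoc[OF b l c] by simp
  qed
  also have "\<dots> = tlift (kt (AM y y) (HM x y)) (\<lambda>a g. ktmk (AM y y) (HM x y) (cmp A y y y b a) g) (Pcan y x y l r)"
    unfolding Pcan_def by (rule t_comp[symmetric]; (rule Lrules Crules t_lin Mb_bil b l r | assumption)+)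
  also have "\<dots> = tlift (kt (AM y y) (HM x y)) (\<lambda>a g. ktmk (AM y y) (HM x y) (cmp A y y y b a) g) (can H A y x y (TB y x y l r))"
    using can_tmk[OF l r] by simp
  finally show "can H A y x y (tlift (BT y x y) (\<lambda>l r. TB y x y (cmp A y y x b l) r) (TB y x y l r)) =
     tlift (kt (AM y y) (HM x y)) (\<lambda>a g. ktmk (AM y y) (HM x y) (cmp A y y y b a) g) (can H A y x y (TB y x y l r))" .
qed

lemma can_F2:
  assumes bc: "b \<in> coinv H A y" and X: "X \<in> kcarrier (BT y x y)"
  shows "can H A y x y (tlift (BT y x y) (\<lambda>l r. TB y x y l (cmp A x y y r b)) X) =
         tlift (kt (AM y y) (HM x y)) (\<lambda>a g. ktmk (AM y y) (HM x y) (cmp A y y y a b) g) (can H A y x y X)"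
proof (rule t_unique[OF X tens_bb kt_mod[OF AMmod HMmod]])
  have b: "b \<in> kcarrier (AM y y)" by (rule coinv_cl[OF bc])
  show "klin (BT y x y) (kt (AM y y) (HM x y)) (\<lambda>X. can H A y x y (tlift (BT y x y) (\<lambda>l r. TB y x y l (cmp A x y y r b)) X))"
    by (rule klin_comp[OF t_lin[OF tens_bb BT_mod F2_bil[OF b] F2_bal[OF b]] can_lin])
  show "klin (BT y x y) (kt (AM y y) (HM x y)) (\<lambda>X. tlift (kt (AM y y) (HM x y)) (\<lambda>a g. ktmk (AM y y) (HM x y) (cmp A y y y a b) g) (can H A y x y X))"
    by (rule klin_comp[OF can_lin t_lin[OF tens_kt[OF AMmod HMmod] kt_mod[OF AMmod HMmod] Rb_bil[OF b] balanced_empty]])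
  fix l r assume l: "l \<in> kcarrier (AM y x)" and r: "r \<in> kcarrier (AM x y)"
  let ?G = "tlift (kt (AM y y) (HM x y)) (\<lambda>c g. ktmk (AM y y) (HM x y) (cmp A y x y l c) g)"
  have "can H A y x y (tlift (BT y x y) (\<lambda>l r. TB y x y l (cmp A x y y r b)) (TB y x y l r)) = Pcan y x y l (cmp A x y y r b)"
    using t_tmk[OF tens_bb BT_mod F2_bil[OF b] F2_bal[OF b] l r] can_tmk[OF l Acmp_closed[OF r b]] by simp
  also have "\<dots> = ?G (tlift (kt (AM x y) (HM x y)) (\<lambda>a0 a1. ktmk (AM x y) (HM x y) (cmp A x y y a0 b) a1) (coact A x y r))"
    unfolding Pcan_def coact_coinv_r[OF bc r] ..
  also have "\<dots> = tlift (kt (AM y y) (HM x y)) (\<lambda>a0 a1. ?G (ktmk (AM x y) (HM x y) (cmp A x y y a0 b) a1)) (coact A x y r)"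
    by (rule t_comp; (rule Lrules Crules t_lin b l r | assumption)+)
  also have "\<dots> = tlift (kt (AM y y) (HM x y)) (\<lambda>c g. tlift (kt (AM y y) (HM x y)) (\<lambda>a g. ktmk (AM y y) (HM x y) (cmp A y y y a b) g) (ktmk (AM y y) (HM x y) (cmp A y x y l c) g)) (coact A x y r)"
  proof (rule t_cong, (rule Crules r | assumption)+)
    fix c g assume c: "c \<in> kcarrier (AM x y)" and g: "g \<in> kcarrier (HM x y)"
    have e1: "?G (ktmk (AM x y) (HM x y) (cmp A x y y c b) g) = ktmk (AM y y) (HM x y) (cmp A y x y l (cmp A x y y c b)) g"
      by (rule kt_tmk; (rule Lrules Crules b l c g | assumption)+)
    have e2: "tlift (kt (AM y y) (HM x y)) (\<lambda>a g. ktmk (AM y y) (HM x y) (cmp A y y y a b) g) (ktmk (AM y y) (HM x y) (cmp A y x y l c) g) = ktmk (AM y y) (HM x y) (cmp A y y y (cmp A y x y l c) b) g"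
      by (rule kt_tmk; (rule Lrules Crules b l c g | assumption)+)
    show "?G (ktmk (AM x y) (HM x y) (cmp A x y y c b) g) = tlift (kt (AM y y) (HM x y)) (\<lambda>a g. ktmk (AM y y) (HM x y) (cmp A y y y a b) g) (ktmk (AM y y) (HM x y) (cmp A y x y l c) g)"
      unfolding e1 e2 Aassoc[OF l c b] ..
  qed
  also have "\<dots> = tlift (kt (AM y y) (HM x y)) (\<lambda>a g. ktmk (AM y y) (HM x y) (cmp A y y y a b) g) (Pcan y x y l r)"
    unfolding Pcan_def by (rule t_comp[symmetric]; (rule Lrules Crules t_lin Rb_bil b l r | assumption)+)
  also have "\<dots> = tlift (kt (AM y y) (HM x y)) (\<lambda>a g. ktmk (AM y y) (HM x y) (cmp A y y y a b) g) (can H A y x y (TB y x y l r))"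
    using can_tmk[OF l r] by simp
  finally show "can H A y x y (tlift (BT y x y) (\<lambda>l r. TB y x y l (cmp A x y y r b)) (TB y x y l r)) =
     tlift (kt (AM y y) (HM x y)) (\<lambda>a g. ktmk (AM y y) (HM x y) (cmp A y y y a b) g) (can H A y x y (TB y x y l r))" .
qed

lemma part_a:
  assumes h: "h \<in> kcarrier (HM x y)" and bc: "b \<in> coinv H A y"
  shows "tlift (BT y x y) (\<lambda>l r. TB y x y (cmp A y y x b l) r) (gam H A x y h) =
         tlift (BT y x y) (\<lambda>l r. TB y x y l (cmp A x y y r b)) (gam H A x y h)"
proof (rule can_inj)
  have b: "b \<in> kcarrier (AM y y)" by (rule coinv_cl[OF bc])
  show "tlift (BT y x y) (\<lambda>l r. TB y x y (cmp A y y x b l) r) (gam H A x y h) \<in> kcarrier (BT y x y)"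
    by (rule C_tlift; (rule Lrules Crules BT_mod gam_closed b h | assumption)+)
  show "tlift (BT y x y) (\<lambda>l r. TB y x y l (cmp A x y y r b)) (gam H A x y h) \<in> kcarrier (BT y x y)"
    by (rule C_tlift; (rule Lrules Crules BT_mod gam_closed b h | assumption)+)
  have "can H A y x y (tlift (BT y x y) (\<lambda>l r. TB y x y (cmp A y y x b l) r) (gam H A x y h)) = ktmk (AM y y) (HM x y) b h"
    unfolding can_F1[OF b gam_closed[OF h]] can_gam[OF h]
    using kt_tmk[OF AMmod HMmod kt_mod[OF AMmod HMmod] Mb_bil[OF b] Aid h] b by simp
  moreover have "can H A y x y (tlift (BT y x y) (\<lambda>l r. TB y x y l (cmp A x y y r b)) (gam H A x y h)) = ktmk (AM y y) (HM x y) b h"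
    unfolding can_F2[OF bc gam_closed[OF h]] can_gam[OF h]
    using kt_tmk[OF AMmod HMmod kt_mod[OF AMmod HMmod] Rb_bil[OF b] Aid h] b by simp
  ultimately show "can H A y x y (tlift (BT y x y) (\<lambda>l r. TB y x y (cmp A y y x b l) r) (gam H A x y h)) =
    can H A y x y (tlift (BT y x y) (\<lambda>l r. TB y x y l (cmp A x y y r b)) (gam H A x y h))" by simp
qed

end

lemma kbilin_comp_out: "kbilin M N P phi \<Longrightarrow> klin P Q g \<Longrightarrow> kbilin M N Q (\<lambda>m n. g (phi m n))"
  by (rule kbilinI) (use klin_comp kbilin_l kbilin_r in fast)+

lemma balanced_comp_out: "balanced Bal phi \<Longrightarrow> balanced Bal (\<lambda>m n. g (phi m n))"
  unfolding balanced_def by auto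

context gal begin

lemmas R = Lrules Crules BT_mod gam_closed gam_lin

definition "Phio x y z h l' r' = tlift (BT z x z) (\<lambda>l r. TB z x z (cmp A z y x l' l) (cmp A x y z r r')) (gam H A x y h)"
definition "Psi x y z l' r' = tlift (kt (AM z z) (HM x z)) (\<lambda>a g. tlift (kt (AM z z) (HM x z))
   (\<lambda>c g'. ktmk (AM z z) (HM x z) (cmp A z y z l' (cmp A y y z a c)) (cmp H x y z g g')) (coact A y z r'))"
definition "Lam x y z h = tlift (kt (AM z z) (HM x z)) (\<lambda>a g. ktmk (AM z z) (HM x z) a (cmp H x y z h g))"

lemma Tphi_bil: "l' \<in> kcarrier (AM z y) \<Longrightarrow> r' \<in> kcarrier (AM y z) \<Longrightarrow>
   kbilin (AM y x) (AM x y) (BT z x z) (\<lambda>l r. TB z x z (cmp A z y x l' l) (cmp A x y z r r'))"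
  by (rule R | assumption)+

lemma Tphi_bal: assumes l': "l' \<in> kcarrier (AM z y)" and r': "r' \<in> kcarrier (AM y z)"
  shows "balanced (bbal H A y x y) (\<lambda>l r. TB z x z (cmp A z y x l' l) (cmp A x y z r r'))"
proof (rule balanced_bbalI)
  fix l c r assume l: "l \<in> kcarrier (AM y x)" and c: "c \<in> coinv H A x" and r: "r \<in> kcarrier (AM x y)"
  have cc: "c \<in> kcarrier (AM x x)" by (rule coinv_cl[OF c])
  show "TB z x z (cmp A z y x l' (cmp A y x x l c)) (cmp A x y z r r') = TB z x z (cmp A z y x l' l) (cmp A x y z (cmp A x x y c r) r')"
    using Aassoc[OF l' l cc] Aassoc[OF cc r r'] tmk_bb[OF Acmp_closed[OF l' l] c Acmp_closed[OF r r']] by simp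
qed

lemma Phio_bil: "h \<in> kcarrier (HM x y) \<Longrightarrow> kbilin (AM z y) (AM y z) (BT z x z) (Phio x y z h)"
  unfolding Phio_def by (rule R | assumption)+

lemma Phio_bal:
  assumes h: "h \<in> kcarrier (HM x y)"
  shows "balanced (bbal H A z y z) (Phio x y z h)"
proof (rule balanced_bbalI)
  fix l' c r' assume l': "l' \<in> kcarrier (AM z y)" and c: "c \<in> coinv H A y" and r': "r' \<in> kcarrier (AM y z)"
  have cc: "c \<in> kcarrier (AM y y)" by (rule coinv_cl[OF c])
  let ?T = "tlift (BT z x z) (\<lambda>l r. TB z x z (cmp A z y x l' l) (cmp A x y z r r'))"
  have gh: "gam H A x y h \<in> kcarrier (BT y x y)" using h by auto
  have "?T (tlift (BT y x y) (\<lambda>l r. TB y x y (cmp A y y x c l) r) (gam H A x y h))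
     = tlift (BT z x z) (\<lambda>l r. ?T (TB y x y (cmp A y y x c l) r)) (gam H A x y h)"
    by (rule t_comp[OF gh tens_bb BT_mod BT_mod t_lin[OF tens_bb BT_mod Tphi_bil[OF l' r'] Tphi_bal[OF l' r']]
        F1_bil[OF cc] F1_bal[OF cc]])
  also have "\<dots> = Phio x y z h (cmp A z y y l' c) r'"
    unfolding Phio_def
  proof (rule t_cong[OF gh tens_bb])
    fix l r assume l: "l \<in> kcarrier (AM y x)" and r: "r \<in> kcarrier (AM x y)"
    show "?T (TB y x y (cmp A y y x c l) r) = TB z x z (cmp A z y x (cmp A z y y l' c) l) (cmp A x y z r r')"
      using t_tmk[OF tens_bb BT_mod Tphi_bil[OF l' r'] Tphi_bal[OF l' r'] Acmp_closed[OF cc l] r] Aassoc[OF l' cc l] by simp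
  qed
  finally have e1: "?T (tlift (BT y x y) (\<lambda>l r. TB y x y (cmp A y y x c l) r) (gam H A x y h)) = Phio x y z h (cmp A z y y l' c) r'" .
  have "?T (tlift (BT y x y) (\<lambda>l r. TB y x y l (cmp A x y y r c)) (gam H A x y h))
     = tlift (BT z x z) (\<lambda>l r. ?T (TB y x y l (cmp A x y y r c))) (gam H A x y h)"
    by (rule t_comp[OF gh tens_bb BT_mod BT_mod t_lin[OF tens_bb BT_mod Tphi_bil[OF l' r'] Tphi_bal[OF l' r']]
        F2_bil[OF cc] F2_bal[OF cc]])
  also have "\<dots> = Phio x y z h l' (cmp A y y z c r')"
    unfolding Phio_def
  proof (rule t_cong[OF gh tens_bb])
    fix l r assume l: "l \<in> kcarrier (AM y x)" and r: "r \<in> kcarrier (AM x y)"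
    show "?T (TB y x y l (cmp A x y y r c)) = TB z x z (cmp A z y x l' l) (cmp A x y z r (cmp A y y z c r'))"
      using t_tmk[OF tens_bb BT_mod Tphi_bil[OF l' r'] Tphi_bal[OF l' r'] l Acmp_closed[OF r cc]] Aassoc[OF r cc r'] by simp
  qed
  finally have e2: "?T (tlift (BT y x y) (\<lambda>l r. TB y x y l (cmp A x y y r c)) (gam H A x y h)) = Phio x y z h l' (cmp A y y z c r')" .
  show "Phio x y z h (cmp A z y y l' c) r' = Phio x y z h l' (cmp A y y z c r')"
    using e1 e2 part_a[OF h c] by simp
qed

lemma Psi_bil: "l' \<in> kcarrier (AM z y) \<Longrightarrow> r' \<in> kcarrier (AM y z) \<Longrightarrow>
  kbilin (AM y y) (HM x y) (kt (AM z z) (HM x z)) (\<lambda>a g. tlift (kt (AM z z) (HM x z))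
   (\<lambda>c g'. ktmk (AM z z) (HM x z) (cmp A z y z l' (cmp A y y z a c)) (cmp H x y z g g')) (coact A y z r'))"
  by (rule R | assumption)+

lemma Psi_lin: "l' \<in> kcarrier (AM z y) \<Longrightarrow> r' \<in> kcarrier (AM y z) \<Longrightarrow>
  klin (kt (AM y y) (HM x y)) (kt (AM z z) (HM x z)) (Psi x y z l' r')"
  unfolding Psi_def by (rule t_lin[OF tens_kt[OF AMmod HMmod] kt_mod[OF AMmod HMmod] Psi_bil balanced_empty])

lemma can_Tphi:
  assumes l': "l' \<in> kcarrier (AM z y)" and r': "r' \<in> kcarrier (AM y z)" and X: "X \<in> kcarrier (BT y x y)"
  shows "can H A z x z (tlift (BT z x z) (\<lambda>l r. TB z x z (cmp A z y x l' l) (cmp A x y z r r')) X) = Psi x y z l' r' (can H A y x y X)"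
proof (rule t_unique[OF X tens_bb kt_mod[OF AMmod HMmod]])
  show "klin (BT y x y) (kt (AM z z) (HM x z)) (\<lambda>X. can H A z x z (tlift (BT z x z) (\<lambda>l r. TB z x z (cmp A z y x l' l) (cmp A x y z r r')) X))"
    by (rule klin_comp[OF t_lin[OF tens_bb BT_mod Tphi_bil[OF l' r'] Tphi_bal[OF l' r']] can_lin])
  show "klin (BT y x y) (kt (AM z z) (HM x z)) (\<lambda>X. Psi x y z l' r' (can H A y x y X))"
    by (rule klin_comp[OF can_lin Psi_lin[OF l' r']])
  fix l r assume l: "l \<in> kcarrier (AM y x)" and r: "r \<in> kcarrier (AM x y)"
  let ?G = "tlift (kt (AM z z) (HM x z)) (\<lambda>c g. ktmk (AM z z) (HM x z) (cmp A z x z (cmp A z y x l' l) c) g)"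
  have l'l: "cmp A z y x l' l \<in> kcarrier (AM z x)" using l' l by auto
  have "can H A z x z (tlift (BT z x z) (\<lambda>l r. TB z x z (cmp A z y x l' l) (cmp A x y z r r')) (TB y x y l r))
      = Pcan z x z (cmp A z y x l' l) (cmp A x y z r r')"
    using t_tmk[OF tens_bb BT_mod Tphi_bil[OF l' r'] Tphi_bal[OF l' r'] l r] can_tmk[OF l'l Acmp_closed[OF r r']] by simp
  also have "\<dots> = ?G (tlift (kt (AM x z) (HM x z))
            (\<lambda>a0 a1. tlift (kt (AM x z) (HM x z))
               (\<lambda>b0 b1. ktmk (AM x z) (HM x z) (cmp A x y z a0 b0) (cmp H x y z a1 b1))
               (coact A y z r')) (coact A x y r))"
    unfolding Pcan_def coact_mult[OF r r'] ..
  also have "\<dots> = tlift (kt (AM z z) (HM x z)) (\<lambda>a0 a1. ?G (tlift (kt (AM x z) (HM x z))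
               (\<lambda>b0 b1. ktmk (AM x z) (HM x z) (cmp A x y z a0 b0) (cmp H x y z a1 b1))
               (coact A y z r'))) (coact A x y r)"
    by (rule t_comp; (rule R l'l r r' | assumption)+)
  also have "\<dots> = tlift (kt (AM z z) (HM x z)) (\<lambda>a0 a1. tlift (kt (AM z z) (HM x z))
               (\<lambda>b0 b1. ?G (ktmk (AM x z) (HM x z) (cmp A x y z a0 b0) (cmp H x y z a1 b1)))
               (coact A y z r')) (coact A x y r)"
    by (rule t_cong, (rule R r | assumption)+, rule t_comp; (rule R l'l r r' | assumption)+)
  also have "\<dots> = tlift (kt (AM z z) (HM x z)) (\<lambda>c g. tlift (kt (AM z z) (HM x z))
   (\<lambda>c' g'. ktmk (AM z z) (HM x z) (cmp A z y z l' (cmp A y y z (cmp A y x y l c) c')) (cmp H x y z g g')) (coact A y z r')) (coact A x y r)"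
  proof (rule t_cong, (rule R r | assumption)+, rule t_cong, (rule R r' | assumption)+)
    fix a0 a1 b0 b1 assume a0: "a0 \<in> kcarrier (AM x y)" and a1: "a1 \<in> kcarrier (HM x y)"
      and b0: "b0 \<in> kcarrier (AM y z)" and b1: "b1 \<in> kcarrier (HM y z)"
    have "?G (ktmk (AM x z) (HM x z) (cmp A x y z a0 b0) (cmp H x y z a1 b1)) =
        ktmk (AM z z) (HM x z) (cmp A z x z (cmp A z y x l' l) (cmp A x y z a0 b0)) (cmp H x y z a1 b1)"
      by (rule kt_tmk; (rule R l'l a0 a1 b0 b1 | assumption)+)
    also have "cmp A z x z (cmp A z y x l' l) (cmp A x y z a0 b0) = cmp A z y z l' (cmp A y y z (cmp A y x y l a0) b0)"
      using Aassoc[OF l' l Acmp_closed[OF a0 b0]] Aassoc[OF l a0 b0] by simp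
    finally show "?G (ktmk (AM x z) (HM x z) (cmp A x y z a0 b0) (cmp H x y z a1 b1)) =
        ktmk (AM z z) (HM x z) (cmp A z y z l' (cmp A y y z (cmp A y x y l a0) b0)) (cmp H x y z a1 b1)" .
  qed
  also have "\<dots> = tlift (kt (AM z z) (HM x z)) (\<lambda>c g. Psi x y z l' r' (ktmk (AM y y) (HM x y) (cmp A y x y l c) g)) (coact A x y r)"
  proof (rule t_cong, (rule R r | assumption)+)
    fix c g assume c: "c \<in> kcarrier (AM x y)" and g: "g \<in> kcarrier (HM x y)"
    show "tlift (kt (AM z z) (HM x z))
   (\<lambda>c' g'. ktmk (AM z z) (HM x z) (cmp A z y z l' (cmp A y y z (cmp A y x y l c) c')) (cmp H x y z g g')) (coact A y z r') =
        Psi x y z l' r' (ktmk (AM y y) (HM x y) (cmp A y x y l c) g)"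
      unfolding Psi_def by (rule kt_tmk[symmetric]; (rule R Psi_bil l l' r' c g | assumption)+)
  qed
  also have "\<dots> = Psi x y z l' r' (Pcan y x y l r)"
    unfolding Pcan_def by (rule t_comp[symmetric]; (rule R Psi_lin l l' r r' | assumption)+)
  finally show "can H A z x z (tlift (BT z x z) (\<lambda>l r. TB z x z (cmp A z y x l' l) (cmp A x y z r r')) (TB y x y l r)) =
    Psi x y z l' r' (can H A y x y (TB y x y l r))" using can_tmk[OF l r] by simp
qed

end

context gal begin

lemma can_Phio:
  assumes h: "h \<in> kcarrier (HM x y)" and l': "l' \<in> kcarrier (AM z y)" and r': "r' \<in> kcarrier (AM y z)"
  shows "can H A z x z (Phio x y z h l' r') = tlift (kt (AM z z) (HM x z)) (\<lambda>c g'. ktmk (AM z z) (HM x z) (cmp A z y z l' c) (cmp H x y z h g')) (coact A y z r')"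
proof -
  have "can H A z x z (Phio x y z h l' r') = Psi x y z l' r' (ktmk (AM y y) (HM x y) (idm A y) h)"
    unfolding Phio_def can_Tphi[OF l' r' gam_closed[OF h]] can_gam[OF h] ..
  also have "\<dots> = tlift (kt (AM z z) (HM x z))
   (\<lambda>c g'. ktmk (AM z z) (HM x z) (cmp A z y z l' (cmp A y y z (idm A y) c)) (cmp H x y z h g')) (coact A y z r')"
    unfolding Psi_def by (rule kt_tmk; (rule R Psi_bil l' r' h | assumption)+)
  also have "\<dots> = tlift (kt (AM z z) (HM x z)) (\<lambda>c g'. ktmk (AM z z) (HM x z) (cmp A z y z l' c) (cmp H x y z h g')) (coact A y z r')"
    by (rule t_cong, (rule R r' | assumption)+) simp
  finally show ?thesis .
qed

lemma Lam_bil: "h \<in> kcarrier (HM x y) \<Longrightarrow> kbilin (AM z z) (HM y z) (kt (AM z z) (HM x z)) (\<lambda>a g. ktmk (AM z z) (HM x z) a (cmp H x y z h g))"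
  by (rule R | assumption)+

lemma Lam_lin: "h \<in> kcarrier (HM x y) \<Longrightarrow> klin (kt (AM z z) (HM y z)) (kt (AM z z) (HM x z)) (Lam x y z h)"
  unfolding Lam_def by (rule t_lin[OF tens_kt[OF AMmod HMmod] kt_mod[OF AMmod HMmod] Lam_bil balanced_empty])

lemma canPhio_bil: "h \<in> kcarrier (HM x y) \<Longrightarrow> kbilin (AM z y) (AM y z) (kt (AM z z) (HM x z)) (\<lambda>l' r'. can H A z x z (Phio x y z h l' r'))"
  by (rule kbilin_comp_out[OF Phio_bil can_lin])

lemma canPhio_bal: "h \<in> kcarrier (HM x y) \<Longrightarrow> balanced (bbal H A z y z) (\<lambda>l' r'. can H A z x z (Phio x y z h l' r'))"
  by (rule balanced_comp_out[OF Phio_bal])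

lemma Lam_can:
  assumes h: "h \<in> kcarrier (HM x y)" and X: "X \<in> kcarrier (BT z y z)"
  shows "tlift (kt (AM z z) (HM x z)) (\<lambda>l' r'. can H A z x z (Phio x y z h l' r')) X = Lam x y z h (can H A z y z X)"
proof (rule t_unique[OF X tens_bb kt_mod[OF AMmod HMmod] t_lin[OF tens_bb kt_mod[OF AMmod HMmod] canPhio_bil[OF h] canPhio_bal[OF h]]
      klin_comp[OF can_lin Lam_lin[OF h]]])
  fix l' r' assume l': "l' \<in> kcarrier (AM z y)" and r': "r' \<in> kcarrier (AM y z)"
  have "tlift (kt (AM z z) (HM x z)) (\<lambda>l' r'. can H A z x z (Phio x y z h l' r')) (TB z y z l' r') = can H A z x z (Phio x y z h l' r')"
    by (rule t_tmk[OF tens_bb kt_mod[OF AMmod HMmod] canPhio_bil[OF h] canPhio_bal[OF h] l' r'])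
  also have "\<dots> = tlift (kt (AM z z) (HM x z)) (\<lambda>c g. Lam x y z h (ktmk (AM z z) (HM y z) (cmp A z y z l' c) g)) (coact A y z r')"
    unfolding can_Phio[OF h l' r']
  proof (rule t_cong, (rule R r' | assumption)+)
    fix c g assume c: "c \<in> kcarrier (AM y z)" and g: "g \<in> kcarrier (HM y z)"
    show "ktmk (AM z z) (HM x z) (cmp A z y z l' c) (cmp H x y z h g) = Lam x y z h (ktmk (AM z z) (HM y z) (cmp A z y z l' c) g)"
      unfolding Lam_def by (rule kt_tmk[symmetric]; (rule R Lam_bil l' c g h | assumption)+)
  qed
  also have "\<dots> = Lam x y z h (Pcan z y z l' r')"
    unfolding Pcan_def by (rule t_comp[symmetric]; (rule R Lam_lin l' r' h | assumption)+)
  finally show "tlift (kt (AM z z) (HM x z)) (\<lambda>l' r'. can H A z x z (Phio x y z h l' r')) (TB z y z l' r') =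
     Lam x y z h (can H A z y z (TB z y z l' r'))" using can_tmk[OF l' r'] by simp
qed

lemma part_b:
  assumes h: "h \<in> kcarrier (HM x y)" and h': "h' \<in> kcarrier (HM y z)"
  shows "gam H A x z (cmp H x y z h h') = tlift (BT z x z) (Phio x y z h) (gam H A y z h')"
proof (rule can_inj)
  have hh: "cmp H x y z h h' \<in> kcarrier (HM x z)" using h h' by auto
  show "gam H A x z (cmp H x y z h h') \<in> kcarrier (BT z x z)" using hh by auto
  show "tlift (BT z x z) (Phio x y z h) (gam H A y z h') \<in> kcarrier (BT z x z)"
  proof (rule C_tlift[OF gam_closed[OF h'] tens_bb BT_mod])
    fix l' r' assume "l' \<in> kcarrier (AM z y)" "r' \<in> kcarrier (AM y z)"
    thus "Phio x y z h l' r' \<in> kcarrier (BT z x z)" using Phio_bil[OF h] unfolding kbilin_def klin_def by blast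
  qed
  have "can H A z x z (tlift (BT z x z) (Phio x y z h) (gam H A y z h')) =
      tlift (kt (AM z z) (HM x z)) (\<lambda>l' r'. can H A z x z (Phio x y z h l' r')) (gam H A y z h')"
    by (rule t_comp[OF gam_closed[OF h'] tens_bb BT_mod kt_mod[OF AMmod HMmod] can_lin Phio_bil[OF h] Phio_bal[OF h]])
  also have "\<dots> = Lam x y z h (ktmk (AM z z) (HM y z) (idm A z) h')"
    unfolding Lam_can[OF h gam_closed[OF h']] can_gam[OF h'] ..
  also have "\<dots> = ktmk (AM z z) (HM x z) (idm A z) (cmp H x y z h h')"
    unfolding Lam_def by (rule kt_tmk; (rule R Lam_bil h h' | assumption)+)
  also have "\<dots> = can H A z x z (gam H A x z (cmp H x y z h h'))" using can_gam[OF hh] by simp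
  finally show "can H A z x z (gam H A x z (cmp H x y z h h')) = can H A z x z (tlift (BT z x z) (Phio x y z h) (gam H A y z h'))" by simp
qed

end

context gal begin

definition "cinv z x y = inv_into (kcarrier (BT z x y)) (can H A z x y)"

lemma cinv_closed[intro]: "v \<in> kcarrier (kt (AM z y) (HM x y)) \<Longrightarrow> cinv z x y v \<in> kcarrier (BT z x y)"
  unfolding cinv_def using can_bij[of z x y] by (intro inv_into_into) (auto simp: bij_betw_def)

lemma can_cinv: "v \<in> kcarrier (kt (AM z y) (HM x y)) \<Longrightarrow> can H A z x y (cinv z x y v) = v"
  unfolding cinv_def using can_bij[of z x y] by (intro f_inv_into_f) (auto simp: bij_betw_def)

lemma cinv_can: "X \<in> kcarrier (BT z x y) \<Longrightarrow> cinv z x y (can H A z x y X) = X"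
  unfolding cinv_def using can_bij[of z x y] by (intro inv_into_f_f) (auto simp: bij_betw_def)

lemma cinv_lin: "klin (kt (AM z y) (HM x y)) (BT z x y) (cinv z x y)"
proof (rule klinI)
  fix v assume "v \<in> kcarrier (kt (AM z y) (HM x y))" thus "cinv z x y v \<in> kcarrier (BT z x y)" by auto
next
  fix v w assume v: "v \<in> kcarrier (kt (AM z y) (HM x y))" and w: "w \<in> kcarrier (kt (AM z y) (HM x y))"
  have s: "kadd (kt (AM z y) (HM x y)) v w \<in> kcarrier (kt (AM z y) (HM x y))" using v w by (intro km_add) auto
  show "cinv z x y (kadd (kt (AM z y) (HM x y)) v w) = kadd (BT z x y) (cinv z x y v) (cinv z x y w)"
  proof (rule can_inj)
    show "cinv z x y (kadd (kt (AM z y) (HM x y)) v w) \<in> kcarrier (BT z x y)" using s by auto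
    show "kadd (BT z x y) (cinv z x y v) (cinv z x y w) \<in> kcarrier (BT z x y)" using v w by (intro km_add[OF BT_mod]) auto
    show "can H A z x y (cinv z x y (kadd (kt (AM z y) (HM x y)) v w)) = can H A z x y (kadd (BT z x y) (cinv z x y v) (cinv z x y w))"
      unfolding klin_add[OF can_lin cinv_closed[OF v] cinv_closed[OF w]] can_cinv[OF v] can_cinv[OF w] can_cinv[OF s] ..
  qed
next
  fix c v assume v: "v \<in> kcarrier (kt (AM z y) (HM x y))"
  have s: "ksmult (kt (AM z y) (HM x y)) c v \<in> kcarrier (kt (AM z y) (HM x y))" using v by (intro km_smult) auto
  show "cinv z x y (ksmult (kt (AM z y) (HM x y)) c v) = ksmult (BT z x y) c (cinv z x y v)"
  proof (rule can_inj)
    show "cinv z x y (ksmult (kt (AM z y) (HM x y)) c v) \<in> kcarrier (BT z x y)" using s by auto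
    show "ksmult (BT z x y) c (cinv z x y v) \<in> kcarrier (BT z x y)" using v by (intro km_smult[OF BT_mod]) auto
    show "can H A z x y (cinv z x y (ksmult (kt (AM z y) (HM x y)) c v)) = can H A z x y (ksmult (BT z x y) c (cinv z x y v))"
      unfolding klin_smult[OF can_lin cinv_closed[OF v]] can_cinv[OF v] can_cinv[OF s] ..
  qed
qed

lemma C_can[intro]: "X \<in> kcarrier (BT z x y) \<Longrightarrow> can H A z x y X \<in> kcarrier (kt (AM z y) (HM x y))"
  by (rule klin_carrier[OF can_lin])

lemmas R2 = R can_lin cinv_lin C_can cinv_closed

definition "CI z x y N = tlift (kt (kt (AM z y) (HM x y)) N) (\<lambda>u g. ktmk (kt (AM z y) (HM x y)) N (can H A z x y u) g)"
definition "CJ z x y N = tlift (kt (BT z x y) N) (\<lambda>v g. ktmk (BT z x y) N (cinv z x y v) g)"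

lemma CI_bil: "kmodule N \<Longrightarrow> kbilin (BT z x y) N (kt (kt (AM z y) (HM x y)) N) (\<lambda>u g. ktmk (kt (AM z y) (HM x y)) N (can H A z x y u) g)"
  by (rule R2 | assumption)+
lemma CJ_bil: "kmodule N \<Longrightarrow> kbilin (kt (AM z y) (HM x y)) N (kt (BT z x y) N) (\<lambda>v g. ktmk (BT z x y) N (cinv z x y v) g)"
  by (rule R2 | assumption)+
lemma CI_lin: "kmodule N \<Longrightarrow> klin (kt (BT z x y) N) (kt (kt (AM z y) (HM x y)) N) (CI z x y N)"
  unfolding CI_def by (rule t_lin; (rule R2 CI_bil | assumption)+)
lemma CJ_lin: "kmodule N \<Longrightarrow> klin (kt (kt (AM z y) (HM x y)) N) (kt (BT z x y) N) (CJ z x y N)"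
  unfolding CJ_def by (rule t_lin; (rule R2 CJ_bil | assumption)+)

lemma CJ_CI: assumes N: "kmodule N" and X: "X \<in> kcarrier (kt (BT z x y) N)"
  shows "CJ z x y N (CI z x y N X) = X"
proof (rule t_unique[OF X tens_kt[OF BT_mod N] kt_mod[OF BT_mod N] klin_comp[OF CI_lin[OF N] CJ_lin[OF N]] klin_id])
  fix u g assume u: "u \<in> kcarrier (BT z x y)" and g: "g \<in> kcarrier N"
  have cu: "can H A z x y u \<in> kcarrier (kt (AM z y) (HM x y))" using klin_carrier[OF can_lin u] .
  show "CJ z x y N (CI z x y N (ktmk (BT z x y) N u g)) = ktmk (BT z x y) N u g"
    unfolding CI_def CJ_def
    using kt_tmk[OF BT_mod N kt_mod[OF kt_mod[OF AMmod HMmod] N] CI_bil[OF N] u g]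
      kt_tmk[OF kt_mod[OF AMmod HMmod] N kt_mod[OF BT_mod N] CJ_bil[OF N] cu g] cinv_can[OF u] by simp
qed

lemma CI_inj: "kmodule N \<Longrightarrow> X \<in> kcarrier (kt (BT z x y) N) \<Longrightarrow> Y \<in> kcarrier (kt (BT z x y) N) \<Longrightarrow>
   CI z x y N X = CI z x y N Y \<Longrightarrow> X = Y"
  using CJ_CI by metis

lemma CI_tmk: "kmodule N \<Longrightarrow> u \<in> kcarrier (BT z x y) \<Longrightarrow> g \<in> kcarrier N \<Longrightarrow>
   CI z x y N (ktmk (BT z x y) N u g) = ktmk (kt (AM z y) (HM x y)) N (can H A z x y u) g"
  unfolding CI_def by (rule kt_tmk[OF BT_mod _ _ CI_bil]) auto

end

context gal begin

abbreviation "KT3 x y \<equiv> kt (kt (AM y y) (HM x y)) (HM x y)"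

definition "Omc x y l r = tlift (kt (BT y x y) (HM x y)) (\<lambda>r0 r1. ktmk (BT y x y) (HM x y) (TB y x y l r0) r1) (coact A x y r)"
definition "Theta x y = tlift (KT3 x y) (\<lambda>a g. tlift (KT3 x y) (\<lambda>g1 g2. ktmk (kt (AM y y) (HM x y)) (HM x y) (ktmk (AM y y) (HM x y) a g1) g2) (cop H x y g))"
definition "K1 x y l = tlift (kt (AM y y) (HM x y)) (\<lambda>b g1. ktmk (AM y y) (HM x y) (cmp A y x y l b) g1)"
definition "Kc x y l = tlift (KT3 x y) (\<lambda>u g2. ktmk (kt (AM y y) (HM x y)) (HM x y) (K1 x y l u) g2)"

lemma Omc_bil: "kbilin (AM y x) (AM x y) (kt (BT y x y) (HM x y)) (Omc x y)"
  unfolding Omc_def by (rule R2 | assumption)+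

lemma Omc_bal: "balanced (bbal H A y x y) (Omc x y)"
proof (rule balanced_bbalI)
  fix l c r assume l: "l \<in> kcarrier (AM y x)" and c: "c \<in> coinv H A x" and r: "r \<in> kcarrier (AM x y)"
  have cc: "c \<in> kcarrier (AM x x)" by (rule coinv_cl[OF c])
  let ?G = "tlift (kt (BT y x y) (HM x y)) (\<lambda>r0 r1. ktmk (BT y x y) (HM x y) (TB y x y l r0) r1)"
  have "Omc x y l (cmp A x x y c r) = ?G (tlift (kt (AM x y) (HM x y)) (\<lambda>b0 b1. ktmk (AM x y) (HM x y) (cmp A x x y c b0) b1) (coact A x y r))"
    unfolding Omc_def coact_coinv_l[OF c r] ..
  also have "\<dots> = tlift (kt (BT y x y) (HM x y)) (\<lambda>b0 b1. ?G (ktmk (AM x y) (HM x y) (cmp A x x y c b0) b1)) (coact A x y r)"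
    by (rule t_comp; (rule R2 cc l r | assumption)+)
  also have "\<dots> = Omc x y (cmp A y x x l c) r"
    unfolding Omc_def
  proof (rule t_cong, (rule R2 r | assumption)+)
    fix b0 b1 assume b0: "b0 \<in> kcarrier (AM x y)" and b1: "b1 \<in> kcarrier (HM x y)"
    have "?G (ktmk (AM x y) (HM x y) (cmp A x x y c b0) b1) = ktmk (BT y x y) (HM x y) (TB y x y l (cmp A x x y c b0)) b1"
      by (rule kt_tmk; (rule R2 cc l b0 b1 | assumption)+)
    thus "?G (ktmk (AM x y) (HM x y) (cmp A x x y c b0) b1) = ktmk (BT y x y) (HM x y) (TB y x y (cmp A y x x l c) b0) b1"
      using tmk_bb[OF l c b0] by simp
  qed
  finally show "Omc x y (cmp A y x x l c) r = Omc x y l (cmp A x x y c r)" ..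
qed

lemma Theta_bil: "kbilin (AM y y) (HM x y) (KT3 x y) (\<lambda>a g. tlift (KT3 x y) (\<lambda>g1 g2. ktmk (kt (AM y y) (HM x y)) (HM x y) (ktmk (AM y y) (HM x y) a g1) g2) (cop H x y g))"
  by (rule R2 | assumption)+
lemma Theta_lin: "klin (kt (AM y y) (HM x y)) (KT3 x y) (Theta x y)"
  unfolding Theta_def by (rule t_lin; (rule R2 Theta_bil | assumption)+)
lemma K1_bil: "l \<in> kcarrier (AM y x) \<Longrightarrow> kbilin (AM x y) (HM x y) (kt (AM y y) (HM x y)) (\<lambda>b g1. ktmk (AM y y) (HM x y) (cmp A y x y l b) g1)"
  by (rule R2 | assumption)+
lemma K1_lin: "l \<in> kcarrier (AM y x) \<Longrightarrow> klin (kt (AM x y) (HM x y)) (kt (AM y y) (HM x y)) (K1 x y l)"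
  unfolding K1_def by (rule t_lin; (rule R2 K1_bil | assumption)+)
lemma K1_cl: "l \<in> kcarrier (AM y x) \<Longrightarrow> u \<in> kcarrier (kt (AM x y) (HM x y)) \<Longrightarrow> K1 x y l u \<in> kcarrier (kt (AM y y) (HM x y))"
  by (rule klin_carrier[OF K1_lin])
lemma Kc_bil: "l \<in> kcarrier (AM y x) \<Longrightarrow> kbilin (kt (AM x y) (HM x y)) (HM x y) (KT3 x y) (\<lambda>u g2. ktmk (kt (AM y y) (HM x y)) (HM x y) (K1 x y l u) g2)"
  by (rule R2 K1_lin K1_cl | assumption)+
lemma Kc_lin: "l \<in> kcarrier (AM y x) \<Longrightarrow> klin (kt (kt (AM x y) (HM x y)) (HM x y)) (KT3 x y) (Kc x y l)"
  unfolding Kc_def by (rule t_lin; (rule R2 Kc_bil | assumption)+)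

lemma Kc_tmk2: "l \<in> kcarrier (AM y x) \<Longrightarrow> b \<in> kcarrier (AM x y) \<Longrightarrow> g1 \<in> kcarrier (HM x y) \<Longrightarrow> g2 \<in> kcarrier (HM x y) \<Longrightarrow>
  Kc x y l (ktmk (kt (AM x y) (HM x y)) (HM x y) (ktmk (AM x y) (HM x y) b g1) g2) =
  ktmk (kt (AM y y) (HM x y)) (HM x y) (ktmk (AM y y) (HM x y) (cmp A y x y l b) g1) g2"
proof -
  assume l: "l \<in> kcarrier (AM y x)" and b: "b \<in> kcarrier (AM x y)" and g1: "g1 \<in> kcarrier (HM x y)" and g2: "g2 \<in> kcarrier (HM x y)"
  have "Kc x y l (ktmk (kt (AM x y) (HM x y)) (HM x y) (ktmk (AM x y) (HM x y) b g1) g2) =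
     ktmk (kt (AM y y) (HM x y)) (HM x y) (K1 x y l (ktmk (AM x y) (HM x y) b g1)) g2"
    unfolding Kc_def by (rule kt_tmk; (rule R2 Kc_bil l b g1 g2 | assumption)+)
  moreover have "K1 x y l (ktmk (AM x y) (HM x y) b g1) = ktmk (AM y y) (HM x y) (cmp A y x y l b) g1"
    unfolding K1_def by (rule kt_tmk; (rule R2 K1_bil l b g1 | assumption)+)
  ultimately show ?thesis by simp
qed

lemma CI_Omc:
  assumes l: "l \<in> kcarrier (AM y x)" and r: "r \<in> kcarrier (AM x y)"
  shows "CI y x y (HM x y) (Omc x y l r) = Theta x y (Pcan y x y l r)"
proof -
  have "CI y x y (HM x y) (Omc x y l r) = tlift (KT3 x y) (\<lambda>r0 r1. CI y x y (HM x y) (ktmk (BT y x y) (HM x y) (TB y x y l r0) r1)) (coact A x y r)"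
    unfolding Omc_def by (rule t_comp; (rule R2 CI_lin l r | assumption)+)
  also have "\<dots> = tlift (KT3 x y) (\<lambda>b g. Kc x y l (ktmk (kt (AM x y) (HM x y)) (HM x y) (coact A x y b) g)) (coact A x y r)"
  proof (rule t_cong, (rule R2 r | assumption)+)
    fix b g assume b: "b \<in> kcarrier (AM x y)" and g: "g \<in> kcarrier (HM x y)"
    have "CI y x y (HM x y) (ktmk (BT y x y) (HM x y) (TB y x y l b) g) = ktmk (kt (AM y y) (HM x y)) (HM x y) (Pcan y x y l b) g"
      using CI_tmk[OF HMmod C_tmk[OF tens_bb l b] g] can_tmk[OF l b] by simp
    moreover have "Kc x y l (ktmk (kt (AM x y) (HM x y)) (HM x y) (coact A x y b) g) = ktmk (kt (AM y y) (HM x y)) (HM x y) (K1 x y l (coact A x y b)) g"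
      unfolding Kc_def by (rule kt_tmk; (rule R2 Kc_bil l b g | assumption)+)
    moreover have "K1 x y l (coact A x y b) = Pcan y x y l b" unfolding K1_def Pcan_def ..
    ultimately show "CI y x y (HM x y) (ktmk (BT y x y) (HM x y) (TB y x y l b) g) = Kc x y l (ktmk (kt (AM x y) (HM x y)) (HM x y) (coact A x y b) g)"
      by simp
  qed
  also have "\<dots> = Kc x y l (tlift (kt (kt (AM x y) (HM x y)) (HM x y)) (\<lambda>b g. ktmk (kt (AM x y) (HM x y)) (HM x y) (coact A x y b) g) (coact A x y r))"
    by (rule t_comp[symmetric]; (rule R2 Kc_lin l r | assumption)+)
  also have "\<dots> = Kc x y l (tlift (kt (kt (AM x y) (HM x y)) (HM x y))
          (\<lambda>b g. tlift (kt (kt (AM x y) (HM x y)) (HM x y))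
             (\<lambda>g1 g2. ktmk (kt (AM x y) (HM x y)) (HM x y) (ktmk (AM x y) (HM x y) b g1) g2) (cop H x y g)) (coact A x y r))"
    unfolding coact_coassoc[OF r] ..
  also have "\<dots> = tlift (KT3 x y) (\<lambda>b g. Kc x y l (tlift (kt (kt (AM x y) (HM x y)) (HM x y))
             (\<lambda>g1 g2. ktmk (kt (AM x y) (HM x y)) (HM x y) (ktmk (AM x y) (HM x y) b g1) g2) (cop H x y g))) (coact A x y r)"
    by (rule t_comp; (rule R2 Kc_lin l r | assumption)+)
  also have "\<dots> = tlift (KT3 x y) (\<lambda>b g. Theta x y (ktmk (AM y y) (HM x y) (cmp A y x y l b) g)) (coact A x y r)"
  proof (rule t_cong, (rule R2 r | assumption)+)
    fix b g assume b: "b \<in> kcarrier (AM x y)" and g: "g \<in> kcarrier (HM x y)"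
    have "Kc x y l (tlift (kt (kt (AM x y) (HM x y)) (HM x y))
             (\<lambda>g1 g2. ktmk (kt (AM x y) (HM x y)) (HM x y) (ktmk (AM x y) (HM x y) b g1) g2) (cop H x y g))
       = tlift (KT3 x y) (\<lambda>g1 g2. Kc x y l (ktmk (kt (AM x y) (HM x y)) (HM x y) (ktmk (AM x y) (HM x y) b g1) g2)) (cop H x y g)"
      by (rule t_comp; (rule R2 Kc_lin l b g | assumption)+)
    also have "\<dots> = tlift (KT3 x y) (\<lambda>g1 g2. ktmk (kt (AM y y) (HM x y)) (HM x y) (ktmk (AM y y) (HM x y) (cmp A y x y l b) g1) g2) (cop H x y g)"
      by (rule t_cong, (rule R2 g | assumption)+) (rule Kc_tmk2[OF l b])
    also have "\<dots> = Theta x y (ktmk (AM y y) (HM x y) (cmp A y x y l b) g)"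
      unfolding Theta_def by (rule kt_tmk[symmetric]; (rule R2 Theta_bil l b g | assumption)+)
    finally show "Kc x y l (tlift (kt (kt (AM x y) (HM x y)) (HM x y))
             (\<lambda>g1 g2. ktmk (kt (AM x y) (HM x y)) (HM x y) (ktmk (AM x y) (HM x y) b g1) g2) (cop H x y g)) =
          Theta x y (ktmk (AM y y) (HM x y) (cmp A y x y l b) g)" .
  qed
  also have "\<dots> = Theta x y (Pcan y x y l r)"
    unfolding Pcan_def by (rule t_comp[symmetric]; (rule R2 Theta_lin l r | assumption)+)
  finally show ?thesis .
qed

lemma CIOmc_bil: "kbilin (AM y x) (AM x y) (KT3 x y) (\<lambda>l r. CI y x y (HM x y) (Omc x y l r))"
  by (rule kbilin_comp_out[OF Omc_bil CI_lin[OF HMmod]])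

lemma Theta_can: assumes X: "X \<in> kcarrier (BT y x y)"
  shows "tlift (KT3 x y) (\<lambda>l r. CI y x y (HM x y) (Omc x y l r)) X = Theta x y (can H A y x y X)"
proof (rule t_unique[OF X tens_bb kt_mod[OF kt_mod[OF AMmod HMmod] HMmod] t_lin[OF tens_bb kt_mod[OF kt_mod[OF AMmod HMmod] HMmod] CIOmc_bil balanced_comp_out[OF Omc_bal]]
      klin_comp[OF can_lin Theta_lin]])
  fix l r assume l: "l \<in> kcarrier (AM y x)" and r: "r \<in> kcarrier (AM x y)"
  show "tlift (KT3 x y) (\<lambda>l r. CI y x y (HM x y) (Omc x y l r)) (TB y x y l r) = Theta x y (can H A y x y (TB y x y l r))"
    using t_tmk[OF tens_bb kt_mod[OF kt_mod[OF AMmod HMmod] HMmod] CIOmc_bil balanced_comp_out[OF Omc_bal] l r]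
      CI_Omc[OF l r] can_tmk[OF l r] by simp
qed

lemma part_c:
  assumes h: "h \<in> kcarrier (HM x y)"
  shows "tlift (kt (BT y x y) (HM x y)) (\<lambda>h1 h2. ktmk (BT y x y) (HM x y) (gam H A x y h1) h2) (cop H x y h) =
         tlift (kt (BT y x y) (HM x y)) (Omc x y) (gam H A x y h)"
proof (rule CI_inj[OF HMmod])
  show "tlift (kt (BT y x y) (HM x y)) (\<lambda>h1 h2. ktmk (BT y x y) (HM x y) (gam H A x y h1) h2) (cop H x y h) \<in> kcarrier (kt (BT y x y) (HM x y))"
    by (rule C_tlift; (rule R2 h | assumption)+)
  show "tlift (kt (BT y x y) (HM x y)) (Omc x y) (gam H A x y h) \<in> kcarrier (kt (BT y x y) (HM x y))"
  proof (rule C_tlift[OF gam_closed[OF h] tens_bb kt_mod[OF BT_mod HMmod]])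
    fix l r assume "l \<in> kcarrier (AM y x)" "r \<in> kcarrier (AM x y)"
    thus "Omc x y l r \<in> kcarrier (kt (BT y x y) (HM x y))" using Omc_bil unfolding kbilin_def klin_def by blast
  qed
  have "CI y x y (HM x y) (tlift (kt (BT y x y) (HM x y)) (Omc x y) (gam H A x y h)) =
     tlift (KT3 x y) (\<lambda>l r. CI y x y (HM x y) (Omc x y l r)) (gam H A x y h)"
    by (rule t_comp[OF gam_closed[OF h] tens_bb kt_mod[OF BT_mod HMmod] kt_mod[OF kt_mod[OF AMmod HMmod] HMmod] CI_lin[OF HMmod] Omc_bil Omc_bal])
  also have "\<dots> = Theta x y (ktmk (AM y y) (HM x y) (idm A y) h)"
    unfolding Theta_can[OF gam_closed[OF h]] can_gam[OF h] ..
  also have "\<dots> = tlift (KT3 x y) (\<lambda>g1 g2. ktmk (kt (AM y y) (HM x y)) (HM x y) (ktmk (AM y y) (HM x y) (idm A y) g1) g2) (cop H x y h)"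
    unfolding Theta_def by (rule kt_tmk; (rule R2 Theta_bil h | assumption)+)
  also have "\<dots> = tlift (KT3 x y) (\<lambda>h1 h2. CI y x y (HM x y) (ktmk (BT y x y) (HM x y) (gam H A x y h1) h2)) (cop H x y h)"
    by (rule t_cong, (rule R2 h | assumption)+) (simp add: CI_tmk gam_closed can_gam)
  also have "\<dots> = CI y x y (HM x y) (tlift (kt (BT y x y) (HM x y)) (\<lambda>h1 h2. ktmk (BT y x y) (HM x y) (gam H A x y h1) h2) (cop H x y h))"
    by (rule t_comp[symmetric]; (rule R2 CI_lin h | assumption)+)
  finally show "CI y x y (HM x y) (tlift (kt (BT y x y) (HM x y)) (\<lambda>h1 h2. ktmk (BT y x y) (HM x y) (gam H A x y h1) h2) (cop H x y h)) =
    CI y x y (HM x y) (tlift (kt (BT y x y) (HM x y)) (Omc x y) (gam H A x y h))" by simp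
qed

end

definition ktril :: "('k::comm_ring_1, 'a) kmod \<Rightarrow> ('k, 'b) kmod \<Rightarrow> ('k, 'c) kmod \<Rightarrow> ('k, 'p) kmod \<Rightarrow> ('a \<Rightarrow> 'b \<Rightarrow> 'c \<Rightarrow> 'p) \<Rightarrow> bool" where
  "ktril M1 M2 M3 P F \<longleftrightarrow> (\<forall>b\<in>kcarrier M2. \<forall>c\<in>kcarrier M3. klin M1 P (\<lambda>a. F a b c)) \<and>
     (\<forall>a\<in>kcarrier M1. \<forall>c\<in>kcarrier M3. klin M2 P (\<lambda>b. F a b c)) \<and>
     (\<forall>a\<in>kcarrier M1. \<forall>b\<in>kcarrier M2. klin M3 P (\<lambda>c. F a b c))"

lemma ktrilI:
  assumes "\<And>b c. b \<in> kcarrier M2 \<Longrightarrow> c \<in> kcarrier M3 \<Longrightarrow> klin M1 P (\<lambda>a. F a b c)"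
    "\<And>a c. a \<in> kcarrier M1 \<Longrightarrow> c \<in> kcarrier M3 \<Longrightarrow> klin M2 P (\<lambda>b. F a b c)"
    "\<And>a b. a \<in> kcarrier M1 \<Longrightarrow> b \<in> kcarrier M2 \<Longrightarrow> klin M3 P (\<lambda>c. F a b c)"
  shows "ktril M1 M2 M3 P F"
  unfolding ktril_def using assms by blast

lemma ktril_12: "ktril M1 M2 M3 P F \<Longrightarrow> c \<in> kcarrier M3 \<Longrightarrow> kbilin M1 M2 P (\<lambda>a b. F a b c)"
  unfolding ktril_def by (intro kbilinI) auto
lemma ktril_23: "ktril M1 M2 M3 P F \<Longrightarrow> a \<in> kcarrier M1 \<Longrightarrow> kbilin M2 M3 P (\<lambda>b c. F a b c)"
  unfolding ktril_def by (intro kbilinI) auto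
lemma ktril_13: "ktril M1 M2 M3 P F \<Longrightarrow> b \<in> kcarrier M2 \<Longrightarrow> kbilin M1 M3 P (\<lambda>a c. F a b c)"
  unfolding ktril_def by (intro kbilinI) auto
lemma ktril_3: "ktril M1 M2 M3 P F \<Longrightarrow> a \<in> kcarrier M1 \<Longrightarrow> b \<in> kcarrier M2 \<Longrightarrow> klin M3 P (F a b)"
  unfolding ktril_def by auto
lemma ktril_closed: "ktril M1 M2 M3 P F \<Longrightarrow> a \<in> kcarrier M1 \<Longrightarrow> b \<in> kcarrier M2 \<Longrightarrow> c \<in> kcarrier M3 \<Longrightarrow> F a b c \<in> kcarrier P"
  unfolding ktril_def klin_def by blast

definition "K3 P F = tlift P (\<lambda>u c. tlift P (\<lambda>a b. F a b c) u)"

lemma K3_bil: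
  assumes M1: "kmodule M1" and M2: "kmodule M2" and M3: "kmodule M3" and P: "kmodule P" and F: "ktril M1 M2 M3 P F"
  shows "kbilin (kt M1 M2) M3 P (\<lambda>u c. tlift P (\<lambda>a b. F a b c) u)"
proof (rule kbilinI)
  fix u assume u: "u \<in> kcarrier (kt M1 M2)"
  show "klin M3 P (\<lambda>c. tlift P (\<lambda>a b. F a b c) u)"
    by (rule L_tlift_param[OF u tens_kt[OF M1 M2] M3 P], rule ktril_3[OF F])
next
  fix c assume c: "c \<in> kcarrier M3"
  show "klin (kt M1 M2) P (\<lambda>u. tlift P (\<lambda>a b. F a b c) u)"
    by (rule t_lin[OF tens_kt[OF M1 M2] P ktril_12[OF F c] balanced_empty])
qed

lemma K3_lin:
  assumes M1: "kmodule M1" and M2: "kmodule M2" and M3: "kmodule M3" and P: "kmodule P" and F: "ktril M1 M2 M3 P F"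
  shows "klin (kt (kt M1 M2) M3) P (K3 P F)"
  unfolding K3_def by (rule t_lin[OF tens_kt[OF kt_mod[OF M1 M2] M3] P K3_bil[OF M1 M2 M3 P F] balanced_empty])

lemma K3_tmk:
  assumes M1: "kmodule M1" and M2: "kmodule M2" and M3: "kmodule M3" and P: "kmodule P" and F: "ktril M1 M2 M3 P F"
    and u: "u \<in> kcarrier (kt M1 M2)" and c: "c \<in> kcarrier M3"
  shows "K3 P F (ktmk (kt M1 M2) M3 u c) = tlift P (\<lambda>a b. F a b c) u"
  unfolding K3_def by (rule kt_tmk[OF kt_mod[OF M1 M2] M3 P K3_bil[OF M1 M2 M3 P F] u c])

lemma K3_tmk2:
  assumes M1: "kmodule M1" and M2: "kmodule M2" and M3: "kmodule M3" and P: "kmodule P" and F: "ktril M1 M2 M3 P F"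
    and a: "a \<in> kcarrier M1" and b: "b \<in> kcarrier M2" and c: "c \<in> kcarrier M3"
  shows "K3 P F (ktmk (kt M1 M2) M3 (ktmk M1 M2 a b) c) = F a b c"
  unfolding K3_tmk[OF M1 M2 M3 P F C_tmk[OF tens_kt[OF M1 M2] a b] c]
  by (rule kt_tmk[OF M1 M2 P ktril_12[OF F c] a b])

context gctx begin

lemma coact_coassoc_gen:
  assumes r: "r \<in> kcarrier (AM x y)" and P: "kmodule P" and F: "ktril (AM x y) (HM x y) (HM x y) P F"
  shows "tlift P (\<lambda>b g. tlift P (\<lambda>b0 b1. F b0 b1 g) (coact A x y b)) (coact A x y r) =
         tlift P (\<lambda>b g. tlift P (\<lambda>g1 g2. F b g1 g2) (cop H x y g)) (coact A x y r)"
proof -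
  note K = K3_lin[OF AMmod HMmod HMmod P F]
  note Kt = K3_tmk[OF AMmod HMmod HMmod P F]
  note Kt2 = K3_tmk2[OF AMmod HMmod HMmod P F]
  have "tlift P (\<lambda>b g. tlift P (\<lambda>b0 b1. F b0 b1 g) (coact A x y b)) (coact A x y r) =
        tlift P (\<lambda>b g. K3 P F (ktmk (kt (AM x y) (HM x y)) (HM x y) (coact A x y b) g)) (coact A x y r)"
    by (rule t_cong, (rule Crules r | assumption)+) (simp add: Kt C_coact)
  also have "\<dots> = K3 P F (tlift (kt (kt (AM x y) (HM x y)) (HM x y))
          (\<lambda>b g. ktmk (kt (AM x y) (HM x y)) (HM x y) (coact A x y b) g) (coact A x y r))"
    by (rule t_comp[symmetric]; (rule Lrules Crules K P r | assumption)+)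
  also have "\<dots> = K3 P F (tlift (kt (kt (AM x y) (HM x y)) (HM x y))
          (\<lambda>b g. tlift (kt (kt (AM x y) (HM x y)) (HM x y))
             (\<lambda>g1 g2. ktmk (kt (AM x y) (HM x y)) (HM x y)
                         (ktmk (AM x y) (HM x y) b g1) g2)
             (cop H x y g)) (coact A x y r))"
    unfolding coact_coassoc[OF r] ..
  also have "\<dots> = tlift P (\<lambda>b g. K3 P F (tlift (kt (kt (AM x y) (HM x y)) (HM x y))
             (\<lambda>g1 g2. ktmk (kt (AM x y) (HM x y)) (HM x y)
                         (ktmk (AM x y) (HM x y) b g1) g2)
             (cop H x y g))) (coact A x y r)"
    by (rule t_comp; (rule Lrules Crules K P r | assumption)+)
  also have "\<dots> = tlift P (\<lambda>b g. tlift P (\<lambda>g1 g2. K3 P F (ktmk (kt (AM x y) (HM x y)) (HM x y)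
                         (ktmk (AM x y) (HM x y) b g1) g2)) (cop H x y g)) (coact A x y r)"
    by (rule t_cong, (rule Crules r | assumption)+, rule t_comp; (rule Lrules Crules K P r | assumption)+)
  also have "\<dots> = tlift P (\<lambda>b g. tlift P (\<lambda>g1 g2. F b g1 g2) (cop H x y g)) (coact A x y r)"
    by (rule t_cong, (rule Crules r | assumption)+, rule t_cong, (rule Crules | assumption)+) (simp add: Kt2)
  finally show ?thesis .
qed

lemma cop_coassoc_gen:
  assumes h: "h \<in> kcarrier (HM x y)" and P: "kmodule P" and F: "ktril (HM x y) (HM x y) (HM x y) P F"
  shows "tlift P (\<lambda>a b. tlift P (\<lambda>c d. F c d b) (cop H x y a)) (cop H x y h) =
         tlift P (\<lambda>a b. tlift P (\<lambda>c d. F a c d) (cop H x y b)) (cop H x y h)"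
proof -
  note K = K3_lin[OF HMmod HMmod HMmod P F]
  note Kt = K3_tmk[OF HMmod HMmod HMmod P F]
  note Kt2 = K3_tmk2[OF HMmod HMmod HMmod P F]
  have "tlift P (\<lambda>a b. tlift P (\<lambda>c d. F c d b) (cop H x y a)) (cop H x y h) =
        tlift P (\<lambda>a b. K3 P F (ktmk (kt (HM x y) (HM x y)) (HM x y) (cop H x y a) b)) (cop H x y h)"
    by (rule t_cong, (rule Crules h | assumption)+) (simp add: Kt C_cop)
  also have "\<dots> = K3 P F (tlift (kt (kt (HM x y) (HM x y)) (HM x y))
          (\<lambda>a b. ktmk (kt (HM x y) (HM x y)) (HM x y) (cop H x y a) b) (cop H x y h))"
    by (rule t_comp[symmetric]; (rule Lrules Crules K P h | assumption)+)
  also have "\<dots> = K3 P F (tlift (kt (kt (HM x y) (HM x y)) (HM x y))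
          (\<lambda>a b. tlift (kt (kt (HM x y) (HM x y)) (HM x y)) (\<lambda>c d. ktmk (kt (HM x y) (HM x y)) (HM x y) (ktmk (HM x y) (HM x y) a c) d) (cop H x y b)) (cop H x y h))"
    unfolding cop_coassoc[OF h] ..
  also have "\<dots> = tlift P (\<lambda>a b. K3 P F (tlift (kt (kt (HM x y) (HM x y)) (HM x y)) (\<lambda>c d. ktmk (kt (HM x y) (HM x y)) (HM x y) (ktmk (HM x y) (HM x y) a c) d) (cop H x y b))) (cop H x y h)"
    by (rule t_comp; (rule Lrules Crules K P h | assumption)+)
  also have "\<dots> = tlift P (\<lambda>a b. tlift P (\<lambda>c d. K3 P F (ktmk (kt (HM x y) (HM x y)) (HM x y) (ktmk (HM x y) (HM x y) a c) d)) (cop H x y b)) (cop H x y h)"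
    by (rule t_cong, (rule Crules h | assumption)+, rule t_comp; (rule Lrules Crules K P h | assumption)+)
  also have "\<dots> = tlift P (\<lambda>a b. tlift P (\<lambda>c d. F a c d) (cop H x y b)) (cop H x y h)"
    by (rule t_cong, (rule Crules h | assumption)+, rule t_cong, (rule Crules | assumption)+) (simp add: Kt2)
  finally show ?thesis .
qed

lemma cop_counit_gen:
  assumes h: "h \<in> kcarrier (HM x y)" and P: "kmodule P" and V: "klin (HM x y) P V"
  shows "tlift P (\<lambda>a b. ksmult P (cou H x y a) (V b)) (cop H x y h) = V h"
proof -
  have "V h = V (tlift (HM x y) (\<lambda>a b. ksmult (HM x y) (cou H x y a) b) (cop H x y h))"
    using cop_counit_l[OF h] by simp
  also have "\<dots> = tlift P (\<lambda>a b. V (ksmult (HM x y) (cou H x y a) b)) (cop H x y h)"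
    by (rule t_comp; (rule Lrules Crules V P h | assumption)+)
  also have "\<dots> = tlift P (\<lambda>a b. ksmult P (cou H x y a) (V b)) (cop H x y h)"
    by (rule t_cong, (rule Crules h | assumption)+) (simp add: klin_smult[OF V])
  finally show ?thesis ..
qed

end

context gctx begin

lemma coact_mult_gen:
  assumes a: "a \<in> kcarrier (AM x y)" and b: "b \<in> kcarrier (AM y z)" and P: "kmodule P"
    and Fm: "kbilin (AM x z) (HM x z) P Fm"
  shows "tlift P Fm (coact A x z (cmp A x y z a b)) =
     tlift P (\<lambda>a0 a1. tlift P (\<lambda>b0 b1. Fm (cmp A x y z a0 b0) (cmp H x y z a1 b1)) (coact A y z b)) (coact A x y a)"
proof -
  note TL = t_lin[OF tens_kt[OF AMmod HMmod] P Fm balanced_empty]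
  have "tlift P Fm (coact A x z (cmp A x y z a b)) = tlift P Fm (tlift (kt (AM x z) (HM x z))
            (\<lambda>a0 a1. tlift (kt (AM x z) (HM x z))
               (\<lambda>b0 b1. ktmk (AM x z) (HM x z) (cmp A x y z a0 b0) (cmp H x y z a1 b1))
               (coact A y z b)) (coact A x y a))"
    unfolding coact_mult[OF a b] ..
  also have "\<dots> = tlift P (\<lambda>a0 a1. tlift P Fm (tlift (kt (AM x z) (HM x z))
               (\<lambda>b0 b1. ktmk (AM x z) (HM x z) (cmp A x y z a0 b0) (cmp H x y z a1 b1))
               (coact A y z b))) (coact A x y a)"
    by (rule t_comp; (rule Lrules Crules TL P a b | assumption)+)
  also have "\<dots> = tlift P (\<lambda>a0 a1. tlift P (\<lambda>b0 b1. tlift P Fm (ktmk (AM x z) (HM x z) (cmp A x y z a0 b0) (cmp H x y z a1 b1))) (coact A y z b)) (coact A x y a)"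
    by (rule t_cong, (rule Crules a | assumption)+, rule t_comp; (rule Lrules Crules TL P a b | assumption)+)
  also have "\<dots> = tlift P (\<lambda>a0 a1. tlift P (\<lambda>b0 b1. Fm (cmp A x y z a0 b0) (cmp H x y z a1 b1)) (coact A y z b)) (coact A x y a)"
    by (rule t_cong, (rule Crules a | assumption)+, rule t_cong, (rule Crules b | assumption)+,
        rule kt_tmk[OF AMmod HMmod P Fm]) (auto intro: Crules)
  finally show ?thesis .
qed

end

locale hgal = gal +
  fixes S
  assumes ANT: "hopf_antipode H S"
begin

lemma S_lin: "klin (HM x y) (HM y x) (S x y)" using ANT unfolding hopf_antipode_def by blast
lemma ant_l: "h \<in> kcarrier (HM x y) \<Longrightarrow> tlift (HM x x) (\<lambda>a b. cmp H x y x a (S x y b)) (cop H x y h) =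
          ksmult (HM x x) (cou H x y h) (idm H x)"
  using ANT unfolding hopf_antipode_def by blast
lemma L_S: "klin U (HM x y) F \<Longrightarrow> klin U (HM y x) (\<lambda>t. S x y (F t))"
  by (rule klin_comp[OF _ S_lin])
lemma C_S: "a \<in> kcarrier (HM x y) \<Longrightarrow> S x y a \<in> kcarrier (HM y x)"
  by (rule klin_carrier[OF S_lin])

lemmas R3 = R2 L_S C_S S_lin ktrilI

lemma ant_gen:
  assumes a: "a \<in> kcarrier (HM x y)" and P: "kmodule P" and Fm: "klin (HM x x) P Fm"
  shows "tlift P (\<lambda>c d. Fm (cmp H x y x c (S x y d))) (cop H x y a) = Fm (ksmult (HM x x) (cou H x y a) (idm H x))"
proof -
  have "Fm (ksmult (HM x x) (cou H x y a) (idm H x)) = Fm (tlift (HM x x) (\<lambda>a b. cmp H x y x a (S x y b)) (cop H x y a))"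
    using ant_l[OF a] by simp
  also have "\<dots> = tlift P (\<lambda>c d. Fm (cmp H x y x c (S x y d))) (cop H x y a)"
    by (rule t_comp; (rule R3 Fm P a | assumption)+)
  finally show ?thesis ..
qed

abbreviation "KZ x y \<equiv> kt (kt (AM y y) (HM x y)) (HM y x)"
abbreviation "Wg x y g a0 a1 \<equiv> tlift (KZ x y) (\<lambda>g1 g2. ktmk (kt (AM y y) (HM x y)) (HM y x) (ktmk (AM y y) (HM x y) a0 g2) (cmp H y y x a1 (S x y g1))) (cop H x y g)"

lemma innerchain:
  assumes l0: "l0 \<in> kcarrier (AM y x)" and l1: "l1 \<in> kcarrier (HM y x)" and r: "r \<in> kcarrier (AM x y)"
  shows "tlift (KZ x y) (\<lambda>r0 r1. tlift (KZ x y) (\<lambda>b0 b1. Wg x y r1 (cmp A y x y l0 b0) (cmp H y x y l1 b1)) (coact A x y r0)) (coact A x y r)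
       = ktmk (kt (AM y y) (HM x y)) (HM y x) (Pcan y x y l0 r) l1"
proof -
  have KZm: "kmodule (KZ x y)" by (rule R3)+
  have "tlift (KZ x y) (\<lambda>r0 r1. tlift (KZ x y) (\<lambda>b0 b1. Wg x y r1 (cmp A y x y l0 b0) (cmp H y x y l1 b1)) (coact A x y r0)) (coact A x y r)
     = tlift (KZ x y) (\<lambda>r0 r1. tlift (KZ x y) (\<lambda>u1 u2. Wg x y u2 (cmp A y x y l0 r0) (cmp H y x y l1 u1)) (cop H x y r1)) (coact A x y r)"
    by (rule coact_coassoc_gen[OF r KZm]) (rule R3 l0 l1 | assumption)+
  also have "\<dots> = tlift (KZ x y) (\<lambda>r0 r1. tlift (KZ x y) (\<lambda>a b. tlift (KZ x y) (\<lambda>c d.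
        ktmk (kt (AM y y) (HM x y)) (HM y x) (ktmk (AM y y) (HM x y) (cmp A y x y l0 r0) b) (cmp H y y x (cmp H y x y l1 c) (S x y d))) (cop H x y a)) (cop H x y r1)) (coact A x y r)"
  proof (rule t_cong, (rule R3 r | assumption)+)
    fix r0 r1 assume r0: "r0 \<in> kcarrier (AM x y)" and r1: "r1 \<in> kcarrier (HM x y)"
    show "tlift (KZ x y) (\<lambda>u1 u2. Wg x y u2 (cmp A y x y l0 r0) (cmp H y x y l1 u1)) (cop H x y r1) =
      tlift (KZ x y) (\<lambda>a b. tlift (KZ x y) (\<lambda>c d.
        ktmk (kt (AM y y) (HM x y)) (HM y x) (ktmk (AM y y) (HM x y) (cmp A y x y l0 r0) b) (cmp H y y x (cmp H y x y l1 c) (S x y d))) (cop H x y a)) (cop H x y r1)"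
      by (rule cop_coassoc_gen[OF r1 KZm, symmetric]) (rule R3 l0 l1 r0 | assumption)+
  qed
  also have "\<dots> = tlift (KZ x y) (\<lambda>r0 r1. tlift (KZ x y) (\<lambda>a b. ksmult (KZ x y) (cou H x y a)
        (ktmk (kt (AM y y) (HM x y)) (HM y x) (ktmk (AM y y) (HM x y) (cmp A y x y l0 r0) b) l1)) (cop H x y r1)) (coact A x y r)"
  proof (rule t_cong, (rule R3 r | assumption)+, rule t_cong, (rule R3 | assumption)+)
    fix r0 r1 a b assume r0: "r0 \<in> kcarrier (AM x y)" and a: "a \<in> kcarrier (HM x y)" and b: "b \<in> kcarrier (HM x y)"
    have lr: "cmp A y x y l0 r0 \<in> kcarrier (AM y y)" using l0 r0 by auto
    let ?Fm = "\<lambda>w. ktmk (kt (AM y y) (HM x y)) (HM y x) (ktmk (AM y y) (HM x y) (cmp A y x y l0 r0) b) (cmp H y x x l1 w)"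
    have Pl: "klin (HM x x) (KZ x y) ?Fm" by (rule R3 l1 lr b | assumption)+
    have "tlift (KZ x y) (\<lambda>c d. ktmk (kt (AM y y) (HM x y)) (HM y x) (ktmk (AM y y) (HM x y) (cmp A y x y l0 r0) b) (cmp H y y x (cmp H y x y l1 c) (S x y d))) (cop H x y a)
       = tlift (KZ x y) (\<lambda>c d. ?Fm (cmp H x y x c (S x y d))) (cop H x y a)"
      by (rule t_cong, (rule R3 a | assumption)+) (simp add: Hassoc[OF l1 _ C_S])
    also have "\<dots> = ?Fm (ksmult (HM x x) (cou H x y a) (idm H x))" by (rule ant_gen[OF a KZm Pl])
    also have "\<dots> = ksmult (KZ x y) (cou H x y a) (ktmk (kt (AM y y) (HM x y)) (HM y x) (ktmk (AM y y) (HM x y) (cmp A y x y l0 r0) b) l1)"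
    proof -
      have e1: "cmp H y x x l1 (ksmult (HM x x) (cou H x y a) (idm H x)) = ksmult (HM y x) (cou H x y a) l1"
        using klin_smult[OF kbilin_r[OF Hcmp_bil l1] Hid] l1 by simp
      have Lk: "klin (HM y x) (KZ x y) (\<lambda>w. ktmk (kt (AM y y) (HM x y)) (HM y x) (ktmk (AM y y) (HM x y) (cmp A y x y l0 r0) b) w)"
        by (rule R3 lr b | assumption)+
      show ?thesis unfolding e1 by (rule klin_smult[OF Lk l1])
    qed
    finally show "tlift (KZ x y) (\<lambda>c d. ktmk (kt (AM y y) (HM x y)) (HM y x) (ktmk (AM y y) (HM x y) (cmp A y x y l0 r0) b) (cmp H y y x (cmp H y x y l1 c) (S x y d))) (cop H x y a)
       = ksmult (KZ x y) (cou H x y a) (ktmk (kt (AM y y) (HM x y)) (HM y x) (ktmk (AM y y) (HM x y) (cmp A y x y l0 r0) b) l1)" .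
  qed
  also have "\<dots> = tlift (KZ x y) (\<lambda>r0 r1. ktmk (kt (AM y y) (HM x y)) (HM y x) (ktmk (AM y y) (HM x y) (cmp A y x y l0 r0) r1) l1) (coact A x y r)"
  proof (rule t_cong, (rule R3 r | assumption)+)
    fix r0 r1 assume r0: "r0 \<in> kcarrier (AM x y)" and r1: "r1 \<in> kcarrier (HM x y)"
    have lr: "cmp A y x y l0 r0 \<in> kcarrier (AM y y)" using l0 r0 by auto
    show "tlift (KZ x y) (\<lambda>a b. ksmult (KZ x y) (cou H x y a)
        (ktmk (kt (AM y y) (HM x y)) (HM y x) (ktmk (AM y y) (HM x y) (cmp A y x y l0 r0) b) l1)) (cop H x y r1) =
      ktmk (kt (AM y y) (HM x y)) (HM y x) (ktmk (AM y y) (HM x y) (cmp A y x y l0 r0) r1) l1"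
      by (rule cop_counit_gen[OF r1 KZm]) (rule R3 lr l1 | assumption)+
  qed
  also have "\<dots> = ktmk (kt (AM y y) (HM x y)) (HM y x) (Pcan y x y l0 r) l1"
    unfolding Pcan_def by (rule t_comp[symmetric]; (rule R3 l0 l1 r | assumption)+)
  finally show ?thesis .
qed

end

context hgal begin

definition "Zm x y = tlift (KZ x y) (\<lambda>a g. tlift (KZ x y) (\<lambda>a0 a1. Wg x y g a0 a1) (coact A y y a))"
definition "Ome x y l r = tlift (kt (BT y x y) (HM y x)) (\<lambda>l0 l1. ktmk (BT y x y) (HM y x) (TB y x y l0 r) l1) (coact A y x l)"

lemma Zm_bil: "kbilin (AM y y) (HM x y) (KZ x y) (\<lambda>a g. tlift (KZ x y) (\<lambda>a0 a1. Wg x y g a0 a1) (coact A y y a))"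
  by (rule R3 | assumption)+
lemma Zm_lin: "klin (kt (AM y y) (HM x y)) (KZ x y) (Zm x y)"
  unfolding Zm_def by (rule t_lin; (rule R3 Zm_bil | assumption)+)
lemma Ome_bil: "kbilin (AM y x) (AM x y) (kt (BT y x y) (HM y x)) (Ome x y)"
  unfolding Ome_def by (rule R3 | assumption)+

lemma Ome_bal: "balanced (bbal H A y x y) (Ome x y)"
proof (rule balanced_bbalI)
  fix l c r assume l: "l \<in> kcarrier (AM y x)" and c: "c \<in> coinv H A x" and r: "r \<in> kcarrier (AM x y)"
  have cc: "c \<in> kcarrier (AM x x)" by (rule coinv_cl[OF c])
  let ?G = "tlift (kt (BT y x y) (HM y x)) (\<lambda>l0 l1. ktmk (BT y x y) (HM y x) (TB y x y l0 r) l1)"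
  have "Ome x y (cmp A y x x l c) r = ?G (tlift (kt (AM y x) (HM y x)) (\<lambda>a0 a1. ktmk (AM y x) (HM y x) (cmp A y x x a0 c) a1) (coact A y x l))"
    unfolding Ome_def coact_coinv_r[OF c l] ..
  also have "\<dots> = tlift (kt (BT y x y) (HM y x)) (\<lambda>a0 a1. ?G (ktmk (AM y x) (HM y x) (cmp A y x x a0 c) a1)) (coact A y x l)"
    by (rule t_comp; (rule R3 cc l r | assumption)+)
  also have "\<dots> = Ome x y l (cmp A x x y c r)"
    unfolding Ome_def
  proof (rule t_cong, (rule R3 l | assumption)+)
    fix a0 a1 assume a0: "a0 \<in> kcarrier (AM y x)" and a1: "a1 \<in> kcarrier (HM y x)"
    have "?G (ktmk (AM y x) (HM y x) (cmp A y x x a0 c) a1) = ktmk (BT y x y) (HM y x) (TB y x y (cmp A y x x a0 c) r) a1"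
      by (rule kt_tmk; (rule R3 cc a0 a1 r | assumption)+)
    thus "?G (ktmk (AM y x) (HM y x) (cmp A y x x a0 c) a1) = ktmk (BT y x y) (HM y x) (TB y x y a0 (cmp A x x y c r)) a1"
      using tmk_bb[OF a0 c r] by simp
  qed
  finally show "Ome x y (cmp A y x x l c) r = Ome x y l (cmp A x x y c r)" .
qed

lemma CI_Ome:
  assumes l: "l \<in> kcarrier (AM y x)" and r: "r \<in> kcarrier (AM x y)"
  shows "CI y x y (HM y x) (Ome x y l r) = tlift (KZ x y) (\<lambda>l0 l1. ktmk (kt (AM y y) (HM x y)) (HM y x) (Pcan y x y l0 r) l1) (coact A y x l)"
proof -
  have "CI y x y (HM y x) (Ome x y l r) = tlift (KZ x y) (\<lambda>l0 l1. CI y x y (HM y x) (ktmk (BT y x y) (HM y x) (TB y x y l0 r) l1)) (coact A y x l)"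
    unfolding Ome_def by (rule t_comp; (rule R3 CI_lin l r | assumption)+)
  also have "\<dots> = tlift (KZ x y) (\<lambda>l0 l1. ktmk (kt (AM y y) (HM x y)) (HM y x) (Pcan y x y l0 r) l1) (coact A y x l)"
    by (rule t_cong, (rule R3 l | assumption)+) (simp add: CI_tmk C_tmk[OF tens_bb] r can_tmk)
  finally show ?thesis .
qed

lemma Zm_Pcan:
  assumes l: "l \<in> kcarrier (AM y x)" and r: "r \<in> kcarrier (AM x y)"
  shows "Zm x y (Pcan y x y l r) = CI y x y (HM y x) (Ome x y l r)"
proof -
  have KZm: "kmodule (KZ x y)" by (rule R3)+
  have "Zm x y (Pcan y x y l r) = tlift (KZ x y) (\<lambda>r0 r1. Zm x y (ktmk (AM y y) (HM x y) (cmp A y x y l r0) r1)) (coact A x y r)"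
    unfolding Pcan_def by (rule t_comp; (rule R3 Zm_lin l r | assumption)+)
  also have "\<dots> = tlift (KZ x y) (\<lambda>r0 r1. tlift (KZ x y) (\<lambda>a0 a1. Wg x y r1 a0 a1) (coact A y y (cmp A y x y l r0))) (coact A x y r)"
    unfolding Zm_def by (rule t_cong, (rule R3 r | assumption)+, rule kt_tmk; (rule R3 Zm_bil l | assumption)+)
  also have "\<dots> = tlift (KZ x y) (\<lambda>r0 r1. tlift (KZ x y) (\<lambda>l0 l1. tlift (KZ x y) (\<lambda>b0 b1. Wg x y r1 (cmp A y x y l0 b0) (cmp H y x y l1 b1)) (coact A x y r0)) (coact A y x l)) (coact A x y r)"
    by (rule t_cong, (rule R3 r | assumption)+, rule coact_mult_gen[OF l _ KZm]; (rule R3 | assumption)+)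
  also have "\<dots> = tlift (KZ x y) (\<lambda>l0 l1. tlift (KZ x y) (\<lambda>r0 r1. tlift (KZ x y) (\<lambda>b0 b1. Wg x y r1 (cmp A y x y l0 b0) (cmp H y x y l1 b1)) (coact A x y r0)) (coact A x y r)) (coact A y x l)"
    by (rule tlift_fubini; (rule R3 KZm l r | assumption)+)
  also have "\<dots> = tlift (KZ x y) (\<lambda>l0 l1. ktmk (kt (AM y y) (HM x y)) (HM y x) (Pcan y x y l0 r) l1) (coact A y x l)"
    by (rule t_cong, (rule R3 l | assumption)+) (rule innerchain[OF _ _ r])
  also have "\<dots> = CI y x y (HM y x) (Ome x y l r)" by (rule CI_Ome[OF l r, symmetric])
  finally show ?thesis .
qed

lemma CIOme_bil: "kbilin (AM y x) (AM x y) (KZ x y) (\<lambda>l r. CI y x y (HM y x) (Ome x y l r))"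
  by (rule kbilin_comp_out[OF Ome_bil CI_lin[OF HMmod]])

lemma Zm_can: assumes X: "X \<in> kcarrier (BT y x y)"
  shows "tlift (KZ x y) (\<lambda>l r. CI y x y (HM y x) (Ome x y l r)) X = Zm x y (can H A y x y X)"
proof (rule t_unique[OF X tens_bb kt_mod[OF kt_mod[OF AMmod HMmod] HMmod] t_lin[OF tens_bb kt_mod[OF kt_mod[OF AMmod HMmod] HMmod] CIOme_bil balanced_comp_out[OF Ome_bal]]
      klin_comp[OF can_lin Zm_lin]])
  fix l r assume l: "l \<in> kcarrier (AM y x)" and r: "r \<in> kcarrier (AM x y)"
  show "tlift (KZ x y) (\<lambda>l r. CI y x y (HM y x) (Ome x y l r)) (TB y x y l r) = Zm x y (can H A y x y (TB y x y l r))"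
    using t_tmk[OF tens_bb kt_mod[OF kt_mod[OF AMmod HMmod] HMmod] CIOme_bil balanced_comp_out[OF Ome_bal] l r]
      Zm_Pcan[OF l r] can_tmk[OF l r] by simp
qed

lemma part_e:
  assumes h: "h \<in> kcarrier (HM x y)"
  shows "tlift (kt (BT y x y) (HM y x)) (\<lambda>h1 h2. ktmk (BT y x y) (HM y x) (gam H A x y h2) (S x y h1)) (cop H x y h) =
         tlift (kt (BT y x y) (HM y x)) (Ome x y) (gam H A x y h)"
proof (rule CI_inj[OF HMmod])
  show "tlift (kt (BT y x y) (HM y x)) (\<lambda>h1 h2. ktmk (BT y x y) (HM y x) (gam H A x y h2) (S x y h1)) (cop H x y h) \<in> kcarrier (kt (BT y x y) (HM y x))"
    by (rule C_tlift; (rule R3 h | assumption)+)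
  show "tlift (kt (BT y x y) (HM y x)) (Ome x y) (gam H A x y h) \<in> kcarrier (kt (BT y x y) (HM y x))"
  proof (rule C_tlift[OF gam_closed[OF h] tens_bb kt_mod[OF BT_mod HMmod]])
    fix l r assume "l \<in> kcarrier (AM y x)" "r \<in> kcarrier (AM x y)"
    thus "Ome x y l r \<in> kcarrier (kt (BT y x y) (HM y x))" using Ome_bil unfolding kbilin_def klin_def by blast
  qed
  have "CI y x y (HM y x) (tlift (kt (BT y x y) (HM y x)) (Ome x y) (gam H A x y h)) =
     tlift (KZ x y) (\<lambda>l r. CI y x y (HM y x) (Ome x y l r)) (gam H A x y h)"
    by (rule t_comp[OF gam_closed[OF h] tens_bb kt_mod[OF BT_mod HMmod] kt_mod[OF kt_mod[OF AMmod HMmod] HMmod] CI_lin[OF HMmod] Ome_bil Ome_bal])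
  also have "\<dots> = Zm x y (ktmk (AM y y) (HM x y) (idm A y) h)"
    unfolding Zm_can[OF gam_closed[OF h]] can_gam[OF h] ..
  also have "\<dots> = tlift (KZ x y) (\<lambda>a0 a1. Wg x y h a0 a1) (coact A y y (idm A y))"
    unfolding Zm_def by (rule kt_tmk; (rule R3 Zm_bil h | assumption)+)
  also have "\<dots> = Wg x y h (idm A y) (idm H y)"
    unfolding coact_id by (rule kt_tmk; (rule R3 h | assumption)+)
  also have "\<dots> = tlift (KZ x y) (\<lambda>h1 h2. CI y x y (HM y x) (ktmk (BT y x y) (HM y x) (gam H A x y h2) (S x y h1))) (cop H x y h)"
    by (rule t_cong, (rule R3 h | assumption)+) (simp add: CI_tmk gam_closed can_gam C_S)
  also have "\<dots> = CI y x y (HM y x) (tlift (kt (BT y x y) (HM y x)) (\<lambda>h1 h2. ktmk (BT y x y) (HM y x) (gam H A x y h2) (S x y h1)) (cop H x y h))"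
    by (rule t_comp[symmetric]; (rule R3 CI_lin h | assumption)+)
  finally show "CI y x y (HM y x) (tlift (kt (BT y x y) (HM y x)) (\<lambda>h1 h2. ktmk (BT y x y) (HM y x) (gam H A x y h2) (S x y h1)) (cop H x y h)) =
    CI y x y (HM y x) (tlift (kt (BT y x y) (HM y x)) (Ome x y) (gam H A x y h))" by simp
qed

end

theorem proposition3p7:
  fixes H :: "('x, 'k::comm_ring_1, 'h) shcat"
    and A :: "('x, 'k, 'a, 'h) comcat"
    and x y z :: 'x and h h' :: 'h
  assumes "semi_hopf_cat H"
    and "comodule_cat H A"
    and "galois_ext H A"
    and "h \<in> kcarrier (homs H x y)"
    and "h' \<in> kcarrier (homs H y z)"
  shows
    \<comment> \<open>(a)\<close>
    "(\<forall>b \<in> coinv H A y.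
        tlift (btens H A y x y) (\<lambda>l r. btmk H A y x y (cmp A y y x b l) r) (gam H A x y h) =
        tlift (btens H A y x y) (\<lambda>l r. btmk H A y x y l (cmp A x y y r b)) (gam H A x y h))
   \<and> \<comment> \<open>(b)\<close>
    gam H A x z (cmp H x y z h h') =
      tlift (btens H A z x z)
        (\<lambda>l' r'. tlift (btens H A z x z)
           (\<lambda>l r. btmk H A z x z (cmp A z y x l' l) (cmp A x y z r r'))
           (gam H A x y h))
        (gam H A y z h')
   \<and> \<comment> \<open>(c)\<close>
    tlift (kt (btens H A y x y) (homs H x y))
      (\<lambda>h1 h2. ktmk (btens H A y x y) (homs H x y) (gam H A x y h1) h2) (cop H x y h) =
    tlift (kt (btens H A y x y) (homs H x y))
      (\<lambda>l r. tlift (kt (btens H A y x y) (homs H x y))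
         (\<lambda>r0 r1. ktmk (btens H A y x y) (homs H x y) (btmk H A y x y l r0) r1)
         (coact A x y r))
      (gam H A x y h)
   \<and> \<comment> \<open>(d)\<close>
    tlift (homs A y y) (\<lambda>l r. cmp A y x y l r) (gam H A x y h) =
      ksmult (homs A y y) (cou H x y h) (idm A y)
   \<and> \<comment> \<open>(e)\<close>
    (\<forall>S. hopf_antipode H S \<longrightarrow>
      tlift (kt (btens H A y x y) (homs H y x))
        (\<lambda>h1 h2. ktmk (btens H A y x y) (homs H y x) (gam H A x y h2) (S x y h1)) (cop H x y h) =
      tlift (kt (btens H A y x y) (homs H y x))
        (\<lambda>l r. tlift (kt (btens H A y x y) (homs H y x))
           (\<lambda>l0 l1. ktmk (btens H A y x y) (homs H y x) (btmk H A y x y l0 r) l1)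
           (coact A y x l))
        (gam H A x y h))"
proof -
  interpret g: gal H A by unfold_locales (rule assms)+
  have e1: "\<And>z x y. btens H A z x y = g.BT z x y" by (rule g.btens_eq)
  have e2: "\<And>z x y. btmk H A z x y = g.TB z x y" by (rule g.btmk_eq)
  have Phio_eq: "g.Phio x y z h = (\<lambda>l' r'. tlift (g.BT z x z) (\<lambda>l r. g.TB z x z (cmp A z y x l' l) (cmp A x y z r r')) (gam H A x y h))"
    by (rule ext)+ (simp add: g.Phio_def)
  have Omc_eq: "g.Omc x y = (\<lambda>l r. tlift (kt (g.BT y x y) (homs H x y)) (\<lambda>r0 r1. ktmk (g.BT y x y) (homs H x y) (g.TB y x y l r0) r1) (coact A x y r))"
    by (rule ext)+ (simp add: g.Omc_def)
  have pa: "\<forall>b \<in> coinv H A y.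
        tlift (btens H A y x y) (\<lambda>l r. btmk H A y x y (cmp A y y x b l) r) (gam H A x y h) =
        tlift (btens H A y x y) (\<lambda>l r. btmk H A y x y l (cmp A x y y r b)) (gam H A x y h)"
    unfolding e1 e2 using g.part_a[OF assms(4)] by blast
  have pb: "gam H A x z (cmp H x y z h h') =
      tlift (btens H A z x z)
        (\<lambda>l' r'. tlift (btens H A z x z)
           (\<lambda>l r. btmk H A z x z (cmp A z y x l' l) (cmp A x y z r r'))
           (gam H A x y h))
        (gam H A y z h')"
    unfolding e1 e2 using g.part_b[OF assms(4,5)] unfolding Phio_eq .
  have pc: "tlift (kt (btens H A y x y) (homs H x y))
      (\<lambda>h1 h2. ktmk (btens H A y x y) (homs H x y) (gam H A x y h1) h2) (cop H x y h) =
    tlift (kt (btens H A y x y) (homs H x y))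
      (\<lambda>l r. tlift (kt (btens H A y x y) (homs H x y))
         (\<lambda>r0 r1. ktmk (btens H A y x y) (homs H x y) (btmk H A y x y l r0) r1)
         (coact A x y r))
      (gam H A x y h)"
    unfolding e1 e2 using g.part_c[OF assms(4)] unfolding Omc_eq .
  have pd: "tlift (homs A y y) (\<lambda>l r. cmp A y x y l r) (gam H A x y h) =
      ksmult (homs A y y) (cou H x y h) (idm A y)"
    using g.part_d[OF assms(4)] by simp
  have pe: "\<forall>S. hopf_antipode H S \<longrightarrow>
      tlift (kt (btens H A y x y) (homs H y x))
        (\<lambda>h1 h2. ktmk (btens H A y x y) (homs H y x) (gam H A x y h2) (S x y h1)) (cop H x y h) =
      tlift (kt (btens H A y x y) (homs H y x))
        (\<lambda>l r. tlift (kt (btens H A y x y) (homs H y x))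
           (\<lambda>l0 l1. ktmk (btens H A y x y) (homs H y x) (btmk H A y x y l0 r) l1)
           (coact A y x l))
        (gam H A x y h)"
  proof (intro allI impI)
    fix S assume S: "hopf_antipode H S"
    interpret hg: hgal H A S by unfold_locales (rule assms S)+
    have Ome_eq: "hg.Ome x y = (\<lambda>l r. tlift (kt (g.BT y x y) (homs H y x)) (\<lambda>l0 l1. ktmk (g.BT y x y) (homs H y x) (g.TB y x y l0 r) l1) (coact A y x l))"
      by (rule ext)+ (simp add: hg.Ome_def)
    show "tlift (kt (btens H A y x y) (homs H y x))
        (\<lambda>h1 h2. ktmk (btens H A y x y) (homs H y x) (gam H A x y h2) (S x y h1)) (cop H x y h) =
      tlift (kt (btens H A y x y) (homs H y x))
        (\<lambda>l r. tlift (kt (btens H A y x y) (homs H y x))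
           (\<lambda>l0 l1. ktmk (btens H A y x y) (homs H y x) (btmk H A y x y l0 r) l1)
           (coact A y x l))
        (gam H A x y h)"
      unfolding e1 e2 using hg.part_e[OF assms(4)] unfolding Ome_eq .
  qed
  show ?thesis using pa pb pc pd pe by blast
qed

end
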